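(* Let $\mathbb M$ be a sequential Morse matching on a finite-type based chain complex $(\mathbf C,I)$ of real inner product spaces, and let $\mathcal M$ be its Morsification. Then $\mathbb M$ is $(n,n-1)$-free if and only if $\mathcal M$ is $(n,n-1)$-free.
   Context: Based chain complex: chain complex $(\mathbf C,\partial)$ of finite-dimensional real inner product spaces $\mathbf C_n$, $n\ge0$, with disjoint finite index sets $I_n$ and $\mathbf C_n=\bigoplus_{\alpha\in I_n}C_\alpha$; $\partial_{\beta,\alpha}=\pi_\beta\partial_n i_\alpha$. Graph: edges $\alpha\to\beta$ when $\partial_{\beta,\alpha}\ne0$. Morse matching: edge set $M$ with each cell on at most one edge, $\partial_{\beta,\alpha}$ an isomorphism for $\alpha\to\beta\in M$, and "directed path from $\alpha$ to $\beta$ in the graph with $M$ reversed" a partial order on each $I_n$; $M^0$ = unmatched cells. With $\Gamma_{\beta,\alpha}$ the sum over directed paths from $\alpha$ to $\beta$ in the reversed graph of composites of $\partial_{\sigma_{i+1},\sigma_i}$ (ordinary steps) and $-\partial_{\sigma_i,\sigma_{i+1}}^{-1}$ (reversed matched edges), the Morse complex is $\mathbf C^M_n=\bigoplus_{\alpha\in I_n\cap M^0}C_\alpha$ with boundary $\sum_{\beta\in M^0\cap I_{n-1}}\Gamma_{\beta,\alpha}$, and the Morse retraction is $\Phi^M=\sum_{\beta\in I_n}\Gamma_{\beta,\alpha}$ on critical $C_\alpha$, $\Psi^M=\sum_{\beta\in M^0\cap I_n}\Gamma_{\beta,\alpha}$ on $C_\alpha$. A sequential Morse matching $\mathbb M=(M_{(1)},\dots,M_{(k)})$: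 $M_{(1)}$ Morse matching on $(\mathbf C,I)$, $M_{(j+1)}$ Morse matching on the based complex $\mathbf C^{M_{(j)}}$; $\Phi^{\mathbb M},\Psi^{\mathbb M}$ are the composites. $\mathbb M$ is $(n,n-1)$-free if no $M_{(j)}$ pairs an $n$-cell with an $(n-1)$-cell. Morsification: $\mathbf C=\operatorname{Ker}\Psi^{\mathbb M}\oplus\operatorname{Im}\Phi^{\mathbb M}$; choose a Hodge basis of the subcomplex $\operatorname{Ker}\Psi^{\mathbb M}$ (restricted inner product, boundary $\partial'$): orthonormal bases $\mathcal R_+(\partial'_m)$ of $\operatorname{Im}\partial_m'^\dagger$, $\mathcal L_+(\partial'_m)$ of $\operatorname{Im}\partial'_m$ with bijection $v\mapsto w$, $\partial'_mv=\sigma w$, $\sigma>0$, plus a basis of the kernel of its Laplacian; base $\mathbf C$ by these one-dimensional spans together with summands of $\operatorname{Im}\Phi^{\mathbb M}$; $\mathcal M$ is the set of edges $v\to w$. $\mathcal M$ is $(n,n-1)$-free if it contains no edge $v\to w$ with $v\in\mathcal R_+(\partial'_n)$, i.e. $\mathcal R_+(\partial'_n)=\emptyset$. *)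

theory Defs
  imports "Jordan_Normal_Form.Matrix"
begin

text \<open>Each cell alpha carries the summand C_alpha = R^(cdim alpha) with the standard
 inner product (every finite-dimensional real inner product space is isometric to
 such a space); C_n is the orthogonal direct sum of the C_alpha with deg alpha = n.
 The boundary is given by its blocks bd beta alpha = pi_beta o d o i_alpha.\<close>

record 'c bcx =
  cells :: "'c set"
  deg   :: "'c \<Rightarrow> nat"
  cdim  :: "'c \<Rightarrow> nat"
  bd    :: "'c \<Rightarrow> 'c \<Rightarrow> real mat"

definition msum :: "nat \<Rightarrow> nat \<Rightarrow> ('a \<Rightarrow> real mat) \<Rightarrow> 'a set \<Rightarrow> real mat" where
  "msum nr nc f S = mat nr nc (\<lambda>ij. \<Sum>s\<in>S. f s $$ ij)"

definition vsum :: "nat \<Rightarrow> ('a \<Rightarrow> real vec) \<Rightarrow> 'a set \<Rightarrow> real vec" where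
  "vsum d f S = vec d (\<lambda>i. \<Sum>s\<in>S. f s $ i)"

definition minv :: "real mat \<Rightarrow> real mat" where
  "minv A = (SOME B. B \<in> carrier_mat (dim_col A) (dim_row A) \<and>
                     A * B = 1\<^sub>m (dim_row A) \<and> B * A = 1\<^sub>m (dim_col A))"

definition based_cx :: "'c bcx \<Rightarrow> bool" where
  "based_cx X \<longleftrightarrow> finite (cells X) \<and>
     (\<forall>\<alpha>\<in>cells X. \<forall>\<beta>\<in>cells X. bd X \<beta> \<alpha> \<in> carrier_mat (cdim X \<beta>) (cdim X \<alpha>)) \<and>
     (\<forall>\<alpha>\<in>cells X. \<forall>\<beta>\<in>cells X. deg X \<alpha> \<noteq> deg X \<beta> + 1 \<longrightarrow>
         bd X \<beta> \<alpha> = 0\<^sub>m (cdim X \<beta>) (cdim X \<alpha>)) \<and>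
     (\<forall>\<alpha>\<in>cells X. \<forall>\<gamma>\<in>cells X.
         msum (cdim X \<gamma>) (cdim X \<alpha>) (\<lambda>\<beta>. bd X \<gamma> \<beta> * bd X \<beta> \<alpha>) (cells X)
           = 0\<^sub>m (cdim X \<gamma>) (cdim X \<alpha>))"

definition edges :: "'c bcx \<Rightarrow> ('c \<times> 'c) set" where
  "edges X = {(\<alpha>, \<beta>). \<alpha> \<in> cells X \<and> \<beta> \<in> cells X \<and>
                       bd X \<beta> \<alpha> \<noteq> 0\<^sub>m (cdim X \<beta>) (cdim X \<alpha>)}"

definition redges :: "'c bcx \<Rightarrow> ('c \<times> 'c) set \<Rightarrow> ('c \<times> 'c) set" where
  "redges X M = (edges X - M) \<union> {(\<beta>, \<alpha>). (\<alpha>, \<beta>) \<in> M}"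

definition morse_matching :: "'c bcx \<Rightarrow> ('c \<times> 'c) set \<Rightarrow> bool" where
  "morse_matching X M \<longleftrightarrow> M \<subseteq> edges X \<and>
     (\<forall>(\<alpha>, \<beta>)\<in>M. \<forall>(\<alpha>', \<beta>')\<in>M. {\<alpha>, \<beta>} \<inter> {\<alpha>', \<beta>'} \<noteq> {} \<longrightarrow> (\<alpha>, \<beta>) = (\<alpha>', \<beta>')) \<and>
     (\<forall>(\<alpha>, \<beta>)\<in>M. cdim X \<alpha> = cdim X \<beta> \<and> invertible_mat (bd X \<beta> \<alpha>)) \<and>
     (\<forall>\<alpha>\<in>cells X. \<forall>\<beta>\<in>cells X. deg X \<alpha> = deg X \<beta> \<longrightarrow>
        (\<alpha>, \<beta>) \<in> (redges X M)\<^sup>* \<longrightarrow> (\<beta>, \<alpha>) \<in> (redges X M)\<^sup>* \<longrightarrow> \<alpha> = \<beta>)"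

text \<open>Directed paths from alpha to beta in the reversed graph (vertex lists; under the
 Morse condition the reversed graph is acyclic, so all paths are simple).\<close>
definition mpaths :: "'c bcx \<Rightarrow> ('c \<times> 'c) set \<Rightarrow> 'c \<Rightarrow> 'c \<Rightarrow> 'c list set" where
  "mpaths X M \<alpha> \<beta> = {p. p \<noteq> [] \<and> hd p = \<alpha> \<and> last p = \<beta> \<and> distinct p \<and>
       (\<forall>i. Suc i < length p \<longrightarrow> (p ! i, p ! Suc i) \<in> redges X M)}"

definition mstep :: "'c bcx \<Rightarrow> ('c \<times> 'c) set \<Rightarrow> 'c \<Rightarrow> 'c \<Rightarrow> real mat" where
  "mstep X M \<sigma> \<tau> = (if (\<tau>, \<sigma>) \<in> M then - minv (bd X \<sigma> \<tau>) else bd X \<tau> \<sigma>)"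

fun pweight :: "'c bcx \<Rightarrow> ('c \<times> 'c) set \<Rightarrow> 'c list \<Rightarrow> real mat" where
  "pweight X M [] = 1\<^sub>m 0"
| "pweight X M [\<sigma>] = 1\<^sub>m (cdim X \<sigma>)"
| "pweight X M (\<sigma> # \<tau> # p) = pweight X M (\<tau> # p) * mstep X M \<sigma> \<tau>"

definition Gamma :: "'c bcx \<Rightarrow> ('c \<times> 'c) set \<Rightarrow> 'c \<Rightarrow> 'c \<Rightarrow> real mat" where
  "Gamma X M \<beta> \<alpha> = msum (cdim X \<beta>) (cdim X \<alpha>) (pweight X M) (mpaths X M \<alpha> \<beta>)"

definition crit :: "'c bcx \<Rightarrow> ('c \<times> 'c) set \<Rightarrow> 'c set" where
  "crit X M = cells X - (fst ` M \<union> snd ` M)"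

definition morse_cx :: "'c bcx \<Rightarrow> ('c \<times> 'c) set \<Rightarrow> 'c bcx" where
  "morse_cx X M = X\<lparr>cells := crit X M,
      bd := (\<lambda>\<beta> \<alpha>. if deg X \<alpha> = deg X \<beta> + 1 then Gamma X M \<beta> \<alpha>
                    else 0\<^sub>m (cdim X \<beta>) (cdim X \<alpha>))\<rparr>"

fun seq_morse :: "'c bcx \<Rightarrow> ('c \<times> 'c) set list \<Rightarrow> bool" where
  "seq_morse X [] = True"
| "seq_morse X (M # Ms) = (morse_matching X M \<and> seq_morse (morse_cx X M) Ms)"

fun morse_seq :: "'c bcx \<Rightarrow> ('c \<times> 'c) set list \<Rightarrow> 'c bcx" where
  "morse_seq X [] = X"
| "morse_seq X (M # Ms) = morse_seq (morse_cx X M) Ms"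

fun seq_free :: "'c bcx \<Rightarrow> ('c \<times> 'c) set list \<Rightarrow> nat \<Rightarrow> bool" where
  "seq_free X [] n = True"
| "seq_free X (M # Ms) n =
     ((\<forall>(\<alpha>, \<beta>)\<in>M. \<not> (deg X \<alpha> = n \<and> deg X \<beta> + 1 = n)) \<and> seq_free (morse_cx X M) Ms n)"

text \<open>Chains of degree n: a vector in C_alpha for each n-cell alpha
 (and the dummy value zero_vec 0 elsewhere).\<close>
definition ncells :: "'c bcx \<Rightarrow> nat \<Rightarrow> 'c set" where
  "ncells X n = {\<alpha> \<in> cells X. deg X \<alpha> = n}"

definition chains :: "'c bcx \<Rightarrow> nat \<Rightarrow> ('c \<Rightarrow> real vec) set" where
  "chains X n = {x. \<forall>\<alpha>. if \<alpha> \<in> ncells X n then x \<alpha> \<in> carrier_vec (cdim X \<alpha>)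
                        else x \<alpha> = 0\<^sub>v 0}"

definition chain_zero :: "'c bcx \<Rightarrow> nat \<Rightarrow> 'c \<Rightarrow> real vec" where
  "chain_zero X n = (\<lambda>\<alpha>. if \<alpha> \<in> ncells X n then 0\<^sub>v (cdim X \<alpha>) else 0\<^sub>v 0)"

definition cip :: "'c bcx \<Rightarrow> nat \<Rightarrow> ('c \<Rightarrow> real vec) \<Rightarrow> ('c \<Rightarrow> real vec) \<Rightarrow> real" where
  "cip X n x y = (\<Sum>\<alpha>\<in>ncells X n. x \<alpha> \<bullet> y \<alpha>)"

text \<open>Boundary d_n : C_n -> C_(n-1) (for n = 0 all blocks vanish, so d_0 = 0).\<close>
definition bdry :: "'c bcx \<Rightarrow> nat \<Rightarrow> ('c \<Rightarrow> real vec) \<Rightarrow> 'c \<Rightarrow> real vec" where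
  "bdry X n x = (\<lambda>\<beta>. if \<beta> \<in> ncells X (n - 1)
        then vsum (cdim X \<beta>) (\<lambda>\<alpha>. bd X \<beta> \<alpha> *\<^sub>v x \<alpha>) (ncells X n) else 0\<^sub>v 0)"

definition psi :: "'c bcx \<Rightarrow> ('c \<times> 'c) set \<Rightarrow> nat \<Rightarrow> ('c \<Rightarrow> real vec) \<Rightarrow> 'c \<Rightarrow> real vec" where
  "psi X M n x = (\<lambda>\<beta>. if \<beta> \<in> crit X M \<and> deg X \<beta> = n
        then vsum (cdim X \<beta>) (\<lambda>\<alpha>. Gamma X M \<beta> \<alpha> *\<^sub>v x \<alpha>) (ncells X n) else 0\<^sub>v 0)"

fun psi_seq :: "'c bcx \<Rightarrow> ('c \<times> 'c) set list \<Rightarrow> nat \<Rightarrow> ('c \<Rightarrow> real vec) \<Rightarrow> 'c \<Rightarrow> real vec" where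
  "psi_seq X [] n x = x"
| "psi_seq X (M # Ms) n x = psi_seq (morse_cx X M) Ms n (psi X M n x)"

definition kerPsi :: "'c bcx \<Rightarrow> ('c \<times> 'c) set list \<Rightarrow> nat \<Rightarrow> ('c \<Rightarrow> real vec) set" where
  "kerPsi X Ms n = {x \<in> chains X n. psi_seq X Ms n x = chain_zero (morse_seq X Ms) n}"

text \<open>Image of the adjoint of d'_n : Ker Psi_n -> Ker Psi_(n-1), taken w.r.t. the
 restricted inner products.\<close>
definition adj_im :: "'c bcx \<Rightarrow> ('c \<times> 'c) set list \<Rightarrow> nat \<Rightarrow> ('c \<Rightarrow> real vec) set" where
  "adj_im X Ms n = {x \<in> kerPsi X Ms n. \<exists>y \<in> kerPsi X Ms (n - 1).
       \<forall>z \<in> kerPsi X Ms n. cip X (n - 1) (bdry X n z) y = cip X n z x}"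

definition lincomb :: "'c bcx \<Rightarrow> nat \<Rightarrow> (('c \<Rightarrow> real vec) \<Rightarrow> real) \<Rightarrow> ('c \<Rightarrow> real vec) set
                        \<Rightarrow> 'c \<Rightarrow> real vec" where
  "lincomb X n c R = (\<lambda>\<alpha>. if \<alpha> \<in> ncells X n
        then vsum (cdim X \<alpha>) (\<lambda>v. c v \<cdot>\<^sub>v v \<alpha>) R else 0\<^sub>v 0)"

definition orthonormal_basis :: "'c bcx \<Rightarrow> nat \<Rightarrow> ('c \<Rightarrow> real vec) set \<Rightarrow> ('c \<Rightarrow> real vec) set \<Rightarrow> bool" where
  "orthonormal_basis X n W R \<longleftrightarrow> finite R \<and> R \<subseteq> W \<and>
     (\<forall>v\<in>R. cip X n v v = 1) \<and> (\<forall>v\<in>R. \<forall>w\<in>R. v \<noteq> w \<longrightarrow> cip X n v w = 0) \<and>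
     (\<forall>w\<in>W. \<exists>c. w = lincomb X n c R)"

text \<open>R_+(d'_n) of a Morsification: an orthonormal basis of Im d'_n^dagger.
 The Morsification is (n,n-1)-free iff this set is empty.\<close>
definition Rplus :: "'c bcx \<Rightarrow> ('c \<times> 'c) set list \<Rightarrow> nat \<Rightarrow> ('c \<Rightarrow> real vec) set \<Rightarrow> bool" where
  "Rplus X Ms n R \<longleftrightarrow> orthonormal_basis X n (adj_im X Ms n) R"

definition morsification_free :: "('c \<Rightarrow> real vec) set \<Rightarrow> bool" where
  "morsification_free R \<longleftrightarrow> R = {}"

end

theory Submission
  imports Defs
begin

section \<open>Finite sums of matrices and vectors\<close>

lemma msum_carrier[simp]: "msum nr nc f S \<in> carrier_mat nr nc"
  by (simp add: msum_def)

lemma msum_dims[simp]: "dim_row (msum nr nc f S) = nr" "dim_col (msum nr nc f S) = nc"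
  by (simp_all add: msum_def)

lemma msum_index: "i < nr \<Longrightarrow> j < nc \<Longrightarrow> msum nr nc f S $$ (i,j) = (\<Sum>s\<in>S. f s $$ (i,j))"
  by (simp add: msum_def)

lemma msum_cong: "(\<And>s. s \<in> S \<Longrightarrow> f s = g s) \<Longrightarrow> msum nr nc f S = msum nr nc g S"
  unfolding msum_def by (intro eq_matI) auto

lemma msum_cong_entries:
  assumes "\<And>s i j. s \<in> S \<Longrightarrow> i < nr \<Longrightarrow> j < nc \<Longrightarrow> f s $$ (i,j) = g s $$ (i,j)"
  shows "msum nr nc f S = msum nr nc g S"
  unfolding msum_def using assms by (intro eq_matI) auto

lemma msum_empty[simp]: "msum nr nc f {} = 0\<^sub>m nr nc"
  unfolding msum_def by (intro eq_matI) auto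

lemma msum_zero:
  assumes "\<And>s. s \<in> S \<Longrightarrow> f s = 0\<^sub>m nr nc"
  shows "msum nr nc f S = 0\<^sub>m nr nc"
  unfolding msum_def using assms by (intro eq_matI) auto

lemma msum_union:
  assumes "finite A" "finite B" "A \<inter> B = {}"
  shows "msum nr nc f (A \<union> B) = msum nr nc f A + msum nr nc f B"
  unfolding msum_def using assms by (intro eq_matI) (auto simp: sum.union_disjoint)

lemma msum_single:
  assumes "f s \<in> carrier_mat nr nc"
  shows "msum nr nc f {s} = f s"
  unfolding msum_def using assms by (intro eq_matI) auto

lemma msum_insert:
  assumes "finite S" "s \<notin> S" "f s \<in> carrier_mat nr nc"
  shows "msum nr nc f (insert s S) = f s + msum nr nc f S"
  unfolding msum_def using assms by (intro eq_matI) auto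

lemma msum_reindex:
  assumes "inj_on h S"
  shows "msum nr nc f (h ` S) = msum nr nc (\<lambda>s. f (h s)) S"
  unfolding msum_def using assms by (intro eq_matI) (auto simp: sum.reindex)

lemma msum_subset_zero:
  assumes "finite S" "T \<subseteq> S" "\<And>s. s \<in> S - T \<Longrightarrow> f s = 0\<^sub>m nr nc"
  shows "msum nr nc f S = msum nr nc f T"
  unfolding msum_def
proof (intro eq_matI)
  fix i j assume ij: "i < dim_row (mat nr nc (\<lambda>ij. \<Sum>s\<in>T. f s $$ ij))"
    "j < dim_col (mat nr nc (\<lambda>ij. \<Sum>s\<in>T. f s $$ ij))"
  hence "(\<Sum>s\<in>S. f s $$ (i,j)) = (\<Sum>s\<in>T. f s $$ (i,j))"
    using assms by (intro sum.mono_neutral_right) auto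
  thus "mat nr nc (\<lambda>ij. \<Sum>s\<in>S. f s $$ ij) $$ (i, j) = mat nr nc (\<lambda>ij. \<Sum>s\<in>T. f s $$ ij) $$ (i, j)"
    using ij by simp
qed auto

lemma msum_add:
  assumes "\<And>s. s \<in> S \<Longrightarrow> f s \<in> carrier_mat nr nc" "\<And>s. s \<in> S \<Longrightarrow> g s \<in> carrier_mat nr nc"
  shows "msum nr nc (\<lambda>s. f s + g s) S = msum nr nc f S + msum nr nc g S"
proof -
  have d: "\<And>s. s \<in> S \<Longrightarrow> dim_row (f s) = nr" "\<And>s. s \<in> S \<Longrightarrow> dim_col (f s) = nc"
    "\<And>s. s \<in> S \<Longrightarrow> dim_row (g s) = nr" "\<And>s. s \<in> S \<Longrightarrow> dim_col (g s) = nc" using assms by auto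
  show ?thesis unfolding msum_def using d by (intro eq_matI) (auto simp: sum.distrib[symmetric] intro!: sum.cong)
qed

lemma msum_uminus:
  assumes "\<And>s. s \<in> S \<Longrightarrow> f s \<in> carrier_mat nr nc"
  shows "msum nr nc (\<lambda>s. - f s) S = - msum nr nc f S"
proof -
  have d: "\<And>s. s \<in> S \<Longrightarrow> dim_row (f s) = nr" "\<And>s. s \<in> S \<Longrightarrow> dim_col (f s) = nc"
     using assms by auto
  show ?thesis unfolding msum_def using d by (intro eq_matI) (auto simp: sum_negf[symmetric] intro!: sum.cong)
qed

lemma msum_swap:
  "msum nr nc (\<lambda>s. msum nr nc (g s) T) S = msum nr nc (\<lambda>t. msum nr nc (\<lambda>s. g s t) S) T"
  unfolding msum_def by (intro eq_matI) (auto intro: sum.swap)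

lemma scalar_prod_sum_left:
  assumes "\<And>s. s \<in> S \<Longrightarrow> dim_vec (f s) = k" "dim_vec w = k"
  shows "vec k (\<lambda>i. \<Sum>s\<in>S. f s $ i) \<bullet> w = (\<Sum>s\<in>S. f s \<bullet> w)"
  unfolding scalar_prod_def using assms
  by (simp add: sum_distrib_right) (rule sum.swap)

lemma msum_mult_right:
  assumes "\<And>s. s \<in> S \<Longrightarrow> f s \<in> carrier_mat nr k" "A \<in> carrier_mat k nc"
  shows "msum nr nc (\<lambda>s. f s * A) S = msum nr k f S * A"
proof (rule eq_matI)
  fix i j assume ij: "i < dim_row (msum nr k f S * A)" "j < dim_col (msum nr k f S * A)"
  hence i: "i < nr" and j: "j < nc" using assms by auto
  have "(msum nr k f S * A) $$ (i,j) = row (msum nr k f S) i \<bullet> col A j"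
    using ij by simp
  also have "row (msum nr k f S) i = vec k (\<lambda>l. \<Sum>s\<in>S. row (f s) i $ l)"
    using i assms by (intro eq_vecI) (auto simp: msum_def intro!: sum.cong, (metis carrier_matD(1) carrier_matD(2) index_row(1) index_col)+)
  also have "\<dots> \<bullet> col A j = (\<Sum>s\<in>S. row (f s) i \<bullet> col A j)"
    using assms j by (intro scalar_prod_sum_left) auto
  also have "\<dots> = (\<Sum>s\<in>S. (f s * A) $$ (i,j))"
    using assms i j by (intro sum.cong refl) (metis carrier_matD(1) carrier_matD(2) index_mult_mat(1))
  finally show "msum nr nc (\<lambda>s. f s * A) S $$ (i, j) = (msum nr k f S * A) $$ (i, j)"
    using i j by (simp add: msum_def)
qed (use assms in auto)

lemma scalar_prod_sum_right:
  assumes "\<And>s. s \<in> S \<Longrightarrow> dim_vec (f s) = k" "dim_vec w = k"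
  shows "w \<bullet> vec k (\<lambda>i. \<Sum>s\<in>S. f s $ i) = (\<Sum>s\<in>S. w \<bullet> f s)"
  unfolding scalar_prod_def using assms
  by (simp add: sum_distrib_left) (rule sum.swap)

lemma msum_mult_left:
  assumes "\<And>s. s \<in> S \<Longrightarrow> f s \<in> carrier_mat k nc" "A \<in> carrier_mat nr k"
  shows "msum nr nc (\<lambda>s. A * f s) S = A * msum k nc f S"
proof (rule eq_matI)
  fix i j assume ij: "i < dim_row (A * msum k nc f S)" "j < dim_col (A * msum k nc f S)"
  hence i: "i < nr" and j: "j < nc" using assms by auto
  have "(A * msum k nc f S) $$ (i,j) = row A i \<bullet> col (msum k nc f S) j"
    using ij by simp
  also have "col (msum k nc f S) j = vec k (\<lambda>l. \<Sum>s\<in>S. col (f s) j $ l)"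
    using j assms by (intro eq_vecI) (auto simp: msum_def intro!: sum.cong, (metis carrier_matD(1) carrier_matD(2) index_row(1) index_col)+)
  also have "row A i \<bullet> \<dots> = (\<Sum>s\<in>S. row A i \<bullet> col (f s) j)"
    using assms i by (intro scalar_prod_sum_right) auto
  also have "\<dots> = (\<Sum>s\<in>S. (A * f s) $$ (i,j))"
    using assms i j by (intro sum.cong refl) (metis carrier_matD(1) carrier_matD(2) index_mult_mat(1))
  finally show "msum nr nc (\<lambda>s. A * f s) S $$ (i, j) = (A * msum k nc f S) $$ (i, j)"
    using i j by (simp add: msum_def)
qed (use assms in auto)

lemma msum_zero_mat_terms:
  assumes "finite S" "\<And>s. s \<in> S - {t} \<Longrightarrow> f s = 0\<^sub>m nr nc" "t \<in> S" "f t \<in> carrier_mat nr nc"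
  shows "msum nr nc f S = f t"
  using msum_subset_zero[of S "{t}" f nr nc] assms msum_single[of f t nr nc] by auto

lemma vsum_carrier[simp]: "vsum d f S \<in> carrier_vec d"
  by (simp add: vsum_def)

lemma vsum_dim[simp]: "dim_vec (vsum d f S) = d"
  by (simp add: vsum_def)

lemma vsum_cong: "(\<And>s. s \<in> S \<Longrightarrow> f s = g s) \<Longrightarrow> vsum d f S = vsum d g S"
  unfolding vsum_def by (intro eq_vecI) auto

lemma vsum_empty[simp]: "vsum d f {} = 0\<^sub>v d"
  unfolding vsum_def by (intro eq_vecI) auto

lemma vsum_zero:
  assumes "\<And>s. s \<in> S \<Longrightarrow> f s = 0\<^sub>v d"
  shows "vsum d f S = 0\<^sub>v d"
  unfolding vsum_def using assms by (intro eq_vecI) auto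

lemma vsum_subset_zero:
  assumes "finite S" "T \<subseteq> S" "\<And>s. s \<in> S - T \<Longrightarrow> f s = 0\<^sub>v d"
  shows "vsum d f S = vsum d f T"
  unfolding vsum_def
proof (intro eq_vecI)
  fix i assume i: "i < dim_vec (vec d (\<lambda>i. \<Sum>s\<in>T. f s $ i))"
  hence "(\<Sum>s\<in>S. f s $ i) = (\<Sum>s\<in>T. f s $ i)"
    using assms by (intro sum.mono_neutral_right) auto
  thus "vec d (\<lambda>i. \<Sum>s\<in>S. f s $ i) $ i = vec d (\<lambda>i. \<Sum>s\<in>T. f s $ i) $ i"
    using i by simp
qed auto

lemma vsum_single:
  assumes "f s \<in> carrier_vec d"
  shows "vsum d f {s} = f s"
  unfolding vsum_def using assms by (intro eq_vecI) auto

lemma vsum_single_term: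
  assumes "finite S" "\<And>s. s \<in> S - {t} \<Longrightarrow> f s = 0\<^sub>v d" "t \<in> S" "f t \<in> carrier_vec d"
  shows "vsum d f S = f t"
  using vsum_subset_zero[of S "{t}" f d] assms vsum_single[of f t d] by auto

lemma vsum_add:
  assumes "\<And>s. s \<in> S \<Longrightarrow> f s \<in> carrier_vec d" "\<And>s. s \<in> S \<Longrightarrow> g s \<in> carrier_vec d"
  shows "vsum d (\<lambda>s. f s + g s) S = vsum d f S + vsum d g S"
proof -
  have dd: "\<And>s. s \<in> S \<Longrightarrow> dim_vec (f s) = d" "\<And>s. s \<in> S \<Longrightarrow> dim_vec (g s) = d"
     using assms by auto
  show ?thesis unfolding vsum_def using dd by (intro eq_vecI) (auto simp: sum.distrib[symmetric] intro!: sum.cong)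
qed

lemma vsum_smult:
  assumes "\<And>s. s \<in> S \<Longrightarrow> f s \<in> carrier_vec d"
  shows "vsum d (\<lambda>s. c \<cdot>\<^sub>v f s) S = c \<cdot>\<^sub>v vsum d f S"
proof -
  have dd: "\<And>s. s \<in> S \<Longrightarrow> dim_vec (f s) = d"
     using assms by auto
  show ?thesis unfolding vsum_def using dd by (intro eq_vecI) (auto simp: sum_distrib_left intro!: sum.cong)
qed

lemma vsum_swap:
  "vsum d (\<lambda>s. vsum d (g s) T) S = vsum d (\<lambda>t. vsum d (\<lambda>s. g s t) S) T"
  unfolding vsum_def by (intro eq_vecI) (auto intro: sum.swap)

lemma mult_mat_vsum:
  assumes "A \<in> carrier_mat nr k" "\<And>s. s \<in> S \<Longrightarrow> f s \<in> carrier_vec k"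
  shows "A *\<^sub>v vsum k f S = vsum nr (\<lambda>s. A *\<^sub>v f s) S"
proof (rule eq_vecI)
  fix i assume i: "i < dim_vec (vsum nr (\<lambda>s. A *\<^sub>v f s) S)"
  hence i': "i < nr" by simp
  have "(A *\<^sub>v vsum k f S) $ i = row A i \<bullet> vec k (\<lambda>l. \<Sum>s\<in>S. f s $ l)"
    using i' assms by (simp add: vsum_def)
  also have "\<dots> = (\<Sum>s\<in>S. row A i \<bullet> f s)"
    using assms i' by (intro scalar_prod_sum_right) auto
  finally show "(A *\<^sub>v vsum k f S) $ i = vsum nr (\<lambda>s. A *\<^sub>v f s) S $ i"
    using i' assms by (simp add: vsum_def)
qed (use assms in auto)

lemma msum_mult_vec:
  assumes "\<And>s. s \<in> S \<Longrightarrow> f s \<in> carrier_mat nr nc" "v \<in> carrier_vec nc"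
  shows "msum nr nc f S *\<^sub>v v = vsum nr (\<lambda>s. f s *\<^sub>v v) S"
proof (rule eq_vecI)
  fix i assume i: "i < dim_vec (vsum nr (\<lambda>s. f s *\<^sub>v v) S)"
  hence i': "i < nr" by simp
  have "row (msum nr nc f S) i = vec nc (\<lambda>l. \<Sum>s\<in>S. row (f s) i $ l)"
    using i' assms by (intro eq_vecI) (auto simp: msum_def intro!: sum.cong, (metis carrier_matD(1) carrier_matD(2) index_row(1) index_col)+)
  hence "(msum nr nc f S *\<^sub>v v) $ i = vec nc (\<lambda>l. \<Sum>s\<in>S. row (f s) i $ l) \<bullet> v"
    using i' by simp
  also have "\<dots> = (\<Sum>s\<in>S. row (f s) i \<bullet> v)"
    using assms i' by (intro scalar_prod_sum_left) auto
  also have "\<dots> = (\<Sum>s\<in>S. (f s *\<^sub>v v) $ i)"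
    using assms i' by (intro sum.cong refl) (metis carrier_matD(1) index_mult_mat_vec)
  finally show "(msum nr nc f S *\<^sub>v v) $ i = vsum nr (\<lambda>s. f s *\<^sub>v v) S $ i"
    using i' assms by (simp add: vsum_def)
qed (use assms in auto)

lemma vsum_scalar_left:
  assumes "\<And>s. s \<in> S \<Longrightarrow> f s \<in> carrier_vec d" "w \<in> carrier_vec d"
  shows "vsum d f S \<bullet> w = (\<Sum>s\<in>S. f s \<bullet> w)"
  unfolding vsum_def using assms by (intro scalar_prod_sum_left) auto

lemma mult_zero_vec[simp]: "A \<in> carrier_mat nr n \<Longrightarrow> A *\<^sub>v 0\<^sub>v n = 0\<^sub>v nr"
  by (intro eq_vecI) (auto simp: scalar_prod_def)

lemma minv:
  assumes "invertible_mat (A::real mat)" "A \<in> carrier_mat n n"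
  shows "minv A \<in> carrier_mat n n" "A * minv A = 1\<^sub>m n" "minv A * A = 1\<^sub>m n"
proof -
  obtain B where B: "inverts_mat A B" "inverts_mat B A" using assms unfolding invertible_mat_def by auto
  have AB: "A * B = 1\<^sub>m n" using B assms by (auto simp: inverts_mat_def)
  have "dim_row (B * A) = dim_row B" by simp
  hence BA: "B * A = 1\<^sub>m (dim_row B)" using B by (auto simp: inverts_mat_def)
  have "dim_col B = n" using AB by (metis index_mult_mat(3) index_one_mat(3))
  moreover have "dim_row B = n" using BA assms by (metis carrier_matD(2) index_mult_mat(3) index_one_mat(3))
  ultimately have Bc: "B \<in> carrier_mat n n" by auto
  have ex: "\<exists>B. B \<in> carrier_mat (dim_col A) (dim_row A) \<and> A * B = 1\<^sub>m (dim_row A) \<and> B * A = 1\<^sub>m (dim_col A)"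
    using Bc AB BA assms by (intro exI[of _ B]) auto
  from someI_ex[OF ex] show "minv A \<in> carrier_mat n n" "A * minv A = 1\<^sub>m n" "minv A * A = 1\<^sub>m n"
    using assms unfolding minv_def by auto
qed

lemma invertible_mult_vec_zero:
  assumes "invertible_mat (A::real mat)" "A \<in> carrier_mat n n" "v \<in> carrier_vec n" "A *\<^sub>v v = 0\<^sub>v n"
  shows "v = 0\<^sub>v n"
proof -
  have "v = (minv A * A) *\<^sub>v v" using minv[OF assms(1,2)] assms by simp
  also have "\<dots> = minv A *\<^sub>v (A *\<^sub>v v)" using minv[OF assms(1,2)] assms
    by (metis assoc_mult_mat_vec)
  also have "\<dots> = 0\<^sub>v n" using assms minv[OF assms(1,2)] by simp
  finally show ?thesis .
qed


section \<open>Graph-theoretic facts about a Morse matching\<close>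

locale bcx =
  fixes X :: "'c bcx"
  assumes bx: "based_cx X"
begin

lemma fin: "finite (cells X)" using bx by (simp add: based_cx_def)

lemma carr: "\<alpha> \<in> cells X \<Longrightarrow> \<beta> \<in> cells X \<Longrightarrow> bd X \<beta> \<alpha> \<in> carrier_mat (cdim X \<beta>) (cdim X \<alpha>)"
  using bx by (simp add: based_cx_def)

lemma degz: "\<alpha> \<in> cells X \<Longrightarrow> \<beta> \<in> cells X \<Longrightarrow> deg X \<alpha> \<noteq> deg X \<beta> + 1 \<Longrightarrow>
    bd X \<beta> \<alpha> = 0\<^sub>m (cdim X \<beta>) (cdim X \<alpha>)"
  using bx by (simp add: based_cx_def)

lemma dd: "\<alpha> \<in> cells X \<Longrightarrow> \<gamma> \<in> cells X \<Longrightarrow>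
   msum (cdim X \<gamma>) (cdim X \<alpha>) (\<lambda>\<beta>. bd X \<gamma> \<beta> * bd X \<beta> \<alpha>) (cells X) = 0\<^sub>m (cdim X \<gamma>) (cdim X \<alpha>)"
  using bx by (simp add: based_cx_def)

lemma edgesD: "(a, b) \<in> edges X \<Longrightarrow> a \<in> cells X \<and> b \<in> cells X \<and> deg X a = deg X b + 1 \<and>
   bd X b a \<noteq> 0\<^sub>m (cdim X b) (cdim X a)"
  unfolding edges_def using degz by auto

lemma not_edge: "a \<in> cells X \<Longrightarrow> b \<in> cells X \<Longrightarrow> (a, b) \<notin> edges X \<Longrightarrow> bd X b a = 0\<^sub>m (cdim X b) (cdim X a)"
  unfolding edges_def by auto

end

locale mmx = bcx +
  fixes M :: "('c \<times> 'c) set"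
  assumes mm: "morse_matching X M"
begin

abbreviation "r \<equiv> redges X M"

lemma M_sub: "M \<subseteq> edges X"
  using mm unfolding morse_matching_def by (elim conjE)

lemma M_edges: "(a, b) \<in> M \<Longrightarrow> (a, b) \<in> edges X"
  using M_sub by (rule subsetD)

lemma M_deg: assumes "(a, b) \<in> M" shows "a \<in> cells X \<and> b \<in> cells X \<and> deg X a = deg X b + 1"
  using edgesD[OF M_edges[OF assms]] by simp

lemma M_uniq: assumes ab: "(a, b) \<in> M" and ab': "(a', b') \<in> M" and i: "{a, b} \<inter> {a', b'} \<noteq> {}"
  shows "a = a' \<and> b = b'"
proof -
  have H: "\<forall>(\<alpha>, \<beta>)\<in>M. \<forall>(\<alpha>', \<beta>')\<in>M. {\<alpha>, \<beta>} \<inter> {\<alpha>', \<beta>'} \<noteq> {} \<longrightarrow> (\<alpha>, \<beta>) = (\<alpha>', \<beta>')"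
    using mm unfolding morse_matching_def by (elim conjE)
  have "case (a, b) of (\<alpha>, \<beta>) \<Rightarrow> \<forall>(\<alpha>', \<beta>')\<in>M. {\<alpha>, \<beta>} \<inter> {\<alpha>', \<beta>'} \<noteq> {} \<longrightarrow> (\<alpha>, \<beta>) = (\<alpha>', \<beta>')"
    using H ab by (rule bspec)
  hence "\<forall>(\<alpha>', \<beta>')\<in>M. {a, b} \<inter> {\<alpha>', \<beta>'} \<noteq> {} \<longrightarrow> (a, b) = (\<alpha>', \<beta>')"
    by (simp only: case_prod_conv)
  hence "case (a', b') of (\<alpha>', \<beta>') \<Rightarrow> {a, b} \<inter> {\<alpha>', \<beta>'} \<noteq> {} \<longrightarrow> (a, b) = (\<alpha>', \<beta>')"
    using ab' by (rule bspec)
  hence "{a, b} \<inter> {a', b'} \<noteq> {} \<longrightarrow> (a, b) = (a', b')"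
    by (simp only: case_prod_conv)
  hence "(a, b) = (a', b')" using i by (rule mp)
  thus ?thesis by (simp only: prod.inject)
qed

lemma M_uniq1: "(a, b) \<in> M \<Longrightarrow> (a, b') \<in> M \<Longrightarrow> b = b'" using M_uniq[of a b a b'] by auto
lemma M_uniq2: "(a, b) \<in> M \<Longrightarrow> (a', b) \<in> M \<Longrightarrow> a = a'" using M_uniq[of a b a' b] by auto
lemma M_uniq3: "(a, b) \<in> M \<Longrightarrow> (b, c) \<in> M \<Longrightarrow> False"
  using M_uniq[of a b b c] M_deg[of a b] by auto

lemma M_iso: "(a, b) \<in> M \<Longrightarrow> cdim X a = cdim X b \<and> invertible_mat (bd X b a)"
proof -
  assume ab: "(a, b) \<in> M"
  have "\<forall>(\<alpha>, \<beta>)\<in>M. cdim X \<alpha> = cdim X \<beta> \<and> invertible_mat (bd X \<beta> \<alpha>)"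
    using mm unfolding morse_matching_def by (elim conjE)
  thus ?thesis using ab by auto
qed

lemma same_deg: "a \<in> cells X \<Longrightarrow> b \<in> cells X \<Longrightarrow> deg X a = deg X b \<Longrightarrow>
   (a, b) \<in> r\<^sup>* \<Longrightarrow> (b, a) \<in> r\<^sup>* \<Longrightarrow> a = b"
proof -
  have "\<forall>\<alpha>\<in>cells X. \<forall>\<beta>\<in>cells X. deg X \<alpha> = deg X \<beta> \<longrightarrow>
        (\<alpha>, \<beta>) \<in> r\<^sup>* \<longrightarrow> (\<beta>, \<alpha>) \<in> r\<^sup>* \<longrightarrow> \<alpha> = \<beta>"
    using mm unfolding morse_matching_def by (elim conjE)
  thus "a \<in> cells X \<Longrightarrow> b \<in> cells X \<Longrightarrow> deg X a = deg X b \<Longrightarrow>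
   (a, b) \<in> r\<^sup>* \<Longrightarrow> (b, a) \<in> r\<^sup>* \<Longrightarrow> a = b" by blast
qed

lemma rD: "(a, b) \<in> r \<Longrightarrow> a \<in> cells X \<and> b \<in> cells X \<and>
   (((a, b) \<in> edges X \<and> (a, b) \<notin> M \<and> deg X a = deg X b + 1) \<or> ((b, a) \<in> M \<and> deg X b = deg X a + 1))"
  unfolding redges_def by (auto dest: edgesD M_deg)

lemma r_cells: "(a, b) \<in> r \<Longrightarrow> a \<in> cells X" "(a, b) \<in> r \<Longrightarrow> b \<in> cells X"
  using rD by auto

lemma r_finite: "finite r"
proof -
  have "r \<subseteq> cells X \<times> cells X" using rD by auto
  thus ?thesis using fin finite_subset by blast
qed

lemma down_trancl: "(x, y) \<in> (edges X - M)\<^sup>+ \<Longrightarrow> deg X y < deg X x"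
  by (induction rule: trancl_induct) (auto dest: edgesD)

lemma r_split: "(x, y) \<in> r\<^sup>+ \<Longrightarrow> (x, y) \<in> (edges X - M)\<^sup>+ \<or>
   (\<exists>u v. (x, u) \<in> r\<^sup>* \<and> (v, u) \<in> M \<and> (v, y) \<in> r\<^sup>*)"
proof (induction rule: trancl_induct)
  case (base y)
  then show ?case unfolding redges_def by auto
next
  case (step y z)
  from step(2) have "(y, z) \<in> edges X - M \<or> (z, y) \<in> M" unfolding redges_def by auto
  then show ?case
  proof
    assume yz: "(y, z) \<in> edges X - M"
    from step(3) show ?thesis
    proof
      assume "(x, y) \<in> (edges X - M)\<^sup>+"
      hence "(x, z) \<in> (edges X - M)\<^sup>+" using yz by (rule trancl_into_trancl)
      thus ?thesis by blast
    next
      assume "\<exists>u v. (x, u) \<in> r\<^sup>* \<and> (v, u) \<in> M \<and> (v, y) \<in> r\<^sup>*"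
      then obtain u v where "(x, u) \<in> r\<^sup>*" "(v, u) \<in> M" "(v, y) \<in> r\<^sup>*" by blast
      moreover have "(y, z) \<in> r" using step(2) .
      ultimately show ?thesis by (meson rtrancl.simps)
    qed
  next
    assume "(z, y) \<in> M"
    moreover have "(x, y) \<in> r\<^sup>*" using step(1) by auto
    ultimately show ?thesis by blast
  qed
qed

lemma acyc: "(a, a) \<notin> r\<^sup>+"
proof
  assume aa: "(a, a) \<in> r\<^sup>+"
  have "(a, a) \<notin> (edges X - M)\<^sup>+" using down_trancl by blast
  with r_split[OF aa] obtain u v where au: "(a, u) \<in> r\<^sup>*" and vu: "(v, u) \<in> M" and va: "(v, a) \<in> r\<^sup>*"
    by blast
  have uv_r: "(u, v) \<in> r" using vu unfolding redges_def by auto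
  have "(v, u) \<in> r\<^sup>*" using va au by auto
  moreover have "v \<noteq> u" using M_deg[OF vu] by auto
  ultimately have "(v, u) \<in> r\<^sup>+" by (meson rtranclD)
  then obtain w where vw: "(v, w) \<in> r" and wu: "(w, u) \<in> r\<^sup>*" by (meson tranclD)
  have "\<not> ((w, v) \<in> M)" using M_uniq3[OF _ vu] by blast
  with rD[OF vw] have "(v, w) \<in> edges X \<and> (v, w) \<notin> M \<and> deg X v = deg X w + 1"
    by auto
  hence vw': "(v, w) \<in> edges X" "(v, w) \<notin> M" "deg X v = deg X w + 1" by auto
  have wu': "w \<noteq> u" using vw' vu by auto
  have uw: "(u, w) \<in> r\<^sup>*" using uv_r vw by auto
  have dw: "deg X w = deg X u" using vw' M_deg[OF vu] by auto
  have cw: "w \<in> cells X" "u \<in> cells X" using vw' edgesD M_deg[OF vu] by auto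
  from same_deg[OF cw dw wu uw] wu' show False by blast
qed

lemma acyclic_r: "acyclic r" using acyc unfolding acyclic_def by blast

lemma wf_down: "wf ((r\<inverse>)\<^sup>+)"
  using finite_acyclic_wf_converse[OF r_finite acyclic_r] wf_trancl by blast

lemma wf_up: "wf (r\<^sup>+)"
  using finite_acyclic_wf[OF r_finite acyclic_r] wf_trancl by blast

lemma walk_deg: assumes "(x, y) \<in> r\<^sup>*"
  shows "deg X y \<le> deg X x + 1 \<and> (deg X y = deg X x + 1 \<longrightarrow> (\<exists>z. (y, z) \<in> M))"
  using assms
proof (induction rule: rtrancl_induct)
  case base
  show ?case by simp
next
  case (step y w)
  from rD[OF step(2)] have "((y, w) \<in> edges X \<and> (y, w) \<notin> M \<and> deg X y = deg X w + 1) \<or>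
     ((w, y) \<in> M \<and> deg X w = deg X y + 1)" by (elim conjE)
  then show ?case
  proof
    assume "(y, w) \<in> edges X \<and> (y, w) \<notin> M \<and> deg X y = deg X w + 1"
    thus ?thesis using step(3) by auto
  next
    assume a: "(w, y) \<in> M \<and> deg X w = deg X y + 1"
    have "deg X y \<noteq> deg X x + 1"
    proof
      assume "deg X y = deg X x + 1"
      then obtain z where "(y, z) \<in> M" using step(3) by auto
      thus False using a M_uniq3 by blast
    qed
    thus ?thesis using step(3) a by auto
  qed
qed

end


context mmx
begin

section \<open>Paths and the recursion for Gamma\<close>

lemma mpaths_steps: "p \<in> mpaths X M a b \<Longrightarrow> Suc i < length p \<Longrightarrow> (p!i, p!Suc i) \<in> r"
  unfolding mpaths_def by auto

lemma mpaths_reach: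
  assumes p: "p \<in> mpaths X M a b"
  shows "i < length p \<Longrightarrow> (a, p!i) \<in> r\<^sup>*"
proof (induction i)
  case 0
  have "p \<noteq> []" "hd p = a" using p by (auto simp: mpaths_def)
  then show ?case by (simp add: hd_conv_nth)
next
  case (Suc i)
  then have "(a, p!i) \<in> r\<^sup>*" by simp
  moreover have "(p!i, p!Suc i) \<in> r" using mpaths_steps[OF p Suc.prems] .
  ultimately show ?case by (rule rtrancl_into_rtrancl)
qed

lemma mpaths_reach_set: "p \<in> mpaths X M a b \<Longrightarrow> x \<in> set p \<Longrightarrow> (a, x) \<in> r\<^sup>*"
  using mpaths_reach by (metis in_set_conv_nth)

lemma mpaths_end_reach: "p \<in> mpaths X M a b \<Longrightarrow> (a, b) \<in> r\<^sup>*"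
proof -
  assume p: "p \<in> mpaths X M a b"
  hence "b \<in> set p" by (auto simp: mpaths_def)
  thus ?thesis using mpaths_reach_set[OF p] by blast
qed

lemma mpaths_set: assumes p: "p \<in> mpaths X M a b" shows "set p \<subseteq> insert a (cells X)"
proof
  fix x assume "x \<in> set p"
  then obtain i where i: "i < length p" "x = p!i" by (metis in_set_conv_nth)
  show "x \<in> insert a (cells X)"
  proof (cases i)
    case 0
    have "p \<noteq> []" "hd p = a" using p by (auto simp: mpaths_def)
    then show ?thesis using i 0 by (simp add: hd_conv_nth)
  next
    case (Suc j)
    then have "(p!j, p!i) \<in> r" using mpaths_steps[OF p, of j] i by simp
    then show ?thesis using i r_cells by blast
  qed
qed

lemma mpaths_finite: "finite (mpaths X M a b)"
proof -
  have "mpaths X M a b \<subseteq> {xs. set xs \<subseteq> insert a (cells X) \<and> distinct xs}"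
    using mpaths_set by (auto simp: mpaths_def)
  moreover have "finite {xs. set xs \<subseteq> insert a (cells X) \<and> distinct xs}"
    using fin by (intro finite_subset_distinct) simp
  ultimately show ?thesis by (rule finite_subset)
qed

lemma mpaths_refl: "mpaths X M a a = {[a]}"
proof
  show "{[a]} \<subseteq> mpaths X M a a" by (auto simp: mpaths_def)
next
  show "mpaths X M a a \<subseteq> {[a]}"
  proof
    fix p assume p: "p \<in> mpaths X M a a"
    hence p1: "p \<noteq> []" "hd p = a" "last p = a" "distinct p" by (auto simp: mpaths_def)
    have "length p = 1"
    proof (rule ccontr)
      assume "length p \<noteq> 1"
      hence l: "length p \<ge> 2" using p1 by (cases p) auto
      have "p ! 0 = p ! (length p - 1)" using p1 by (simp add: hd_conv_nth last_conv_nth)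
      hence "0 = length p - 1" using p1(4) l nth_eq_iff_index_eq[of p 0 "length p - 1"] by fastforce
      thus False using l by simp
    qed
    thus "p \<in> {[a]}" using p1 by (cases p) auto
  qed
qed

lemma mpaths_tl:
  assumes p: "x # q \<in> mpaths X M a b" and q: "q \<noteq> []"
  shows "x = a" "(a, hd q) \<in> r" "q \<in> mpaths X M (hd q) b" "a \<notin> set q"
proof -
  show xa: "x = a" using p by (simp add: mpaths_def)
  have "((x # q)!0, (x # q)! Suc 0) \<in> r" using mpaths_steps[OF p, of 0] q by simp
  thus "(a, hd q) \<in> r" using xa q by (simp add: hd_conv_nth)
  show "a \<notin> set q" using p xa by (simp add: mpaths_def)
  show "q \<in> mpaths X M (hd q) b"
    unfolding mpaths_def
  proof (intro CollectI conjI allI impI)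
    show "q \<noteq> []" "hd q = hd q" using q by auto
    show "last q = b" using p q by (simp add: mpaths_def)
    show "distinct q" using p by (simp add: mpaths_def)
    fix i assume "Suc i < length q"
    thus "(q ! i, q ! Suc i) \<in> r" using mpaths_steps[OF p, of "Suc i"] by simp
  qed
qed

lemma mpaths_cons:
  assumes ab: "a \<noteq> b"
  shows "mpaths X M a b = (\<lambda>q. a # q) ` (\<Union>g\<in>{g. (a, g) \<in> r}. mpaths X M g b)"
proof
  show "mpaths X M a b \<subseteq> (\<lambda>q. a # q) ` (\<Union>g\<in>{g. (a, g) \<in> r}. mpaths X M g b)"
  proof
    fix p assume p: "p \<in> mpaths X M a b"
    then obtain x q where pq: "p = x # q" by (cases p) (auto simp: mpaths_def)
    have "q \<noteq> []" using p pq ab by (auto simp: mpaths_def)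
    note t = mpaths_tl[OF p[unfolded pq] this]
    thus "p \<in> (\<lambda>q. a # q) ` (\<Union>g\<in>{g. (a, g) \<in> r}. mpaths X M g b)"
      using pq by blast
  qed
next
  show "(\<lambda>q. a # q) ` (\<Union>g\<in>{g. (a, g) \<in> r}. mpaths X M g b) \<subseteq> mpaths X M a b"
  proof
    fix p assume "p \<in> (\<lambda>q. a # q) ` (\<Union>g\<in>{g. (a, g) \<in> r}. mpaths X M g b)"
    then obtain g q where ag: "(a, g) \<in> r" and q: "q \<in> mpaths X M g b" and pq: "p = a # q" by blast
    have q1: "q \<noteq> []" "hd q = g" "last q = b" "distinct q" using q by (auto simp: mpaths_def)
    have "a \<notin> set q"
    proof
      assume "a \<in> set q"
      hence "(g, a) \<in> r\<^sup>*" using mpaths_reach_set[OF q] by blast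
      hence "(a, a) \<in> r\<^sup>+" using ag by auto
      thus False using acyc by blast
    qed
    show "p \<in> mpaths X M a b"
      unfolding mpaths_def pq
    proof (intro CollectI conjI allI impI)
      show "a # q \<noteq> []" "hd (a # q) = a" by auto
      show "last (a # q) = b" using q1 by simp
      show "distinct (a # q)" using q1 \<open>a \<notin> set q\<close> by simp
      fix i assume i: "Suc i < length (a # q)"
      show "((a # q) ! i, (a # q) ! Suc i) \<in> r"
      proof (cases i)
        case 0
        then show ?thesis using ag q1 by (simp add: hd_conv_nth)
      next
        case (Suc j)
        then show ?thesis using mpaths_steps[OF q, of j] i by simp
      qed
    qed
  qed
qed

lemma pweight_cons: "q \<noteq> [] \<Longrightarrow> pweight X M (a # q) = pweight X M q * mstep X M a (hd q)"
  by (cases q) auto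

lemma mstep_down: "(y, x) \<notin> M \<Longrightarrow> mstep X M x y = bd X y x"
  by (simp add: mstep_def)

lemma mstep_up: "(y, x) \<in> M \<Longrightarrow> mstep X M x y = - minv (bd X x y)"
  by (simp add: mstep_def)

lemma mstep_carrier:
  assumes xy: "(x, y) \<in> r"
  shows "mstep X M x y \<in> carrier_mat (cdim X y) (cdim X x)"
proof -
  from rD[OF xy] have c: "x \<in> cells X" "y \<in> cells X" by auto
  from rD[OF xy] have "((x, y) \<in> edges X \<and> (x, y) \<notin> M \<and> deg X x = deg X y + 1) \<or>
     ((y, x) \<in> M \<and> deg X y = deg X x + 1)" by (elim conjE)
  then show ?thesis
  proof
    assume a: "(x, y) \<in> edges X \<and> (x, y) \<notin> M \<and> deg X x = deg X y + 1"
    hence "(y, x) \<notin> M" using M_deg by fastforce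
    thus ?thesis using carr[OF c] by (simp add: mstep_down)
  next
    assume a: "(y, x) \<in> M \<and> deg X y = deg X x + 1"
    hence i: "cdim X y = cdim X x" "invertible_mat (bd X x y)" using M_iso by auto
    have "bd X x y \<in> carrier_mat (cdim X x) (cdim X x)" using carr[OF c(2,1)] i by simp
    hence "minv (bd X x y) \<in> carrier_mat (cdim X x) (cdim X x)" using minv(1) i by blast
    thus ?thesis using a i by (simp add: mstep_up uminus_carrier_mat)
  qed
qed

lemma pweight_carrier:
  "p \<in> mpaths X M a b \<Longrightarrow> pweight X M p \<in> carrier_mat (cdim X b) (cdim X a)"
proof (induction p arbitrary: a)
  case Nil
  then show ?case by (simp add: mpaths_def)
next
  case (Cons x q)
  show ?case
  proof (cases "q = []")
    case True
    then have "x = a" "a = b" using Cons.prems by (auto simp: mpaths_def)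
    then show ?thesis using True by simp
  next
    case False
    note t = mpaths_tl[OF Cons.prems False]
    have "pweight X M q \<in> carrier_mat (cdim X b) (cdim X (hd q))" using Cons.IH[OF t(3)] .
    moreover have "mstep X M a (hd q) \<in> carrier_mat (cdim X (hd q)) (cdim X a)"
      using mstep_carrier[OF t(2)] .
    ultimately show ?thesis using False t(1) by (simp add: pweight_cons)
  qed
qed

lemma msum_UN:
  assumes "finite I" "\<And>i. i \<in> I \<Longrightarrow> finite (A i)"
    "\<And>i j. i \<in> I \<Longrightarrow> j \<in> I \<Longrightarrow> i \<noteq> j \<Longrightarrow> A i \<inter> A j = {}"
  shows "msum nr nc f (\<Union>i\<in>I. A i) = msum nr nc (\<lambda>i. msum nr nc f (A i)) I"
  unfolding msum_def
proof (intro eq_matI)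
  fix i j assume "i < dim_row (mat nr nc (\<lambda>ij. \<Sum>s\<in>I. mat nr nc (\<lambda>ij. \<Sum>s\<in>A s. f s $$ ij) $$ ij))"
    "j < dim_col (mat nr nc (\<lambda>ij. \<Sum>s\<in>I. mat nr nc (\<lambda>ij. \<Sum>s\<in>A s. f s $$ ij) $$ ij))"
  hence ij: "i < nr" "j < nc" by auto
  have "(\<Sum>s\<in>(\<Union>i\<in>I. A i). f s $$ (i,j)) = (\<Sum>x\<in>I. \<Sum>s\<in>A x. f s $$ (i,j))"
    using assms by (intro sum.UNION_disjoint) auto
  thus "mat nr nc (\<lambda>ij. \<Sum>s\<in>\<Union> (A ` I). f s $$ ij) $$ (i, j) =
         mat nr nc (\<lambda>ij. \<Sum>s\<in>I. mat nr nc (\<lambda>ij. \<Sum>s\<in>A s. f s $$ ij) $$ ij) $$ (i, j)"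
    using ij by simp
qed auto

lemma out_finite: "finite {g. (a, g) \<in> r}"
proof -
  have "{g. (a, g) \<in> r} \<subseteq> cells X" using r_cells by blast
  thus ?thesis using fin finite_subset by blast
qed

lemma Gamma_rec:
  assumes ab: "a \<noteq> b"
  shows "Gamma X M b a = msum (cdim X b) (cdim X a) (\<lambda>g. Gamma X M b g * mstep X M a g) {g. (a, g) \<in> r}"
proof -
  let ?G = "{g. (a, g) \<in> r}"
  have "Gamma X M b a = msum (cdim X b) (cdim X a) (pweight X M) ((\<lambda>q. a # q) ` (\<Union>g\<in>?G. mpaths X M g b))"
    unfolding Gamma_def using mpaths_cons[OF ab] by simp
  also have "\<dots> = msum (cdim X b) (cdim X a) (\<lambda>q. pweight X M (a # q)) (\<Union>g\<in>?G. mpaths X M g b)"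
    by (rule msum_reindex) (simp add: inj_on_def)
  also have "\<dots> = msum (cdim X b) (cdim X a) (\<lambda>g. msum (cdim X b) (cdim X a) (\<lambda>q. pweight X M (a # q)) (mpaths X M g b)) ?G"
  proof (rule msum_UN)
    show "finite ?G" by (rule out_finite)
    show "\<And>i. i \<in> ?G \<Longrightarrow> finite (mpaths X M i b)" by (rule mpaths_finite)
    show "\<And>i j. i \<in> ?G \<Longrightarrow> j \<in> ?G \<Longrightarrow> i \<noteq> j \<Longrightarrow> mpaths X M i b \<inter> mpaths X M j b = {}"
      by (auto simp: mpaths_def)
  qed
  also have "\<dots> = msum (cdim X b) (cdim X a) (\<lambda>g. msum (cdim X b) (cdim X a) (\<lambda>q. pweight X M q * mstep X M a g) (mpaths X M g b)) ?G"
    by (intro msum_cong) (auto simp: mpaths_def pweight_cons)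
  also have "\<dots> = msum (cdim X b) (cdim X a) (\<lambda>g. Gamma X M b g * mstep X M a g) ?G"
  proof (intro msum_cong)
    fix g assume g: "g \<in> ?G"
    show "msum (cdim X b) (cdim X a) (\<lambda>q. pweight X M q * mstep X M a g) (mpaths X M g b) = Gamma X M b g * mstep X M a g"
      unfolding Gamma_def
      using pweight_carrier mstep_carrier g by (intro msum_mult_right) auto
  qed
  finally show ?thesis .
qed

lemma Gamma_refl: "Gamma X M a a = 1\<^sub>m (cdim X a)"
  unfolding Gamma_def mpaths_refl by (subst msum_single) auto

lemma Gamma_carrier[simp]: "Gamma X M b a \<in> carrier_mat (cdim X b) (cdim X a)"
  unfolding Gamma_def by simp

lemma Gamma_nopath: "(a, b) \<notin> r\<^sup>* \<Longrightarrow> Gamma X M b a = 0\<^sub>m (cdim X b) (cdim X a)"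
proof -
  assume "(a, b) \<notin> r\<^sup>*"
  hence "mpaths X M a b = {}" using mpaths_end_reach by blast
  thus ?thesis unfolding Gamma_def by simp
qed

section \<open>Critical cells\<close>

lemma crit_iff: "x \<in> crit X M \<longleftrightarrow> x \<in> cells X \<and> (\<forall>y. (x, y) \<notin> M) \<and> (\<forall>y. (y, x) \<notin> M)"
  unfolding crit_def by force

lemma Gamma_up_zero:
  assumes "\<beta> \<in> crit X M" "deg X \<beta> = deg X x + 1"
  shows "Gamma X M \<beta> x = 0\<^sub>m (cdim X \<beta>) (cdim X x)"
proof (rule Gamma_nopath)
  show "(x, \<beta>) \<notin> r\<^sup>*"
  proof
    assume "(x, \<beta>) \<in> r\<^sup>*"
    then obtain z where "(\<beta>, z) \<in> M" using walk_deg assms(2) by blast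
    thus False using assms(1) crit_iff by blast
  qed
qed

lemma out_not_lower:
  assumes "\<And>y. (y, x) \<notin> M" "(x, g) \<in> r"
  shows "(x, g) \<in> edges X \<and> (x, g) \<notin> M \<and> deg X x = deg X g + 1 \<and> mstep X M x g = bd X g x"
proof -
  from rD[OF assms(2)] have "((x, g) \<in> edges X \<and> (x, g) \<notin> M \<and> deg X x = deg X g + 1) \<or>
     ((g, x) \<in> M \<and> deg X g = deg X x + 1)" by (elim conjE)
  thus ?thesis using assms(1) mstep_down[OF assms(1)] by blast
qed

lemma out_lower:
  assumes "(y, x) \<in> M" "(x, g) \<in> r"
  shows "g = y \<or> ((x, g) \<in> edges X \<and> (x, g) \<notin> M \<and> deg X x = deg X g + 1 \<and> mstep X M x g = bd X g x)"
proof -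
  from rD[OF assms(2)] have "((x, g) \<in> edges X \<and> (x, g) \<notin> M \<and> deg X x = deg X g + 1) \<or>
     ((g, x) \<in> M \<and> deg X g = deg X x + 1)" by (elim conjE)
  then show ?thesis
  proof
    assume a: "(x, g) \<in> edges X \<and> (x, g) \<notin> M \<and> deg X x = deg X g + 1"
    hence "(g, x) \<notin> M" using M_deg by fastforce
    thus ?thesis using a mstep_down by blast
  next
    assume "(g, x) \<in> M \<and> deg X g = deg X x + 1"
    thus ?thesis using M_uniq2 assms(1) by blast
  qed
qed

lemma not_lower_upper: "(x, y) \<in> M \<Longrightarrow> (z, x) \<notin> M"
  using M_uniq3 by blast

lemma Gamma_same_deg_zero:
  assumes b: "\<beta> \<in> crit X M" and d: "deg X \<beta> = deg X \<alpha>" and ab: "\<alpha> \<noteq> \<beta>"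
    and nl: "\<And>y. (y, \<alpha>) \<notin> M"
  shows "Gamma X M \<beta> \<alpha> = 0\<^sub>m (cdim X \<beta>) (cdim X \<alpha>)"
proof -
  have "Gamma X M \<beta> \<alpha> = msum (cdim X \<beta>) (cdim X \<alpha>) (\<lambda>g. Gamma X M \<beta> g * mstep X M \<alpha> g) {g. (\<alpha>, g) \<in> r}"
    using Gamma_rec ab by blast
  also have "\<dots> = 0\<^sub>m (cdim X \<beta>) (cdim X \<alpha>)"
  proof (rule msum_zero)
    fix g assume g: "g \<in> {g. (\<alpha>, g) \<in> r}"
    hence "deg X \<alpha> = deg X g + 1" using out_not_lower[OF nl] by blast
    hence "Gamma X M \<beta> g = 0\<^sub>m (cdim X \<beta>) (cdim X g)" using Gamma_up_zero b d by simp
    moreover have "mstep X M \<alpha> g \<in> carrier_mat (cdim X g) (cdim X \<alpha>)" using mstep_carrier g by simp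
    ultimately show "Gamma X M \<beta> g * mstep X M \<alpha> g = 0\<^sub>m (cdim X \<beta>) (cdim X \<alpha>)"
      by (simp add: left_mult_zero_mat)
  qed
  finally show ?thesis .
qed

lemma Gamma_crit_crit:
  assumes "\<alpha> \<in> crit X M" "\<beta> \<in> crit X M" "deg X \<beta> = deg X \<alpha>"
  shows "Gamma X M \<beta> \<alpha> = (if \<alpha> = \<beta> then 1\<^sub>m (cdim X \<alpha>) else 0\<^sub>m (cdim X \<beta>) (cdim X \<alpha>))"
  using Gamma_refl Gamma_same_deg_zero assms crit_iff by auto

end


context mmx
begin

lemma add_eq_zero_neg:
  fixes P :: "real mat"
  assumes "P \<in> carrier_mat nr nc" "Q \<in> carrier_mat nr nc" "P + Q = 0\<^sub>m nr nc"
  shows "Q = - P"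
proof (rule eq_matI)
  fix i j assume ij: "i < dim_row (- P)" "j < dim_col (- P)"
  have ij': "i < nr" "j < nc" using ij assms by auto
  have "P $$ (i, j) + Q $$ (i, j) = (P + Q) $$ (i, j)" using ij' assms(1,2) by simp
  also have "\<dots> = (0\<^sub>m nr nc :: real mat) $$ (i, j)" using assms(3) by simp
  also have "\<dots> = 0" using ij' by simp
  finally have "P $$ (i, j) + Q $$ (i, j) = 0" .
  thus "Q $$ (i, j) = (- P) $$ (i, j)" using ij' assms by simp
qed (use assms in auto)

lemma Gamma_dims[simp]: "dim_row (Gamma X M b a) = cdim X b" "dim_col (Gamma X M b a) = cdim X a"
  using Gamma_carrier carrier_matD by blast+

lemma Gm_carrier[simp]: "B \<in> carrier_mat (cdim X g) k \<Longrightarrow> Gamma X M b g * B \<in> carrier_mat (cdim X b) k"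
  by (rule mult_carrier_mat[OF Gamma_carrier])

lemma Gamma_rec_down:
  assumes a: "\<alpha> \<in> cells X" and ab: "\<alpha> \<noteq> b" and nl: "\<And>y. (y, \<alpha>) \<notin> M"
  shows "Gamma X M b \<alpha> = msum (cdim X b) (cdim X \<alpha>) (\<lambda>\<delta>. Gamma X M b \<delta> * bd X \<delta> \<alpha>) (cells X - {\<delta>. (\<alpha>, \<delta>) \<in> M})"
proof -
  let ?G = "{g. (\<alpha>, g) \<in> r}"
  have "Gamma X M b \<alpha> = msum (cdim X b) (cdim X \<alpha>) (\<lambda>g. Gamma X M b g * mstep X M \<alpha> g) ?G"
    using Gamma_rec[OF ab] .
  also have "\<dots> = msum (cdim X b) (cdim X \<alpha>) (\<lambda>g. Gamma X M b g * bd X g \<alpha>) ?G"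
    using out_not_lower[OF nl] by (intro msum_cong) auto
  also have "\<dots> = msum (cdim X b) (cdim X \<alpha>) (\<lambda>\<delta>. Gamma X M b \<delta> * bd X \<delta> \<alpha>) (cells X - {\<delta>. (\<alpha>, \<delta>) \<in> M})"
  proof (rule msum_subset_zero[symmetric])
    show "finite (cells X - {\<delta>. (\<alpha>, \<delta>) \<in> M})" using fin by simp
    show "?G \<subseteq> cells X - {\<delta>. (\<alpha>, \<delta>) \<in> M}" using out_not_lower[OF nl] r_cells by blast
    fix \<delta> assume d: "\<delta> \<in> cells X - {\<delta>. (\<alpha>, \<delta>) \<in> M} - ?G"
    hence "(\<alpha>, \<delta>) \<notin> edges X" unfolding redges_def by auto
    hence "bd X \<delta> \<alpha> = 0\<^sub>m (cdim X \<delta>) (cdim X \<alpha>)" using not_edge a d by blast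
    thus "Gamma X M b \<delta> * bd X \<delta> \<alpha> = 0\<^sub>m (cdim X b) (cdim X \<alpha>)"
      by (simp add: right_mult_zero_mat[OF Gamma_carrier])
  qed
  finally show ?thesis .
qed

lemma Gamma_rec_lower:
  assumes yx: "(y, x) \<in> M" and xb: "x \<noteq> b"
  shows "Gamma X M b x = Gamma X M b y * mstep X M x y +
     msum (cdim X b) (cdim X x) (\<lambda>\<delta>. Gamma X M b \<delta> * bd X \<delta> x) (cells X)"
proof -
  let ?G = "{g. (x, g) \<in> r}"
  have x: "x \<in> cells X" "y \<in> cells X" "deg X y = deg X x + 1" using M_deg[OF yx] by auto
  have yG: "y \<in> ?G" using yx unfolding redges_def by auto
  have Gi: "?G = insert y (?G - {y})" using yG by blast
  have "Gamma X M b x = msum (cdim X b) (cdim X x) (\<lambda>g. Gamma X M b g * mstep X M x g) ?G"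
    using Gamma_rec[OF xb] .
  also have "\<dots> = Gamma X M b y * mstep X M x y + msum (cdim X b) (cdim X x) (\<lambda>g. Gamma X M b g * mstep X M x g) (?G - {y})"
    apply (subst Gi)
    apply (rule msum_insert)
    using out_finite mstep_carrier[of x y] yG by auto
  also have "msum (cdim X b) (cdim X x) (\<lambda>g. Gamma X M b g * mstep X M x g) (?G - {y})
     = msum (cdim X b) (cdim X x) (\<lambda>g. Gamma X M b g * bd X g x) (?G - {y})"
  proof (intro msum_cong)
    fix g assume "g \<in> ?G - {y}"
    hence "mstep X M x g = bd X g x" using out_lower[OF yx, of g] by auto
    thus "Gamma X M b g * mstep X M x g = Gamma X M b g * bd X g x" by simp
  qed
  also have "\<dots> = msum (cdim X b) (cdim X x) (\<lambda>\<delta>. Gamma X M b \<delta> * bd X \<delta> x) (cells X)"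
  proof (rule msum_subset_zero[symmetric])
    show "finite (cells X)" using fin .
    show "?G - {y} \<subseteq> cells X" using r_cells by blast
    fix \<delta> assume d: "\<delta> \<in> cells X - (?G - {y})"
    have "bd X \<delta> x = 0\<^sub>m (cdim X \<delta>) (cdim X x)"
    proof (cases "\<delta> = y")
      case True
      then show ?thesis using degz x by simp
    next
      case False
      hence "(x, \<delta>) \<notin> r" using d by auto
      moreover have "(x, \<delta>) \<notin> M" using not_lower_upper yx by blast
      ultimately have "(x, \<delta>) \<notin> edges X" unfolding redges_def by auto
      thus ?thesis using not_edge x d by blast
    qed
    thus "Gamma X M b \<delta> * bd X \<delta> x = 0\<^sub>m (cdim X b) (cdim X x)"
      by (simp add: right_mult_zero_mat[OF Gamma_carrier])
  qed
  finally show ?thesis .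
qed

lemma msum_below_zero:
  assumes "b \<in> crit X M" "deg X b = deg X x" "x \<in> cells X"
  shows "msum (cdim X b) (cdim X x) (\<lambda>\<delta>. Gamma X M b \<delta> * bd X \<delta> x) (cells X) = 0\<^sub>m (cdim X b) (cdim X x)"
proof (rule msum_zero)
  fix \<delta> assume d: "\<delta> \<in> cells X"
  show "Gamma X M b \<delta> * bd X \<delta> x = 0\<^sub>m (cdim X b) (cdim X x)"
  proof (cases "deg X x = deg X \<delta> + 1")
    case True
    hence "Gamma X M b \<delta> = 0\<^sub>m (cdim X b) (cdim X \<delta>)" using Gamma_up_zero assms by simp
    moreover have "bd X \<delta> x \<in> carrier_mat (cdim X \<delta>) (cdim X x)" using carr d assms by simp
    ultimately show ?thesis by (simp add: left_mult_zero_mat)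
  next
    case False
    hence "bd X \<delta> x = 0\<^sub>m (cdim X \<delta>) (cdim X x)" using degz d assms by simp
    thus ?thesis by (simp add: right_mult_zero_mat[OF Gamma_carrier])
  qed
qed

lemma matched_sets:
  "(a, b) \<in> M \<Longrightarrow> {\<delta>. (a, \<delta>) \<in> M} = {b}"
  using M_uniq1 by blast

lemma crit_not_matched: "\<beta> \<in> crit X M \<Longrightarrow> (a, b) \<in> M \<Longrightarrow> \<beta> \<noteq> a \<and> \<beta> \<noteq> b"
  using crit_iff by blast

lemma CM:
  assumes \<tau>: "\<tau> \<in> crit X M"
  shows "\<alpha> \<in> cells X \<Longrightarrow> deg X \<alpha> = deg X \<tau> + 1 \<Longrightarrow>
    msum (cdim X \<tau>) (cdim X \<alpha>) (\<lambda>\<delta>. Gamma X M \<tau> \<delta> * bd X \<delta> \<alpha>) (cells X) =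
    msum (cdim X \<tau>) (cdim X \<alpha>) (\<lambda>\<beta>. Gamma X M \<tau> \<beta> * Gamma X M \<beta> \<alpha>) {\<beta> \<in> crit X M. deg X \<beta> = deg X \<alpha>}"
proof (induction \<alpha> rule: wf_induct[OF wf_down])
  case (1 \<alpha>)
  note IH = "1.IH"
  assume a: "\<alpha> \<in> cells X" and da: "deg X \<alpha> = deg X \<tau> + 1"
  let ?C = "{\<beta> \<in> crit X M. deg X \<beta> = deg X \<alpha>}"
  have finC: "finite ?C" using fin unfolding crit_def by auto
  have tc: "\<tau> \<in> cells X" using \<tau> crit_iff by blast
  have at: "\<alpha> \<noteq> \<tau>" using da by auto
  consider (crit) "\<alpha> \<in> crit X M" | (upper) \<rho> where "(\<alpha>, \<rho>) \<in> M" | (lower) \<sigma> where "(\<sigma>, \<alpha>) \<in> M"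
    using a crit_iff by blast
  then show ?case
  proof cases
    case crit
    have "msum (cdim X \<tau>) (cdim X \<alpha>) (\<lambda>\<beta>. Gamma X M \<tau> \<beta> * Gamma X M \<beta> \<alpha>) ?C = Gamma X M \<tau> \<alpha> * Gamma X M \<alpha> \<alpha>"
    proof (rule msum_zero_mat_terms)
      show "finite ?C" by (rule finC)
      show "\<alpha> \<in> ?C" using crit by simp
      show "Gamma X M \<tau> \<alpha> * Gamma X M \<alpha> \<alpha> \<in> carrier_mat (cdim X \<tau>) (cdim X \<alpha>)"
        by (simp add: Gamma_refl)
      fix \<beta> assume b: "\<beta> \<in> ?C - {\<alpha>}"
      hence "Gamma X M \<beta> \<alpha> = 0\<^sub>m (cdim X \<beta>) (cdim X \<alpha>)" using Gamma_crit_crit crit by auto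
      thus "Gamma X M \<tau> \<beta> * Gamma X M \<beta> \<alpha> = 0\<^sub>m (cdim X \<tau>) (cdim X \<alpha>)"
        by (simp add: right_mult_zero_mat[OF Gamma_carrier])
    qed
    also have "\<dots> = Gamma X M \<tau> \<alpha>" by (simp add: Gamma_refl right_mult_one_mat[OF Gamma_carrier])
    also have "\<dots> = msum (cdim X \<tau>) (cdim X \<alpha>) (\<lambda>\<delta>. Gamma X M \<tau> \<delta> * bd X \<delta> \<alpha>) (cells X - {\<delta>. (\<alpha>, \<delta>) \<in> M})"
      using Gamma_rec_down[OF a at] crit crit_iff by blast
    also have "cells X - {\<delta>. (\<alpha>, \<delta>) \<in> M} = cells X" using crit crit_iff by blast
    finally show ?thesis by simp
  next
    case upper
    have \<rho>: "\<rho> \<in> cells X" "deg X \<alpha> = deg X \<rho> + 1" using M_deg[OF upper] by auto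
    have iso: "cdim X \<alpha> = cdim X \<rho>" "invertible_mat (bd X \<rho> \<alpha>)" using M_iso[OF upper] by auto
    have Bc: "bd X \<rho> \<alpha> \<in> carrier_mat (cdim X \<alpha>) (cdim X \<alpha>)" using carr[OF a \<rho>(1)] iso by simp
    note mi = minv[OF iso(2) Bc]
    have rt: "\<rho> \<noteq> \<tau>" using crit_not_matched[OF \<tau> upper] by blast
    have RHS: "msum (cdim X \<tau>) (cdim X \<alpha>) (\<lambda>\<beta>. Gamma X M \<tau> \<beta> * Gamma X M \<beta> \<alpha>) ?C = 0\<^sub>m (cdim X \<tau>) (cdim X \<alpha>)"
    proof (rule msum_zero)
      fix \<beta> assume b: "\<beta> \<in> ?C"
      have "Gamma X M \<beta> \<alpha> = 0\<^sub>m (cdim X \<beta>) (cdim X \<alpha>)"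
        using Gamma_same_deg_zero[of \<beta> \<alpha>] b crit_not_matched[OF _ upper] not_lower_upper[OF upper] by auto
      thus "Gamma X M \<tau> \<beta> * Gamma X M \<beta> \<alpha> = 0\<^sub>m (cdim X \<tau>) (cdim X \<alpha>)"
        by (simp add: right_mult_zero_mat[OF Gamma_carrier])
    qed
    have G\<alpha>: "Gamma X M \<tau> \<alpha> = msum (cdim X \<tau>) (cdim X \<alpha>) (\<lambda>\<delta>. Gamma X M \<tau> \<delta> * bd X \<delta> \<alpha>) (cells X - {\<rho>})"
      using Gamma_rec_down[OF a at not_lower_upper[OF upper]] matched_sets[OF upper] by simp
    have "Gamma X M \<tau> \<rho> = Gamma X M \<tau> \<alpha> * mstep X M \<rho> \<alpha> + 0\<^sub>m (cdim X \<tau>) (cdim X \<rho>)"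
      using Gamma_rec_lower[OF upper rt] msum_below_zero[OF \<tau> _ \<rho>(1)] \<rho> da by simp
    also have "\<dots> = - (Gamma X M \<tau> \<alpha> * minv (bd X \<rho> \<alpha>))"
      using mstep_up[OF upper] mi iso by simp
    finally have G\<rho>: "Gamma X M \<tau> \<rho> = - (Gamma X M \<tau> \<alpha> * minv (bd X \<rho> \<alpha>))" .
    have "Gamma X M \<tau> \<rho> * bd X \<rho> \<alpha> = - (Gamma X M \<tau> \<alpha> * minv (bd X \<rho> \<alpha>) * bd X \<rho> \<alpha>)"
      using G\<rho> mi Bc by simp
    also have "\<dots> = - (Gamma X M \<tau> \<alpha> * (minv (bd X \<rho> \<alpha>) * bd X \<rho> \<alpha>))"
      using mi Bc by (subst assoc_mult_mat[of _ "cdim X \<tau>" "cdim X \<alpha>"]) auto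
    also have "\<dots> = - Gamma X M \<tau> \<alpha>" using mi by simp
    finally have T: "Gamma X M \<tau> \<rho> * bd X \<rho> \<alpha> = - Gamma X M \<tau> \<alpha>" .
    have ci: "cells X = insert \<rho> (cells X - {\<rho>})" using \<rho> by blast
    have "msum (cdim X \<tau>) (cdim X \<alpha>) (\<lambda>\<delta>. Gamma X M \<tau> \<delta> * bd X \<delta> \<alpha>) (cells X)
       = Gamma X M \<tau> \<rho> * bd X \<rho> \<alpha> + msum (cdim X \<tau>) (cdim X \<alpha>) (\<lambda>\<delta>. Gamma X M \<tau> \<delta> * bd X \<delta> \<alpha>) (cells X - {\<rho>})"
      apply (subst ci)
      apply (rule msum_insert)
      using fin Bc iso by auto
    also have "\<dots> = - Gamma X M \<tau> \<alpha> + Gamma X M \<tau> \<alpha>" using T G\<alpha> by simp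
    also have "\<dots> = 0\<^sub>m (cdim X \<tau>) (cdim X \<alpha>)" by simp
    finally show ?thesis using RHS by simp
  next
    case lower
    have \<sigma>: "\<sigma> \<in> cells X" "deg X \<sigma> = deg X \<alpha> + 1" using M_deg[OF lower] by auto
    have iso: "cdim X \<sigma> = cdim X \<alpha>" "invertible_mat (bd X \<alpha> \<sigma>)" using M_iso[OF lower] by auto
    define B where "B = bd X \<alpha> \<sigma>"
    define N where "N = mstep X M \<alpha> \<sigma>"
    let ?k = "cdim X \<alpha>"
    have Bc: "B \<in> carrier_mat ?k ?k" using carr[OF \<sigma>(1) a] iso B_def by simp
    note mi = minv[OF iso(2)[folded B_def] Bc]
    have N: "N = - minv B" using mstep_up[OF lower] N_def B_def by simp
    have Nc: "N \<in> carrier_mat ?k ?k" using N mi by (simp add: uminus_carrier_mat)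
    have BN: "B * N = - 1\<^sub>m ?k" using N mi Bc by simp
    let ?A = "cells X - {\<alpha>}"
    have finA: "finite ?A" using fin by simp
    have S1: "Gamma X M \<beta> \<alpha> = Gamma X M \<beta> \<sigma> * N" if b: "\<beta> \<in> ?C" for \<beta>
    proof -
      have bc: "\<beta> \<in> crit X M" "deg X \<beta> = deg X \<alpha>" using b by auto
      have "\<alpha> \<noteq> \<beta>" using crit_not_matched[OF bc(1) lower] by blast
      hence "Gamma X M \<beta> \<alpha> = Gamma X M \<beta> \<sigma> * N + msum (cdim X \<beta>) (cdim X \<alpha>) (\<lambda>\<delta>. Gamma X M \<beta> \<delta> * bd X \<delta> \<alpha>) (cells X)"
        using Gamma_rec_lower[OF lower] N_def by blast
      also have "\<dots> = Gamma X M \<beta> \<sigma> * N + 0\<^sub>m (cdim X \<beta>) ?k"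
        using msum_below_zero[OF bc(1) bc(2) a] by simp
      also have "\<dots> = Gamma X M \<beta> \<sigma> * N" using Nc iso by simp
      finally show ?thesis .
    qed
    have S2: "Gamma X M \<beta> \<sigma> = msum (cdim X \<beta>) ?k (\<lambda>\<alpha>'. Gamma X M \<beta> \<alpha>' * bd X \<alpha>' \<sigma>) ?A" if b: "\<beta> \<in> ?C" for \<beta>
    proof -
      have "\<sigma> \<noteq> \<beta>" using crit_not_matched[OF _ lower] b by blast
      thus ?thesis using Gamma_rec_down[OF \<sigma>(1) _ not_lower_upper[OF lower]] matched_sets[OF lower] iso by simp
    qed
    define W where "W = (\<lambda>\<alpha>'. bd X \<alpha>' \<sigma> * N)"
    have bdc: "bd X \<alpha>' \<sigma> \<in> carrier_mat (cdim X \<alpha>') ?k" if "\<alpha>' \<in> cells X" for \<alpha>'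
      using carr[OF \<sigma>(1) that] iso by simp
    have Wc: "W \<alpha>' \<in> carrier_mat (cdim X \<alpha>') ?k" if "\<alpha>' \<in> cells X" for \<alpha>'
      using bdc[OF that] Nc W_def by simp
    have "msum (cdim X \<tau>) ?k (\<lambda>\<beta>. Gamma X M \<tau> \<beta> * Gamma X M \<beta> \<alpha>) ?C
        = msum (cdim X \<tau>) ?k (\<lambda>\<beta>. Gamma X M \<tau> \<beta> * (msum (cdim X \<beta>) ?k (\<lambda>\<alpha>'. Gamma X M \<beta> \<alpha>' * bd X \<alpha>' \<sigma>) ?A * N)) ?C"
      using S1 S2 by (intro msum_cong) simp
    also have "\<dots> = msum (cdim X \<tau>) ?k (\<lambda>\<beta>. msum (cdim X \<tau>) ?k (\<lambda>\<alpha>'. Gamma X M \<tau> \<beta> * (Gamma X M \<beta> \<alpha>' * W \<alpha>')) ?A) ?C"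
    proof (intro msum_cong)
      fix \<beta> assume b: "\<beta> \<in> ?C"
      have "msum (cdim X \<beta>) ?k (\<lambda>\<alpha>'. Gamma X M \<beta> \<alpha>' * bd X \<alpha>' \<sigma>) ?A * N
          = msum (cdim X \<beta>) ?k (\<lambda>\<alpha>'. Gamma X M \<beta> \<alpha>' * bd X \<alpha>' \<sigma> * N) ?A"
        using bdc Nc by (intro msum_mult_right[symmetric]) auto
      also have "\<dots> = msum (cdim X \<beta>) ?k (\<lambda>\<alpha>'. Gamma X M \<beta> \<alpha>' * W \<alpha>') ?A"
      proof (intro msum_cong)
        fix s assume "s \<in> ?A"
        hence "s \<in> cells X" by blast
        thus "Gamma X M \<beta> s * bd X s \<sigma> * N = Gamma X M \<beta> s * W s"
          using assoc_mult_mat[OF Gamma_carrier bdc[of s] Nc] W_def by simp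
      qed
      finally have e: "msum (cdim X \<beta>) ?k (\<lambda>\<alpha>'. Gamma X M \<beta> \<alpha>' * bd X \<alpha>' \<sigma>) ?A * N
          = msum (cdim X \<beta>) ?k (\<lambda>\<alpha>'. Gamma X M \<beta> \<alpha>' * W \<alpha>') ?A" .
      show "Gamma X M \<tau> \<beta> * (msum (cdim X \<beta>) ?k (\<lambda>\<alpha>'. Gamma X M \<beta> \<alpha>' * bd X \<alpha>' \<sigma>) ?A * N)
          = msum (cdim X \<tau>) ?k (\<lambda>\<alpha>'. Gamma X M \<tau> \<beta> * (Gamma X M \<beta> \<alpha>' * W \<alpha>')) ?A"
        unfolding e using Wc by (intro msum_mult_left[symmetric]) auto
    qed
    also have "\<dots> = msum (cdim X \<tau>) ?k (\<lambda>\<alpha>'. msum (cdim X \<tau>) ?k (\<lambda>\<beta>. Gamma X M \<tau> \<beta> * (Gamma X M \<beta> \<alpha>' * W \<alpha>')) ?C) ?A"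
      by (rule msum_swap)
    also have "\<dots> = msum (cdim X \<tau>) ?k (\<lambda>\<alpha>'. msum (cdim X \<tau>) (cdim X \<alpha>') (\<lambda>\<delta>. Gamma X M \<tau> \<delta> * bd X \<delta> \<alpha>') (cells X) * W \<alpha>') ?A"
    proof (intro msum_cong)
      fix \<alpha>' assume a': "\<alpha>' \<in> ?A"
      have a'c: "\<alpha>' \<in> cells X" "\<alpha>' \<noteq> \<alpha>" using a' by auto
      have "msum (cdim X \<tau>) ?k (\<lambda>\<beta>. Gamma X M \<tau> \<beta> * (Gamma X M \<beta> \<alpha>' * W \<alpha>')) ?C
          = msum (cdim X \<tau>) ?k (\<lambda>\<beta>. Gamma X M \<tau> \<beta> * Gamma X M \<beta> \<alpha>' * W \<alpha>') ?C"
        using assoc_mult_mat[OF Gamma_carrier Gamma_carrier Wc[OF a'c(1)], symmetric] by (intro msum_cong) simp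
      also have "\<dots> = msum (cdim X \<tau>) (cdim X \<alpha>') (\<lambda>\<beta>. Gamma X M \<tau> \<beta> * Gamma X M \<beta> \<alpha>') ?C * W \<alpha>'"
        using Wc[OF a'c(1)] by (intro msum_mult_right) auto
      also have "\<dots> = msum (cdim X \<tau>) (cdim X \<alpha>') (\<lambda>\<delta>. Gamma X M \<tau> \<delta> * bd X \<delta> \<alpha>') (cells X) * W \<alpha>'"
      proof (cases "bd X \<alpha>' \<sigma> = 0\<^sub>m (cdim X \<alpha>') (cdim X \<sigma>)")
        case True
        hence "W \<alpha>' = 0\<^sub>m (cdim X \<alpha>') ?k" using W_def Nc iso by simp
        thus ?thesis by simp
      next
        case False
        hence e: "(\<sigma>, \<alpha>') \<in> edges X" using \<sigma> a'c unfolding edges_def by auto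
        hence d': "deg X \<alpha>' = deg X \<alpha>" using edgesD \<sigma> by simp
        have "(\<sigma>, \<alpha>') \<notin> M" using M_uniq1[OF lower] a'c by blast
        hence "(\<sigma>, \<alpha>') \<in> r" using e unfolding redges_def by blast
        moreover have "(\<alpha>, \<sigma>) \<in> r" using lower unfolding redges_def by blast
        ultimately have "(\<alpha>, \<alpha>') \<in> r\<^sup>+" by auto
        hence "(\<alpha>', \<alpha>) \<in> (r\<inverse>)\<^sup>+" by (simp add: trancl_converse)
        from IH[rule_format, OF this a'c(1)] d' da
        show ?thesis by simp
      qed
      finally show "msum (cdim X \<tau>) ?k (\<lambda>\<beta>. Gamma X M \<tau> \<beta> * (Gamma X M \<beta> \<alpha>' * W \<alpha>')) ?C
          = msum (cdim X \<tau>) (cdim X \<alpha>') (\<lambda>\<delta>. Gamma X M \<tau> \<delta> * bd X \<delta> \<alpha>') (cells X) * W \<alpha>'" .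
    qed
    also have "\<dots> = msum (cdim X \<tau>) ?k (\<lambda>\<alpha>'. msum (cdim X \<tau>) ?k (\<lambda>\<delta>. Gamma X M \<tau> \<delta> * (bd X \<delta> \<alpha>' * W \<alpha>')) (cells X)) ?A"
    proof (intro msum_cong)
      fix \<alpha>' assume a': "\<alpha>' \<in> ?A"
      have a'c: "\<alpha>' \<in> cells X" using a' by auto
      have "msum (cdim X \<tau>) (cdim X \<alpha>') (\<lambda>\<delta>. Gamma X M \<tau> \<delta> * bd X \<delta> \<alpha>') (cells X) * W \<alpha>'
          = msum (cdim X \<tau>) ?k (\<lambda>\<delta>. Gamma X M \<tau> \<delta> * bd X \<delta> \<alpha>' * W \<alpha>') (cells X)"
        using Wc[OF a'c] carr a'c by (intro msum_mult_right[symmetric]) auto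
      also have "\<dots> = msum (cdim X \<tau>) ?k (\<lambda>\<delta>. Gamma X M \<tau> \<delta> * (bd X \<delta> \<alpha>' * W \<alpha>')) (cells X)"
      proof (intro msum_cong)
        fix s assume sc: "s \<in> cells X"
        show "Gamma X M \<tau> s * bd X s \<alpha>' * W \<alpha>' = Gamma X M \<tau> s * (bd X s \<alpha>' * W \<alpha>')"
          using assoc_mult_mat[OF Gamma_carrier carr[OF a'c sc] Wc[OF a'c]] .
      qed
      finally show "msum (cdim X \<tau>) (cdim X \<alpha>') (\<lambda>\<delta>. Gamma X M \<tau> \<delta> * bd X \<delta> \<alpha>') (cells X) * W \<alpha>'
          = msum (cdim X \<tau>) ?k (\<lambda>\<delta>. Gamma X M \<tau> \<delta> * (bd X \<delta> \<alpha>' * W \<alpha>')) (cells X)" .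
    qed
    also have "\<dots> = msum (cdim X \<tau>) ?k (\<lambda>\<delta>. msum (cdim X \<tau>) ?k (\<lambda>\<alpha>'. Gamma X M \<tau> \<delta> * (bd X \<delta> \<alpha>' * W \<alpha>')) ?A) (cells X)"
      by (rule msum_swap)
    also have "\<dots> = msum (cdim X \<tau>) ?k (\<lambda>\<delta>. Gamma X M \<tau> \<delta> * bd X \<delta> \<alpha>) (cells X)"
    proof (intro msum_cong)
      fix \<delta> assume d: "\<delta> \<in> cells X"
      have "msum (cdim X \<tau>) ?k (\<lambda>\<alpha>'. Gamma X M \<tau> \<delta> * (bd X \<delta> \<alpha>' * W \<alpha>')) ?A
          = Gamma X M \<tau> \<delta> * msum (cdim X \<delta>) ?k (\<lambda>\<alpha>'. bd X \<delta> \<alpha>' * W \<alpha>') ?A"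
      proof (rule msum_mult_left)
        show "Gamma X M \<tau> \<delta> \<in> carrier_mat (cdim X \<tau>) (cdim X \<delta>)" by simp
        fix s assume "s \<in> ?A"
        hence sc: "s \<in> cells X" by blast
        show "bd X \<delta> s * W s \<in> carrier_mat (cdim X \<delta>) ?k"
          by (rule mult_carrier_mat[OF carr[OF sc d] Wc[OF sc]])
      qed
      also have "msum (cdim X \<delta>) ?k (\<lambda>\<alpha>'. bd X \<delta> \<alpha>' * W \<alpha>') ?A
          = msum (cdim X \<delta>) ?k (\<lambda>\<alpha>'. bd X \<delta> \<alpha>' * bd X \<alpha>' \<sigma> * N) ?A"
      proof (intro msum_cong)
        fix s assume "s \<in> ?A"
        hence sc: "s \<in> cells X" by blast
        show "bd X \<delta> s * W s = bd X \<delta> s * bd X s \<sigma> * N"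
          using assoc_mult_mat[OF carr[OF sc d] bdc[OF sc] Nc] W_def by simp
      qed
      also have "\<dots> = msum (cdim X \<delta>) ?k (\<lambda>\<alpha>'. bd X \<delta> \<alpha>' * bd X \<alpha>' \<sigma>) ?A * N"
      proof (rule msum_mult_right)
        show "N \<in> carrier_mat ?k ?k" by (rule Nc)
        fix s assume "s \<in> ?A"
        hence sc: "s \<in> cells X" by blast
        show "bd X \<delta> s * bd X s \<sigma> \<in> carrier_mat (cdim X \<delta>) ?k"
          by (rule mult_carrier_mat[OF carr[OF sc d] bdc[OF sc]])
      qed
      also have "msum (cdim X \<delta>) ?k (\<lambda>\<alpha>'. bd X \<delta> \<alpha>' * bd X \<alpha>' \<sigma>) ?A = - (bd X \<delta> \<alpha> * B)"
      proof (rule add_eq_zero_neg)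
        show "bd X \<delta> \<alpha> * B \<in> carrier_mat (cdim X \<delta>) ?k" using carr[OF a d] Bc by simp
        show "msum (cdim X \<delta>) ?k (\<lambda>\<alpha>'. bd X \<delta> \<alpha>' * bd X \<alpha>' \<sigma>) ?A \<in> carrier_mat (cdim X \<delta>) ?k" by simp
        have ci: "cells X = insert \<alpha> ?A" using a by blast
        have "msum (cdim X \<delta>) ?k (\<lambda>\<alpha>'. bd X \<delta> \<alpha>' * bd X \<alpha>' \<sigma>) (cells X)
            = bd X \<delta> \<alpha> * B + msum (cdim X \<delta>) ?k (\<lambda>\<alpha>'. bd X \<delta> \<alpha>' * bd X \<alpha>' \<sigma>) ?A"
          apply (subst ci)
          apply (subst msum_insert)
          using fin carr[OF a d] Bc B_def by auto
        moreover have "msum (cdim X \<delta>) ?k (\<lambda>\<alpha>'. bd X \<delta> \<alpha>' * bd X \<alpha>' \<sigma>) (cells X) = 0\<^sub>m (cdim X \<delta>) ?k"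
          using dd[OF \<sigma>(1) d] iso by simp
        ultimately show "bd X \<delta> \<alpha> * B + msum (cdim X \<delta>) ?k (\<lambda>\<alpha>'. bd X \<delta> \<alpha>' * bd X \<alpha>' \<sigma>) ?A = 0\<^sub>m (cdim X \<delta>) ?k"
          by simp
      qed
      also have "- (bd X \<delta> \<alpha> * B) * N = bd X \<delta> \<alpha>"
      proof -
        have c1: "bd X \<delta> \<alpha> \<in> carrier_mat (cdim X \<delta>) ?k" using carr[OF a d] .
        have "- (bd X \<delta> \<alpha> * B) * N = - (bd X \<delta> \<alpha> * B * N)" using c1 Bc Nc by simp
        also have "bd X \<delta> \<alpha> * B * N = bd X \<delta> \<alpha> * (B * N)" using c1 Bc Nc by simp
        also have "\<dots> = - bd X \<delta> \<alpha>" using BN c1 by simp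
        finally show ?thesis by simp
      qed
      finally show "msum (cdim X \<tau>) ?k (\<lambda>\<alpha>'. Gamma X M \<tau> \<delta> * (bd X \<delta> \<alpha>' * W \<alpha>')) ?A = Gamma X M \<tau> \<delta> * bd X \<delta> \<alpha>" .
    qed
    finally show ?thesis by simp
  qed
qed

end

lemma morse_cx_simps[simp]:
  "cells (morse_cx X M) = crit X M" "deg (morse_cx X M) = deg X" "cdim (morse_cx X M) = cdim X"
  "bd (morse_cx X M) \<beta> \<alpha> = (if deg X \<alpha> = deg X \<beta> + 1 then Gamma X M \<beta> \<alpha> else 0\<^sub>m (cdim X \<beta>) (cdim X \<alpha>))"
  by (simp_all add: morse_cx_def)

context mmx
begin

lemma crit_cells: "x \<in> crit X M \<Longrightarrow> x \<in> cells X"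
  by (simp add: crit_def)

lemma Gamma_crit_bd:
  assumes a: "\<alpha> \<in> crit X M" and ab: "\<alpha> \<noteq> \<beta>"
  shows "Gamma X M \<beta> \<alpha> = msum (cdim X \<beta>) (cdim X \<alpha>) (\<lambda>\<delta>. Gamma X M \<beta> \<delta> * bd X \<delta> \<alpha>) (cells X)"
proof -
  have "{\<delta>. (\<alpha>, \<delta>) \<in> M} = {}" using a crit_iff by blast
  thus ?thesis using Gamma_rec_down[OF crit_cells[OF a] ab] a crit_iff by auto
qed

lemma morse_dd:
  assumes a: "\<alpha> \<in> crit X M" and g: "\<gamma> \<in> crit X M" and dg: "deg X \<alpha> = deg X \<gamma> + 2"
  shows "msum (cdim X \<gamma>) (cdim X \<alpha>) (\<lambda>\<beta>. Gamma X M \<gamma> \<beta> * Gamma X M \<beta> \<alpha>) {\<beta> \<in> crit X M. deg X \<beta> = deg X \<gamma> + 1}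
     = 0\<^sub>m (cdim X \<gamma>) (cdim X \<alpha>)"
proof -
  let ?C = "{\<beta> \<in> crit X M. deg X \<beta> = deg X \<gamma> + 1}"
  have ac: "\<alpha> \<in> cells X" using a crit_cells by blast
  have bdc: "bd X \<delta> \<alpha> \<in> carrier_mat (cdim X \<delta>) (cdim X \<alpha>)" if "\<delta> \<in> cells X" for \<delta>
    using carr[OF ac that] .
  have "msum (cdim X \<gamma>) (cdim X \<alpha>) (\<lambda>\<beta>. Gamma X M \<gamma> \<beta> * Gamma X M \<beta> \<alpha>) ?C
      = msum (cdim X \<gamma>) (cdim X \<alpha>) (\<lambda>\<beta>. Gamma X M \<gamma> \<beta> * msum (cdim X \<beta>) (cdim X \<alpha>) (\<lambda>\<delta>. Gamma X M \<beta> \<delta> * bd X \<delta> \<alpha>) (cells X)) ?C"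
  proof (intro msum_cong)
    fix \<beta> assume "\<beta> \<in> ?C"
    hence "\<alpha> \<noteq> \<beta>" using dg by auto
    thus "Gamma X M \<gamma> \<beta> * Gamma X M \<beta> \<alpha> = Gamma X M \<gamma> \<beta> * msum (cdim X \<beta>) (cdim X \<alpha>) (\<lambda>\<delta>. Gamma X M \<beta> \<delta> * bd X \<delta> \<alpha>) (cells X)"
      using Gamma_crit_bd[OF a] by simp
  qed
  also have "\<dots> = msum (cdim X \<gamma>) (cdim X \<alpha>) (\<lambda>\<beta>. msum (cdim X \<gamma>) (cdim X \<alpha>) (\<lambda>\<delta>. Gamma X M \<gamma> \<beta> * Gamma X M \<beta> \<delta> * bd X \<delta> \<alpha>) (cells X)) ?C"
  proof (intro msum_cong)
    fix \<beta> assume "\<beta> \<in> ?C"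
    have "Gamma X M \<gamma> \<beta> * msum (cdim X \<beta>) (cdim X \<alpha>) (\<lambda>\<delta>. Gamma X M \<beta> \<delta> * bd X \<delta> \<alpha>) (cells X)
       = msum (cdim X \<gamma>) (cdim X \<alpha>) (\<lambda>\<delta>. Gamma X M \<gamma> \<beta> * (Gamma X M \<beta> \<delta> * bd X \<delta> \<alpha>)) (cells X)"
      by (rule msum_mult_left[symmetric]) (auto intro!: Gm_carrier bdc)
    also have "\<dots> = msum (cdim X \<gamma>) (cdim X \<alpha>) (\<lambda>\<delta>. Gamma X M \<gamma> \<beta> * Gamma X M \<beta> \<delta> * bd X \<delta> \<alpha>) (cells X)"
    proof (intro msum_cong)
      fix \<delta> assume "\<delta> \<in> cells X"
      thus "Gamma X M \<gamma> \<beta> * (Gamma X M \<beta> \<delta> * bd X \<delta> \<alpha>) = Gamma X M \<gamma> \<beta> * Gamma X M \<beta> \<delta> * bd X \<delta> \<alpha>"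
        using assoc_mult_mat[OF Gamma_carrier Gamma_carrier bdc] by simp
    qed
    finally show "Gamma X M \<gamma> \<beta> * msum (cdim X \<beta>) (cdim X \<alpha>) (\<lambda>\<delta>. Gamma X M \<beta> \<delta> * bd X \<delta> \<alpha>) (cells X)
       = msum (cdim X \<gamma>) (cdim X \<alpha>) (\<lambda>\<delta>. Gamma X M \<gamma> \<beta> * Gamma X M \<beta> \<delta> * bd X \<delta> \<alpha>) (cells X)" .
  qed
  also have "\<dots> = msum (cdim X \<gamma>) (cdim X \<alpha>) (\<lambda>\<delta>. msum (cdim X \<gamma>) (cdim X \<alpha>) (\<lambda>\<beta>. Gamma X M \<gamma> \<beta> * Gamma X M \<beta> \<delta> * bd X \<delta> \<alpha>) ?C) (cells X)"
    by (rule msum_swap)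
  also have "\<dots> = msum (cdim X \<gamma>) (cdim X \<alpha>) (\<lambda>\<delta>. msum (cdim X \<gamma>) (cdim X \<delta>) (\<lambda>\<epsilon>. Gamma X M \<gamma> \<epsilon> * bd X \<epsilon> \<delta>) (cells X) * bd X \<delta> \<alpha>) (cells X)"
  proof (intro msum_cong)
    fix \<delta> assume d: "\<delta> \<in> cells X"
    have "msum (cdim X \<gamma>) (cdim X \<alpha>) (\<lambda>\<beta>. Gamma X M \<gamma> \<beta> * Gamma X M \<beta> \<delta> * bd X \<delta> \<alpha>) ?C
      = msum (cdim X \<gamma>) (cdim X \<delta>) (\<lambda>\<beta>. Gamma X M \<gamma> \<beta> * Gamma X M \<beta> \<delta>) ?C * bd X \<delta> \<alpha>"
      using bdc[OF d] by (intro msum_mult_right) auto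
    also have "\<dots> = msum (cdim X \<gamma>) (cdim X \<delta>) (\<lambda>\<epsilon>. Gamma X M \<gamma> \<epsilon> * bd X \<epsilon> \<delta>) (cells X) * bd X \<delta> \<alpha>"
    proof (cases "deg X \<alpha> = deg X \<delta> + 1")
      case True
      hence "deg X \<delta> = deg X \<gamma> + 1" using dg by simp
      hence "?C = {\<beta> \<in> crit X M. deg X \<beta> = deg X \<delta>}" by simp
      thus ?thesis using CM[OF g d] \<open>deg X \<delta> = deg X \<gamma> + 1\<close> by simp
    next
      case False
      hence "bd X \<delta> \<alpha> = 0\<^sub>m (cdim X \<delta>) (cdim X \<alpha>)" using degz ac d by simp
      thus ?thesis by simp
    qed
    finally show "msum (cdim X \<gamma>) (cdim X \<alpha>) (\<lambda>\<beta>. Gamma X M \<gamma> \<beta> * Gamma X M \<beta> \<delta> * bd X \<delta> \<alpha>) ?C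
      = msum (cdim X \<gamma>) (cdim X \<delta>) (\<lambda>\<epsilon>. Gamma X M \<gamma> \<epsilon> * bd X \<epsilon> \<delta>) (cells X) * bd X \<delta> \<alpha>" .
  qed
  also have "\<dots> = msum (cdim X \<gamma>) (cdim X \<alpha>) (\<lambda>\<delta>. msum (cdim X \<gamma>) (cdim X \<alpha>) (\<lambda>\<epsilon>. Gamma X M \<gamma> \<epsilon> * (bd X \<epsilon> \<delta> * bd X \<delta> \<alpha>)) (cells X)) (cells X)"
  proof (intro msum_cong)
    fix \<delta> assume d: "\<delta> \<in> cells X"
    have "msum (cdim X \<gamma>) (cdim X \<delta>) (\<lambda>\<epsilon>. Gamma X M \<gamma> \<epsilon> * bd X \<epsilon> \<delta>) (cells X) * bd X \<delta> \<alpha>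
       = msum (cdim X \<gamma>) (cdim X \<alpha>) (\<lambda>\<epsilon>. Gamma X M \<gamma> \<epsilon> * bd X \<epsilon> \<delta> * bd X \<delta> \<alpha>) (cells X)"
      by (rule msum_mult_right[symmetric]) (auto intro: bdc[OF d] mult_carrier_mat[OF Gamma_carrier carr[OF d]])
    also have "\<dots> = msum (cdim X \<gamma>) (cdim X \<alpha>) (\<lambda>\<epsilon>. Gamma X M \<gamma> \<epsilon> * (bd X \<epsilon> \<delta> * bd X \<delta> \<alpha>)) (cells X)"
    proof (intro msum_cong)
      fix \<epsilon> assume "\<epsilon> \<in> cells X"
      thus "Gamma X M \<gamma> \<epsilon> * bd X \<epsilon> \<delta> * bd X \<delta> \<alpha> = Gamma X M \<gamma> \<epsilon> * (bd X \<epsilon> \<delta> * bd X \<delta> \<alpha>)"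
        using assoc_mult_mat[OF Gamma_carrier carr[OF d] bdc[OF d]] by simp
    qed
    finally show "msum (cdim X \<gamma>) (cdim X \<delta>) (\<lambda>\<epsilon>. Gamma X M \<gamma> \<epsilon> * bd X \<epsilon> \<delta>) (cells X) * bd X \<delta> \<alpha>
       = msum (cdim X \<gamma>) (cdim X \<alpha>) (\<lambda>\<epsilon>. Gamma X M \<gamma> \<epsilon> * (bd X \<epsilon> \<delta> * bd X \<delta> \<alpha>)) (cells X)" .
  qed
  also have "\<dots> = msum (cdim X \<gamma>) (cdim X \<alpha>) (\<lambda>\<epsilon>. msum (cdim X \<gamma>) (cdim X \<alpha>) (\<lambda>\<delta>. Gamma X M \<gamma> \<epsilon> * (bd X \<epsilon> \<delta> * bd X \<delta> \<alpha>)) (cells X)) (cells X)"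
    by (rule msum_swap)
  also have "\<dots> = msum (cdim X \<gamma>) (cdim X \<alpha>) (\<lambda>\<epsilon>. Gamma X M \<gamma> \<epsilon> * msum (cdim X \<epsilon>) (cdim X \<alpha>) (\<lambda>\<delta>. bd X \<epsilon> \<delta> * bd X \<delta> \<alpha>) (cells X)) (cells X)"
  proof (intro msum_cong)
    fix \<epsilon> assume e: "\<epsilon> \<in> cells X"
    show "msum (cdim X \<gamma>) (cdim X \<alpha>) (\<lambda>\<delta>. Gamma X M \<gamma> \<epsilon> * (bd X \<epsilon> \<delta> * bd X \<delta> \<alpha>)) (cells X)
        = Gamma X M \<gamma> \<epsilon> * msum (cdim X \<epsilon>) (cdim X \<alpha>) (\<lambda>\<delta>. bd X \<epsilon> \<delta> * bd X \<delta> \<alpha>) (cells X)"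
    proof (rule msum_mult_left)
      show "Gamma X M \<gamma> \<epsilon> \<in> carrier_mat (cdim X \<gamma>) (cdim X \<epsilon>)" by simp
      fix \<delta> assume d: "\<delta> \<in> cells X"
      show "bd X \<epsilon> \<delta> * bd X \<delta> \<alpha> \<in> carrier_mat (cdim X \<epsilon>) (cdim X \<alpha>)"
        by (rule mult_carrier_mat[OF carr[OF d e] bdc[OF d]])
    qed
  qed
  also have "\<dots> = msum (cdim X \<gamma>) (cdim X \<alpha>) (\<lambda>\<epsilon>. 0\<^sub>m (cdim X \<gamma>) (cdim X \<alpha>)) (cells X)"
  proof (intro msum_cong)
    fix \<epsilon> assume e: "\<epsilon> \<in> cells X"
    show "Gamma X M \<gamma> \<epsilon> * msum (cdim X \<epsilon>) (cdim X \<alpha>) (\<lambda>\<delta>. bd X \<epsilon> \<delta> * bd X \<delta> \<alpha>) (cells X) = 0\<^sub>m (cdim X \<gamma>) (cdim X \<alpha>)"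
      using dd[OF ac e] by simp
  qed
  also have "\<dots> = 0\<^sub>m (cdim X \<gamma>) (cdim X \<alpha>)" by (rule msum_zero) simp
  finally show ?thesis .
qed

lemma morse_based: "based_cx (morse_cx X M)"
  unfolding based_cx_def morse_cx_simps
proof (intro conjI ballI impI)
  show "finite (crit X M)" using fin unfolding crit_def by simp
  fix \<alpha> \<beta> assume "\<alpha> \<in> crit X M" "\<beta> \<in> crit X M"
  show "(if deg X \<alpha> = deg X \<beta> + 1 then Gamma X M \<beta> \<alpha> else 0\<^sub>m (cdim X \<beta>) (cdim X \<alpha>)) \<in> carrier_mat (cdim X \<beta>) (cdim X \<alpha>)"
    by simp
next
  fix \<alpha> \<beta> assume "\<alpha> \<in> crit X M" "\<beta> \<in> crit X M" "deg X \<alpha> \<noteq> deg X \<beta> + 1"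
  thus "(if deg X \<alpha> = deg X \<beta> + 1 then Gamma X M \<beta> \<alpha> else 0\<^sub>m (cdim X \<beta>) (cdim X \<alpha>)) = 0\<^sub>m (cdim X \<beta>) (cdim X \<alpha>)"
    by simp
next
  fix \<alpha> \<gamma> assume a: "\<alpha> \<in> crit X M" and g: "\<gamma> \<in> crit X M"
  let ?f = "\<lambda>\<beta>. (if deg X \<beta> = deg X \<gamma> + 1 then Gamma X M \<gamma> \<beta> else 0\<^sub>m (cdim X \<gamma>) (cdim X \<beta>)) *
      (if deg X \<alpha> = deg X \<beta> + 1 then Gamma X M \<beta> \<alpha> else 0\<^sub>m (cdim X \<beta>) (cdim X \<alpha>))"
  have fin': "finite (crit X M)" using fin unfolding crit_def by simp
  show "msum (cdim X \<gamma>) (cdim X \<alpha>) ?f (crit X M) = 0\<^sub>m (cdim X \<gamma>) (cdim X \<alpha>)"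
  proof (cases "deg X \<alpha> = deg X \<gamma> + 2")
    case True
    have "msum (cdim X \<gamma>) (cdim X \<alpha>) ?f (crit X M) = msum (cdim X \<gamma>) (cdim X \<alpha>) ?f {\<beta> \<in> crit X M. deg X \<beta> = deg X \<gamma> + 1}"
      by (rule msum_subset_zero) (use fin' in auto)
    also have "\<dots> = msum (cdim X \<gamma>) (cdim X \<alpha>) (\<lambda>\<beta>. Gamma X M \<gamma> \<beta> * Gamma X M \<beta> \<alpha>) {\<beta> \<in> crit X M. deg X \<beta> = deg X \<gamma> + 1}"
      using True by (intro msum_cong) auto
    also have "\<dots> = 0\<^sub>m (cdim X \<gamma>) (cdim X \<alpha>)" using morse_dd[OF a g True] .
    finally show ?thesis .
  next
    case False
    show ?thesis
    proof (rule msum_zero)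
      fix \<beta> assume "\<beta> \<in> crit X M"
      show "?f \<beta> = 0\<^sub>m (cdim X \<gamma>) (cdim X \<alpha>)"
        using False by (cases "deg X \<beta> = deg X \<gamma> + 1") auto
    qed
  qed
qed

end

lemma mmx_morse: "mmx X M \<Longrightarrow> bcx (morse_cx X M)"
  using mmx.morse_based unfolding bcx_def by blast


section \<open>Chains: linear structure\<close>

definition cadd :: "('c \<Rightarrow> real vec) \<Rightarrow> ('c \<Rightarrow> real vec) \<Rightarrow> 'c \<Rightarrow> real vec" where
  "cadd x y = (\<lambda>a. x a + y a)"

definition csc :: "real \<Rightarrow> ('c \<Rightarrow> real vec) \<Rightarrow> 'c \<Rightarrow> real vec" where
  "csc c x = (\<lambda>a. c \<cdot>\<^sub>v x a)"

lemma Gamma_carrier'[simp]: "Gamma X M b a \<in> carrier_mat (cdim X b) (cdim X a)"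
  by (simp add: Gamma_def)

lemma smult_zero0[simp]: "c \<cdot>\<^sub>v (0\<^sub>v 0 :: real vec) = 0\<^sub>v 0"
  by (intro eq_vecI) auto

lemma add_zero0[simp]: "(0\<^sub>v 0 :: real vec) + 0\<^sub>v 0 = 0\<^sub>v 0"
  by (intro eq_vecI) auto

lemma smult_vNil[simp]: "c \<cdot>\<^sub>v (vNil :: real vec) = vNil"
  by (intro eq_vecI) auto

lemma add_vNil[simp]: "(vNil :: real vec) + vNil = vNil"
  by (intro eq_vecI) auto

lemma zero_mult_vec[simp]: "(v :: real vec) \<in> carrier_vec nc \<Longrightarrow> 0\<^sub>m nr nc *\<^sub>v v = 0\<^sub>v nr"
  by (intro eq_vecI) (auto simp: scalar_prod_def)

lemma chainsD: "x \<in> chains X n \<Longrightarrow> \<alpha> \<in> ncells X n \<Longrightarrow> x \<alpha> \<in> carrier_vec (cdim X \<alpha>)"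
  unfolding chains_def by (metis (mono_tags, lifting) mem_Collect_eq)

lemma chainsD0: "x \<in> chains X n \<Longrightarrow> \<alpha> \<notin> ncells X n \<Longrightarrow> x \<alpha> = 0\<^sub>v 0"
  unfolding chains_def by (metis (mono_tags, lifting) mem_Collect_eq)

lemma chainsI: "(\<And>\<alpha>. \<alpha> \<in> ncells X n \<Longrightarrow> x \<alpha> \<in> carrier_vec (cdim X \<alpha>)) \<Longrightarrow>
   (\<And>\<alpha>. \<alpha> \<notin> ncells X n \<Longrightarrow> x \<alpha> = 0\<^sub>v 0) \<Longrightarrow> x \<in> chains X n"
  unfolding chains_def by auto

lemma chain_eqI:
  assumes x: "x \<in> chains X n" and y: "y \<in> chains X n" and e: "\<And>\<alpha>. \<alpha> \<in> ncells X n \<Longrightarrow> x \<alpha> = y \<alpha>"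
  shows "x = y"
proof (rule ext)
  fix a show "x a = y a"
  proof (cases "a \<in> ncells X n")
    case True thus ?thesis using e by blast
  next
    case False thus ?thesis using chainsD0[OF x False] chainsD0[OF y False] by simp
  qed
qed

lemma chain_zero_chains[simp]: "chain_zero X n \<in> chains X n"
  unfolding chain_zero_def by (rule chainsI) auto

lemma cadd_chains[simp]:
  assumes x: "x \<in> chains X n" and y: "y \<in> chains X n" shows "cadd x y \<in> chains X n"
  unfolding cadd_def
proof (rule chainsI)
  fix a assume a: "a \<in> ncells X n"
  show "x a + y a \<in> carrier_vec (cdim X a)" using chainsD[OF x a] chainsD[OF y a] by simp
next
  fix a assume a: "a \<notin> ncells X n"
  show "x a + y a = 0\<^sub>v 0" using chainsD0[OF x a] chainsD0[OF y a] by simp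
qed

lemma csc_chains[simp]:
  assumes x: "x \<in> chains X n" shows "csc c x \<in> chains X n"
  unfolding csc_def
proof (rule chainsI)
  fix a assume a: "a \<in> ncells X n"
  show "c \<cdot>\<^sub>v x a \<in> carrier_vec (cdim X a)" using chainsD[OF x a] by simp
next
  fix a assume a: "a \<notin> ncells X n"
  show "c \<cdot>\<^sub>v x a = 0\<^sub>v 0" using chainsD0[OF x a] by simp
qed

lemma chain_zero_in: "\<alpha> \<in> ncells X n \<Longrightarrow> chain_zero X n \<alpha> = 0\<^sub>v (cdim X \<alpha>)"
  by (simp add: chain_zero_def)

lemma ncells_fin: "finite (cells X) \<Longrightarrow> finite (ncells X n)"
  unfolding ncells_def by simp

lemma cip_add_left: "x \<in> chains X n \<Longrightarrow> y \<in> chains X n \<Longrightarrow> z \<in> chains X n \<Longrightarrow>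
   cip X n (cadd x y) z = cip X n x z + cip X n y z"
  unfolding cip_def cadd_def sum.distrib[symmetric]
  by (intro sum.cong refl add_scalar_prod_distrib) (auto dest: chainsD)

lemma cip_smult_left: "x \<in> chains X n \<Longrightarrow> y \<in> chains X n \<Longrightarrow> cip X n (csc c x) y = c * cip X n x y"
  unfolding cip_def csc_def sum_distrib_left
  by (intro sum.cong refl smult_scalar_prod_distrib) (auto dest: chainsD)

lemma cip_comm: "x \<in> chains X n \<Longrightarrow> y \<in> chains X n \<Longrightarrow> cip X n x y = cip X n y x"
  unfolding cip_def by (intro sum.cong refl comm_scalar_prod) (auto dest: chainsD)

lemma cip_add_right: "x \<in> chains X n \<Longrightarrow> y \<in> chains X n \<Longrightarrow> z \<in> chains X n \<Longrightarrow>
   cip X n z (cadd x y) = cip X n z x + cip X n z y"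
  using cip_comm cip_add_left by (metis cadd_chains)

lemma cip_smult_right: "x \<in> chains X n \<Longrightarrow> y \<in> chains X n \<Longrightarrow> cip X n y (csc c x) = c * cip X n y x"
  using cip_comm cip_smult_left by (metis csc_chains)

lemma cip_zero_left[simp]: "y \<in> chains X n \<Longrightarrow> cip X n (chain_zero X n) y = 0"
  unfolding cip_def chain_zero_def by (intro sum.neutral) (auto dest: chainsD)

lemma cip_zero_right[simp]: "y \<in> chains X n \<Longrightarrow> cip X n y (chain_zero X n) = 0"
  using cip_comm cip_zero_left chain_zero_chains by metis

lemma self_sprod_nonneg: "(v :: real vec) \<bullet> v \<ge> 0"
  unfolding scalar_prod_def by (intro sum_nonneg) simp

lemma self_sprod_zero: "(v :: real vec) \<in> carrier_vec d \<Longrightarrow> v \<bullet> v = 0 \<Longrightarrow> v = 0\<^sub>v d"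
proof -
  assume v: "v \<in> carrier_vec d" and z: "v \<bullet> v = 0"
  have "\<forall>i\<in>{0..<dim_vec v}. v $ i * v $ i = 0"
    using z unfolding scalar_prod_def by (subst sum_nonneg_eq_0_iff[symmetric]) auto
  thus ?thesis using v by (intro eq_vecI) auto
qed

lemma cip_self_nonneg: "cip X n x x \<ge> 0"
  unfolding cip_def by (intro sum_nonneg self_sprod_nonneg)

lemma cip_self_zero:
  assumes "finite (cells X)" "x \<in> chains X n" "cip X n x x = 0"
  shows "x = chain_zero X n"
proof (rule chain_eqI[OF assms(2) chain_zero_chains])
  fix \<alpha> assume a: "\<alpha> \<in> ncells X n"
  have "\<forall>\<alpha>\<in>ncells X n. x \<alpha> \<bullet> x \<alpha> = 0"
    using assms ncells_fin unfolding cip_def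
    by (subst sum_nonneg_eq_0_iff[symmetric]) (auto intro: self_sprod_nonneg)
  hence "x \<alpha> = 0\<^sub>v (cdim X \<alpha>)" using a chainsD[OF assms(2) a] self_sprod_zero by blast
  thus "x \<alpha> = chain_zero X n \<alpha>" using a by (simp add: chain_zero_def)
qed

section \<open>Psi and the boundary on chains\<close>

lemma ncells_morse[simp]: "ncells (morse_cx X M) n = {\<beta> \<in> crit X M. deg X \<beta> = n}"
  by (simp add: ncells_def)

lemma psi_chains[simp]: "psi X M n x \<in> chains (morse_cx X M) n"
  unfolding psi_def by (rule chainsI) auto

lemma psi_add:
  assumes x: "x \<in> chains X n" and y: "y \<in> chains X n"
  shows "psi X M n (cadd x y) = cadd (psi X M n x) (psi X M n y)"
proof (rule ext)
  fix b
  show "psi X M n (cadd x y) b = cadd (psi X M n x) (psi X M n y) b"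
  proof (cases "b \<in> crit X M \<and> deg X b = n")
    case True
    have "vsum (cdim X b) (\<lambda>a. Gamma X M b a *\<^sub>v (x a + y a)) (ncells X n)
       = vsum (cdim X b) (\<lambda>a. Gamma X M b a *\<^sub>v x a + Gamma X M b a *\<^sub>v y a) (ncells X n)"
    proof (intro vsum_cong)
      fix a assume a: "a \<in> ncells X n"
      show "Gamma X M b a *\<^sub>v (x a + y a) = Gamma X M b a *\<^sub>v x a + Gamma X M b a *\<^sub>v y a"
        using mult_add_distrib_mat_vec[OF Gamma_carrier' chainsD[OF x a] chainsD[OF y a]] .
    qed
    also have "\<dots> = vsum (cdim X b) (\<lambda>a. Gamma X M b a *\<^sub>v x a) (ncells X n) + vsum (cdim X b) (\<lambda>a. Gamma X M b a *\<^sub>v y a) (ncells X n)"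
    proof (intro vsum_add)
      fix a assume a: "a \<in> ncells X n"
      show "Gamma X M b a *\<^sub>v x a \<in> carrier_vec (cdim X b)" using mult_mat_vec_carrier[OF Gamma_carrier' chainsD[OF x a]] .
      show "Gamma X M b a *\<^sub>v y a \<in> carrier_vec (cdim X b)" using mult_mat_vec_carrier[OF Gamma_carrier' chainsD[OF y a]] .
    qed
    finally show ?thesis using True by (simp add: psi_def cadd_def)
  next
    case False
    thus ?thesis by (auto simp: psi_def cadd_def)
  qed
qed

lemma psi_smult:
  assumes x: "x \<in> chains X n"
  shows "psi X M n (csc c x) = csc c (psi X M n x)"
proof (rule ext)
  fix b
  show "psi X M n (csc c x) b = csc c (psi X M n x) b"
  proof (cases "b \<in> crit X M \<and> deg X b = n")
    case True
    have "vsum (cdim X b) (\<lambda>a. Gamma X M b a *\<^sub>v (c \<cdot>\<^sub>v x a)) (ncells X n)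
       = vsum (cdim X b) (\<lambda>a. c \<cdot>\<^sub>v (Gamma X M b a *\<^sub>v x a)) (ncells X n)"
    proof (intro vsum_cong)
      fix a assume a: "a \<in> ncells X n"
      show "Gamma X M b a *\<^sub>v (c \<cdot>\<^sub>v x a) = c \<cdot>\<^sub>v (Gamma X M b a *\<^sub>v x a)"
        using mult_mat_vec[OF Gamma_carrier' chainsD[OF x a]] .
    qed
    also have "\<dots> = c \<cdot>\<^sub>v vsum (cdim X b) (\<lambda>a. Gamma X M b a *\<^sub>v x a) (ncells X n)"
    proof (intro vsum_smult)
      fix a assume a: "a \<in> ncells X n"
      show "Gamma X M b a *\<^sub>v x a \<in> carrier_vec (cdim X b)" using mult_mat_vec_carrier[OF Gamma_carrier' chainsD[OF x a]] .
    qed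
    finally show ?thesis using True by (simp add: psi_def csc_def)
  next
    case False
    thus ?thesis by (auto simp: psi_def csc_def)
  qed
qed

lemma psi_zero: "psi X M n (chain_zero X n) = chain_zero (morse_cx X M) n"
  unfolding psi_def chain_zero_def
  by (rule ext) (auto intro!: vsum_zero mult_zero_vec[OF Gamma_carrier'])

lemma bdry_chains[simp]: "bdry X n x \<in> chains X (n - 1)"
  unfolding bdry_def by (rule chainsI) auto

context bcx
begin

lemma bdry_add:
  assumes x: "x \<in> chains X n" and y: "y \<in> chains X n"
  shows "bdry X n (cadd x y) = cadd (bdry X n x) (bdry X n y)"
proof (rule ext)
  fix b
  show "bdry X n (cadd x y) b = cadd (bdry X n x) (bdry X n y) b"
  proof (cases "b \<in> ncells X (n - 1)")
    case True
    hence bc: "b \<in> cells X" by (simp add: ncells_def)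
    have "vsum (cdim X b) (\<lambda>a. bd X b a *\<^sub>v cadd x y a) (ncells X n)
       = vsum (cdim X b) (\<lambda>a. bd X b a *\<^sub>v x a + bd X b a *\<^sub>v y a) (ncells X n)"
    proof (intro vsum_cong)
      fix a assume a: "a \<in> ncells X n"
      hence ac: "a \<in> cells X" by (simp add: ncells_def)
      show "bd X b a *\<^sub>v cadd x y a = bd X b a *\<^sub>v x a + bd X b a *\<^sub>v y a"
        unfolding cadd_def using mult_add_distrib_mat_vec[OF carr[OF ac bc] chainsD[OF x a] chainsD[OF y a]] .
    qed
    also have "\<dots> = vsum (cdim X b) (\<lambda>a. bd X b a *\<^sub>v x a) (ncells X n) + vsum (cdim X b) (\<lambda>a. bd X b a *\<^sub>v y a) (ncells X n)"
    proof (intro vsum_add)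
      fix a assume a: "a \<in> ncells X n"
      hence ac: "a \<in> cells X" by (simp add: ncells_def)
      show "bd X b a *\<^sub>v x a \<in> carrier_vec (cdim X b)" using mult_mat_vec_carrier[OF carr[OF ac bc] chainsD[OF x a]] .
      show "bd X b a *\<^sub>v y a \<in> carrier_vec (cdim X b)" using mult_mat_vec_carrier[OF carr[OF ac bc] chainsD[OF y a]] .
    qed
    finally show ?thesis using True by (simp add: bdry_def cadd_def)
  next
    case False
    thus ?thesis by (simp add: bdry_def cadd_def)
  qed
qed

lemma bdry_smult:
  assumes x: "x \<in> chains X n"
  shows "bdry X n (csc c x) = csc c (bdry X n x)"
proof (rule ext)
  fix b
  show "bdry X n (csc c x) b = csc c (bdry X n x) b"
  proof (cases "b \<in> ncells X (n - 1)")
    case True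
    hence bc: "b \<in> cells X" by (simp add: ncells_def)
    have "vsum (cdim X b) (\<lambda>a. bd X b a *\<^sub>v csc c x a) (ncells X n)
       = vsum (cdim X b) (\<lambda>a. c \<cdot>\<^sub>v (bd X b a *\<^sub>v x a)) (ncells X n)"
    proof (intro vsum_cong)
      fix a assume a: "a \<in> ncells X n"
      hence ac: "a \<in> cells X" by (simp add: ncells_def)
      show "bd X b a *\<^sub>v csc c x a = c \<cdot>\<^sub>v (bd X b a *\<^sub>v x a)"
        unfolding csc_def using mult_mat_vec[OF carr[OF ac bc] chainsD[OF x a]] .
    qed
    also have "\<dots> = c \<cdot>\<^sub>v vsum (cdim X b) (\<lambda>a. bd X b a *\<^sub>v x a) (ncells X n)"
    proof (intro vsum_smult)
      fix a assume a: "a \<in> ncells X n"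
      hence ac: "a \<in> cells X" by (simp add: ncells_def)
      show "bd X b a *\<^sub>v x a \<in> carrier_vec (cdim X b)" using mult_mat_vec_carrier[OF carr[OF ac bc] chainsD[OF x a]] .
    qed
    finally show ?thesis using True by (simp add: bdry_def csc_def)
  next
    case False
    thus ?thesis by (simp add: bdry_def csc_def)
  qed
qed

lemma bdry_zero: "bdry X n (chain_zero X n) = chain_zero X (n - 1)"
  unfolding bdry_def chain_zero_def
  by (rule ext) (auto simp: ncells_def carr intro!: vsum_zero)

lemma bdry_0:
  assumes x: "x \<in> chains X 0" shows "bdry X 0 x = chain_zero X 0"
proof (rule ext)
  fix b show "bdry X 0 x b = chain_zero X 0 b"
  proof (cases "b \<in> ncells X 0")
    case True
    have "vsum (cdim X b) (\<lambda>a. bd X b a *\<^sub>v x a) (ncells X 0) = 0\<^sub>v (cdim X b)"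
    proof (rule vsum_zero)
      fix a assume a: "a \<in> ncells X 0"
      have "bd X b a = 0\<^sub>m (cdim X b) (cdim X a)" using a True degz by (simp add: ncells_def)
      thus "bd X b a *\<^sub>v x a = 0\<^sub>v (cdim X b)" using chainsD[OF x a] by simp
    qed
    thus ?thesis using True by (simp add: bdry_def chain_zero_def)
  next
    case False thus ?thesis by (simp add: bdry_def chain_zero_def)
  qed
qed

end

lemma vsum_double:
  assumes A: "\<And>\<delta>. \<delta> \<in> T \<Longrightarrow> A \<delta> \<in> carrier_mat d (k \<delta>)"
    and B: "\<And>\<delta> \<alpha>. \<delta> \<in> T \<Longrightarrow> \<alpha> \<in> S \<Longrightarrow> B \<delta> \<alpha> \<in> carrier_mat (k \<delta>) (c \<alpha>)"
    and z: "\<And>\<alpha>. \<alpha> \<in> S \<Longrightarrow> z \<alpha> \<in> carrier_vec (c \<alpha>)"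
  shows "vsum d (\<lambda>\<delta>. A \<delta> *\<^sub>v vsum (k \<delta>) (\<lambda>\<alpha>. B \<delta> \<alpha> *\<^sub>v z \<alpha>) S) T
       = vsum d (\<lambda>\<alpha>. msum d (c \<alpha>) (\<lambda>\<delta>. A \<delta> * B \<delta> \<alpha>) T *\<^sub>v z \<alpha>) S"
proof -
  have "vsum d (\<lambda>\<delta>. A \<delta> *\<^sub>v vsum (k \<delta>) (\<lambda>\<alpha>. B \<delta> \<alpha> *\<^sub>v z \<alpha>) S) T
      = vsum d (\<lambda>\<delta>. vsum d (\<lambda>\<alpha>. (A \<delta> * B \<delta> \<alpha>) *\<^sub>v z \<alpha>) S) T"
  proof (intro vsum_cong)
    fix \<delta> assume d: "\<delta> \<in> T"
    have "A \<delta> *\<^sub>v vsum (k \<delta>) (\<lambda>\<alpha>. B \<delta> \<alpha> *\<^sub>v z \<alpha>) S = vsum d (\<lambda>\<alpha>. A \<delta> *\<^sub>v (B \<delta> \<alpha> *\<^sub>v z \<alpha>)) S"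
      using A[OF d] B[OF d] z by (intro mult_mat_vsum) (auto intro!: mult_mat_vec_carrier)
    also have "\<dots> = vsum d (\<lambda>\<alpha>. (A \<delta> * B \<delta> \<alpha>) *\<^sub>v z \<alpha>) S"
      using A[OF d] B[OF d] z by (intro vsum_cong) (metis assoc_mult_mat_vec)
    finally show "A \<delta> *\<^sub>v vsum (k \<delta>) (\<lambda>\<alpha>. B \<delta> \<alpha> *\<^sub>v z \<alpha>) S = vsum d (\<lambda>\<alpha>. (A \<delta> * B \<delta> \<alpha>) *\<^sub>v z \<alpha>) S" .
  qed
  also have "\<dots> = vsum d (\<lambda>\<alpha>. vsum d (\<lambda>\<delta>. (A \<delta> * B \<delta> \<alpha>) *\<^sub>v z \<alpha>) T) S"
    by (rule vsum_swap)
  also have "\<dots> = vsum d (\<lambda>\<alpha>. msum d (c \<alpha>) (\<lambda>\<delta>. A \<delta> * B \<delta> \<alpha>) T *\<^sub>v z \<alpha>) S"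
  proof (intro vsum_cong msum_mult_vec[symmetric])
    fix \<alpha> \<delta> assume a: "\<alpha> \<in> S" and d: "\<delta> \<in> T"
    show "A \<delta> * B \<delta> \<alpha> \<in> carrier_mat d (c \<alpha>)" using mult_carrier_mat[OF A[OF d] B[OF d a]] .
  next
    fix \<alpha> assume "\<alpha> \<in> S" thus "z \<alpha> \<in> carrier_vec (c \<alpha>)" by (rule z)
  qed
  finally show ?thesis .
qed

context mmx
begin

lemma psi_bdry:
  assumes z: "z \<in> chains X n"
  shows "psi X M (n - 1) (bdry X n z) = bdry (morse_cx X M) n (psi X M n z)"
proof (rule ext)
  fix \<beta>
  show "psi X M (n - 1) (bdry X n z) \<beta> = bdry (morse_cx X M) n (psi X M n z) \<beta>"
  proof (cases "\<beta> \<in> crit X M \<and> deg X \<beta> = n - 1")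
    case False
    thus ?thesis unfolding psi_def bdry_def by auto
  next
    case True
    have bc: "\<beta> \<in> cells X" using True crit_cells by blast
    let ?N1 = "ncells X (n - 1)" and ?N = "ncells X n" and ?Cn = "{\<beta>' \<in> crit X M. deg X \<beta>' = n}"
    have N1c: "\<And>\<delta>. \<delta> \<in> ?N1 \<Longrightarrow> \<delta> \<in> cells X" and Nc: "\<And>\<alpha>. \<alpha> \<in> ?N \<Longrightarrow> \<alpha> \<in> cells X"
      by (auto simp: ncells_def)
    have "psi X M (n - 1) (bdry X n z) \<beta> = vsum (cdim X \<beta>) (\<lambda>\<delta>. Gamma X M \<beta> \<delta> *\<^sub>v bdry X n z \<delta>) ?N1"
      using True by (simp add: psi_def)
    also have "\<dots> = vsum (cdim X \<beta>) (\<lambda>\<delta>. Gamma X M \<beta> \<delta> *\<^sub>v vsum (cdim X \<delta>) (\<lambda>\<alpha>. bd X \<delta> \<alpha> *\<^sub>v z \<alpha>) ?N) ?N1"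
      by (intro vsum_cong) (simp add: bdry_def)
    also have "\<dots> = vsum (cdim X \<beta>) (\<lambda>\<alpha>. msum (cdim X \<beta>) (cdim X \<alpha>) (\<lambda>\<delta>. Gamma X M \<beta> \<delta> * bd X \<delta> \<alpha>) ?N1 *\<^sub>v z \<alpha>) ?N"
      using carr N1c Nc chainsD[OF z] by (intro vsum_double) auto
    finally have L: "psi X M (n - 1) (bdry X n z) \<beta> = \<dots>" .
    have "bdry (morse_cx X M) n (psi X M n z) \<beta> = vsum (cdim X \<beta>) (\<lambda>\<beta>'. bd (morse_cx X M) \<beta> \<beta>' *\<^sub>v psi X M n z \<beta>') ?Cn"
      using True by (simp add: bdry_def)
    also have "\<dots> = vsum (cdim X \<beta>) (\<lambda>\<beta>'. bd (morse_cx X M) \<beta> \<beta>' *\<^sub>v vsum (cdim X \<beta>') (\<lambda>\<alpha>. Gamma X M \<beta>' \<alpha> *\<^sub>v z \<alpha>) ?N) ?Cn"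
      by (intro vsum_cong) (simp add: psi_def)
    also have "\<dots> = vsum (cdim X \<beta>) (\<lambda>\<alpha>. msum (cdim X \<beta>) (cdim X \<alpha>) (\<lambda>\<beta>'. bd (morse_cx X M) \<beta> \<beta>' * Gamma X M \<beta>' \<alpha>) ?Cn *\<^sub>v z \<alpha>) ?N"
      using chainsD[OF z] by (intro vsum_double) auto
    finally have R: "bdry (morse_cx X M) n (psi X M n z) \<beta> = \<dots>" .
    have "msum (cdim X \<beta>) (cdim X \<alpha>) (\<lambda>\<delta>. Gamma X M \<beta> \<delta> * bd X \<delta> \<alpha>) ?N1 =
          msum (cdim X \<beta>) (cdim X \<alpha>) (\<lambda>\<beta>'. bd (morse_cx X M) \<beta> \<beta>' * Gamma X M \<beta>' \<alpha>) ?Cn"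
      if a: "\<alpha> \<in> ?N" for \<alpha>
    proof (cases n)
      case 0
      have "msum (cdim X \<beta>) (cdim X \<alpha>) (\<lambda>\<delta>. Gamma X M \<beta> \<delta> * bd X \<delta> \<alpha>) ?N1 = 0\<^sub>m (cdim X \<beta>) (cdim X \<alpha>)"
      proof (rule msum_zero)
        fix \<delta> assume "\<delta> \<in> ?N1"
        hence "bd X \<delta> \<alpha> = 0\<^sub>m (cdim X \<delta>) (cdim X \<alpha>)" using a 0 degz by (auto simp: ncells_def)
        thus "Gamma X M \<beta> \<delta> * bd X \<delta> \<alpha> = 0\<^sub>m (cdim X \<beta>) (cdim X \<alpha>)" by simp
      qed
      moreover have "msum (cdim X \<beta>) (cdim X \<alpha>) (\<lambda>\<beta>'. bd (morse_cx X M) \<beta> \<beta>' * Gamma X M \<beta>' \<alpha>) ?Cn = 0\<^sub>m (cdim X \<beta>) (cdim X \<alpha>)"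
        using True 0 by (intro msum_zero) simp
      ultimately show ?thesis by simp
    next
      case (Suc m)
      have dA: "deg X \<alpha> = n" "\<alpha> \<in> cells X" using a by (auto simp: ncells_def)
      have "msum (cdim X \<beta>) (cdim X \<alpha>) (\<lambda>\<beta>'. bd (morse_cx X M) \<beta> \<beta>' * Gamma X M \<beta>' \<alpha>) ?Cn
         = msum (cdim X \<beta>) (cdim X \<alpha>) (\<lambda>\<beta>'. Gamma X M \<beta> \<beta>' * Gamma X M \<beta>' \<alpha>) ?Cn"
        using True Suc by (intro msum_cong) auto
      also have "\<dots> = msum (cdim X \<beta>) (cdim X \<alpha>) (\<lambda>\<delta>. Gamma X M \<beta> \<delta> * bd X \<delta> \<alpha>) (cells X)"
        using CM[of \<beta> \<alpha>] True Suc dA by auto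
      also have "\<dots> = msum (cdim X \<beta>) (cdim X \<alpha>) (\<lambda>\<delta>. Gamma X M \<beta> \<delta> * bd X \<delta> \<alpha>) ?N1"
      proof (rule msum_subset_zero)
        show "finite (cells X)" by (rule fin)
        show "?N1 \<subseteq> cells X" by (auto simp: ncells_def)
        fix \<delta> assume "\<delta> \<in> cells X - ?N1"
        hence "bd X \<delta> \<alpha> = 0\<^sub>m (cdim X \<delta>) (cdim X \<alpha>)" using a Suc degz by (auto simp: ncells_def)
        thus "Gamma X M \<beta> \<delta> * bd X \<delta> \<alpha> = 0\<^sub>m (cdim X \<beta>) (cdim X \<alpha>)" by simp
      qed
      finally show ?thesis by simp
    qed
    thus ?thesis using L R by (simp cong: vsum_cong)
  qed
qed

end


section \<open>Inclusion of critical chains; sequential composites\<close>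

definition iota :: "'c bcx \<Rightarrow> ('c \<times> 'c) set \<Rightarrow> nat \<Rightarrow> ('c \<Rightarrow> real vec) \<Rightarrow> 'c \<Rightarrow> real vec" where
  "iota X M n w = (\<lambda>\<alpha>. if \<alpha> \<in> ncells X n \<and> \<alpha> \<notin> crit X M then 0\<^sub>v (cdim X \<alpha>) else w \<alpha>)"

fun iota_seq :: "'c bcx \<Rightarrow> ('c \<times> 'c) set list \<Rightarrow> nat \<Rightarrow> ('c \<Rightarrow> real vec) \<Rightarrow> 'c \<Rightarrow> real vec" where
  "iota_seq X [] n w = w"
| "iota_seq X (M # Ms) n w = iota X M n (iota_seq (morse_cx X M) Ms n w)"

lemma ncells_morse_sub: "\<alpha> \<in> ncells (morse_cx X M) n \<Longrightarrow> \<alpha> \<in> ncells X n"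
  by (auto simp: ncells_def crit_def)

lemma iota_chains[simp]:
  assumes w: "w \<in> chains (morse_cx X M) n" shows "iota X M n w \<in> chains X n"
  unfolding iota_def
proof (rule chainsI)
  fix a assume a: "a \<in> ncells X n"
  show "(if a \<in> ncells X n \<and> a \<notin> crit X M then 0\<^sub>v (cdim X a) else w a) \<in> carrier_vec (cdim X a)"
  proof (cases "a \<in> crit X M")
    case True
    hence "a \<in> ncells (morse_cx X M) n" using a by (simp add: ncells_def)
    thus ?thesis using chainsD[OF w] True by simp
  qed (use a in simp)
next
  fix a assume a: "a \<notin> ncells X n"
  hence "a \<notin> ncells (morse_cx X M) n" using ncells_morse_sub[of a X M n] by blast
  thus "(if a \<in> ncells X n \<and> a \<notin> crit X M then 0\<^sub>v (cdim X a) else w a) = 0\<^sub>v 0"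
    using chainsD0[OF w] a by simp
qed

lemma smult_zero_vec_gen[simp]: "c \<cdot>\<^sub>v (0\<^sub>v d :: real vec) = 0\<^sub>v d"
  by (intro eq_vecI) auto

lemma iota_add: "iota X M n (cadd x y) = cadd (iota X M n x) (iota X M n y)"
  unfolding iota_def cadd_def by (rule ext) simp

lemma iota_smult: "iota X M n (csc c x) = csc c (iota X M n x)"
  unfolding iota_def csc_def by (rule ext) simp

lemma iota_zero: "iota X M n (chain_zero (morse_cx X M) n) = chain_zero X n"
  unfolding iota_def chain_zero_def by (rule ext) (auto simp: ncells_def crit_def)

lemma iota_seq_chains[simp]: "w \<in> chains (morse_seq X Ms) n \<Longrightarrow> iota_seq X Ms n w \<in> chains X n"
  by (induction Ms arbitrary: X) auto

lemma iota_seq_add: "iota_seq X Ms n (cadd x y) = cadd (iota_seq X Ms n x) (iota_seq X Ms n y)"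
  by (induction Ms arbitrary: X) (auto simp: iota_add)

lemma iota_seq_smult: "iota_seq X Ms n (csc c x) = csc c (iota_seq X Ms n x)"
  by (induction Ms arbitrary: X) (auto simp: iota_smult)

lemma iota_seq_zero: "iota_seq X Ms n (chain_zero (morse_seq X Ms) n) = chain_zero X n"
  by (induction Ms arbitrary: X) (auto simp: iota_zero)

lemma psi_seq_chains[simp]: "x \<in> chains X n \<Longrightarrow> psi_seq X Ms n x \<in> chains (morse_seq X Ms) n"
  by (induction Ms arbitrary: X x) auto

lemma psi_seq_add: "x \<in> chains X n \<Longrightarrow> y \<in> chains X n \<Longrightarrow>
   psi_seq X Ms n (cadd x y) = cadd (psi_seq X Ms n x) (psi_seq X Ms n y)"
  by (induction Ms arbitrary: X x y) (auto simp: psi_add)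

lemma psi_seq_smult: "x \<in> chains X n \<Longrightarrow> psi_seq X Ms n (csc c x) = csc c (psi_seq X Ms n x)"
  by (induction Ms arbitrary: X x) (auto simp: psi_smult)

lemma psi_seq_zero: "psi_seq X Ms n (chain_zero X n) = chain_zero (morse_seq X Ms) n"
  by (induction Ms arbitrary: X) (auto simp: psi_zero)

lemma mmxI: "bcx X \<Longrightarrow> morse_matching X M \<Longrightarrow> mmx X M"
  by (simp add: mmx_def mmx_axioms_def)

lemma bcx_morse_seq: "bcx X \<Longrightarrow> seq_morse X Ms \<Longrightarrow> bcx (morse_seq X Ms)"
  by (induction Ms arbitrary: X) (auto intro: mmx_morse mmxI)

context mmx
begin

lemma psi_iota:
  assumes w: "w \<in> chains (morse_cx X M) n"
  shows "psi X M n (iota X M n w) = w"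
proof (rule chain_eqI[OF psi_chains w])
  fix b assume b: "b \<in> ncells (morse_cx X M) n"
  hence b': "b \<in> crit X M" "deg X b = n" by auto
  have bn: "b \<in> ncells X n" using ncells_morse_sub[OF b] .
  have "psi X M n (iota X M n w) b = vsum (cdim X b) (\<lambda>a. Gamma X M b a *\<^sub>v iota X M n w a) (ncells X n)"
    using b' by (simp add: psi_def)
  also have "\<dots> = Gamma X M b b *\<^sub>v iota X M n w b"
  proof (rule vsum_single_term)
    show "finite (ncells X n)" using fin by (rule ncells_fin)
    show "b \<in> ncells X n" by (rule bn)
    show "Gamma X M b b *\<^sub>v iota X M n w b \<in> carrier_vec (cdim X b)"
      using iota_chains[OF w] bn chainsD by (metis mult_mat_vec_carrier Gamma_carrier')
    fix a assume a: "a \<in> ncells X n - {b}"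
    show "Gamma X M b a *\<^sub>v iota X M n w a = 0\<^sub>v (cdim X b)"
    proof (cases "a \<in> crit X M")
      case True
      hence "Gamma X M b a = 0\<^sub>m (cdim X b) (cdim X a)" using Gamma_crit_crit[OF True b'(1)] a b' by (auto simp: ncells_def)
      thus ?thesis using chainsD[OF iota_chains[OF w]] a by simp
    next
      case False
      thus ?thesis using a by (simp add: iota_def)
    qed
  qed
  also have "\<dots> = w b" using b' chainsD[OF w b] by (simp add: Gamma_refl iota_def)
  finally show "psi X M n (iota X M n w) b = w b" .
qed

end

lemma psi_seq_iota_seq:
  "bcx X \<Longrightarrow> seq_morse X Ms \<Longrightarrow> w \<in> chains (morse_seq X Ms) n \<Longrightarrow> psi_seq X Ms n (iota_seq X Ms n w) = w"
proof (induction Ms arbitrary: X)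
  case Nil
  then show ?case by simp
next
  case (Cons M Ms)
  interpret mmx X M using Cons.prems mmxI by auto
  have m: "mmx X M" using Cons.prems mmxI by auto
  have "psi X M n (iota X M n (iota_seq (morse_cx X M) Ms n w)) = iota_seq (morse_cx X M) Ms n w"
    using psi_iota Cons.prems by simp
  moreover have "psi_seq (morse_cx X M) Ms n (iota_seq (morse_cx X M) Ms n w) = w"
    using Cons.IH[of "morse_cx X M"] Cons.prems mmx_morse[OF m] by simp
  ultimately show ?case by simp
qed

lemma psi_seq_bdry:
  "bcx X \<Longrightarrow> seq_morse X Ms \<Longrightarrow> z \<in> chains X n \<Longrightarrow>
   psi_seq X Ms (n - 1) (bdry X n z) = bdry (morse_seq X Ms) n (psi_seq X Ms n z)"
proof (induction Ms arbitrary: X z)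
  case Nil
  then show ?case by simp
next
  case (Cons M Ms)
  interpret mmx X M using Cons.prems mmxI by auto
  have m: "mmx X M" using Cons.prems mmxI by auto
  have "psi X M (n - 1) (bdry X n z) = bdry (morse_cx X M) n (psi X M n z)"
    using psi_bdry Cons.prems by simp
  moreover have "psi_seq (morse_cx X M) Ms (n - 1) (bdry (morse_cx X M) n (psi X M n z))
      = bdry (morse_seq (morse_cx X M) Ms) n (psi_seq (morse_cx X M) Ms n (psi X M n z))"
    using Cons.IH[of "morse_cx X M" "psi X M n z"] Cons.prems mmx_morse[OF m] by simp
  ultimately show ?case by simp
qed


context bcx
begin

lemma bdry_bdry:
  assumes z: "z \<in> chains X n"
  shows "bdry X (n - 1) (bdry X n z) = chain_zero X (n - 1 - 1)"
proof (cases "n - 1 = 0")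
  case True
  have "bdry X n z \<in> chains X 0" using bdry_chains[of X n z] True by simp
  from bdry_0[OF this] show ?thesis using True by simp
next
  case False
  define k where "k = n - 2"
  have k: "n = Suc (Suc k)" using False unfolding k_def by arith
  show ?thesis
  proof (rule ext)
    fix \<gamma>
    show "bdry X (n - 1) (bdry X n z) \<gamma> = chain_zero X (n - 1 - 1) \<gamma>"
    proof (cases "\<gamma> \<in> ncells X k")
      case True
      hence gc: "\<gamma> \<in> cells X" "deg X \<gamma> = k" by (auto simp: ncells_def)
      have "bdry X (n - 1) (bdry X n z) \<gamma> = vsum (cdim X \<gamma>) (\<lambda>\<delta>. bd X \<gamma> \<delta> *\<^sub>v bdry X n z \<delta>) (ncells X (Suc k))"
        using True k by (simp add: bdry_def)
      also have "\<dots> = vsum (cdim X \<gamma>) (\<lambda>\<delta>. bd X \<gamma> \<delta> *\<^sub>v vsum (cdim X \<delta>) (\<lambda>\<alpha>. bd X \<delta> \<alpha> *\<^sub>v z \<alpha>) (ncells X n)) (ncells X (Suc k))"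
        using k by (intro vsum_cong) (simp add: bdry_def)
      also have "\<dots> = vsum (cdim X \<gamma>) (\<lambda>\<alpha>. msum (cdim X \<gamma>) (cdim X \<alpha>) (\<lambda>\<delta>. bd X \<gamma> \<delta> * bd X \<delta> \<alpha>) (ncells X (Suc k)) *\<^sub>v z \<alpha>) (ncells X n)"
        using carr gc chainsD[OF z] by (intro vsum_double) (auto simp: ncells_def)
      also have "\<dots> = vsum (cdim X \<gamma>) (\<lambda>\<alpha>. 0\<^sub>v (cdim X \<gamma>)) (ncells X n)"
      proof (intro vsum_cong)
        fix \<alpha> assume a: "\<alpha> \<in> ncells X n"
        hence ac: "\<alpha> \<in> cells X" "deg X \<alpha> = n" by (auto simp: ncells_def)
        have "msum (cdim X \<gamma>) (cdim X \<alpha>) (\<lambda>\<delta>. bd X \<gamma> \<delta> * bd X \<delta> \<alpha>) (ncells X (Suc k))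
            = msum (cdim X \<gamma>) (cdim X \<alpha>) (\<lambda>\<delta>. bd X \<gamma> \<delta> * bd X \<delta> \<alpha>) (cells X)"
        proof (rule msum_subset_zero[symmetric])
          show "finite (cells X)" by (rule fin)
          show "ncells X (Suc k) \<subseteq> cells X" by (auto simp: ncells_def)
          fix \<delta> assume d: "\<delta> \<in> cells X - ncells X (Suc k)"
          hence "bd X \<delta> \<alpha> = 0\<^sub>m (cdim X \<delta>) (cdim X \<alpha>)" using degz ac k by (auto simp: ncells_def)
          thus "bd X \<gamma> \<delta> * bd X \<delta> \<alpha> = 0\<^sub>m (cdim X \<gamma>) (cdim X \<alpha>)"
            using carr[OF _ gc(1)] d by (simp add: right_mult_zero_mat)
        qed
        also have "\<dots> = 0\<^sub>m (cdim X \<gamma>) (cdim X \<alpha>)" using dd[OF ac(1) gc(1)] .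
        finally show "msum (cdim X \<gamma>) (cdim X \<alpha>) (\<lambda>\<delta>. bd X \<gamma> \<delta> * bd X \<delta> \<alpha>) (ncells X (Suc k)) *\<^sub>v z \<alpha> = 0\<^sub>v (cdim X \<gamma>)"
          using chainsD[OF z a] by simp
      qed
      also have "\<dots> = 0\<^sub>v (cdim X \<gamma>)" by (rule vsum_zero) simp
      finally show ?thesis using True k by (simp add: chain_zero_def)
    next
      case False
      thus ?thesis using k by (simp add: bdry_def chain_zero_def)
    qed
  qed
qed

end

context mmx
begin

definition free_at :: "nat \<Rightarrow> bool" where
  "free_at n \<longleftrightarrow> (\<forall>(\<alpha>, \<beta>)\<in>M. \<not> (deg X \<alpha> = n \<and> deg X \<beta> + 1 = n))"

lemma free_atD: assumes f: "free_at n" and ab: "(a, b) \<in> M" and d: "deg X a = n" shows False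
proof -
  have "case (a, b) of (\<alpha>, \<beta>) \<Rightarrow> \<not> (deg X \<alpha> = n \<and> deg X \<beta> + 1 = n)"
    using f[unfolded free_at_def] ab by (rule bspec)
  hence "\<not> (deg X a = n \<and> deg X b + 1 = n)" by simp
  thus False using M_deg[OF ab] d by simp
qed

lemma lemma_T:
  assumes fr: "free_at (Suc m)" and u: "u \<in> chains X m"
    and pu: "psi X M m u = chain_zero (morse_cx X M) m"
    and bu: "bdry X m u = chain_zero X (m - 1)"
  shows "u = chain_zero X m"
proof -
  have nolow: "(y, \<delta>) \<notin> M" if "\<delta> \<in> ncells X m" for y \<delta>
  proof
    assume yd: "(y, \<delta>) \<in> M"
    hence "deg X y = Suc m" using M_deg that by (auto simp: ncells_def)
    thus False using free_atD[OF fr yd] by simp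
  qed
  have critz: "u \<tau> = 0\<^sub>v (cdim X \<tau>)" if t: "\<tau> \<in> crit X M" "deg X \<tau> = m" for \<tau>
  proof -
    have tn: "\<tau> \<in> ncells X m" using t crit_cells by (auto simp: ncells_def)
    have "psi X M m u \<tau> = vsum (cdim X \<tau>) (\<lambda>\<delta>. Gamma X M \<tau> \<delta> *\<^sub>v u \<delta>) (ncells X m)"
      using t by (simp add: psi_def)
    also have "\<dots> = Gamma X M \<tau> \<tau> *\<^sub>v u \<tau>"
    proof (rule vsum_single_term)
      show "finite (ncells X m)" using fin by (rule ncells_fin)
      show "\<tau> \<in> ncells X m" by (rule tn)
      show "Gamma X M \<tau> \<tau> *\<^sub>v u \<tau> \<in> carrier_vec (cdim X \<tau>)" using chainsD[OF u tn] by (simp add: Gamma_refl)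
      fix \<delta> assume d: "\<delta> \<in> ncells X m - {\<tau>}"
      hence "Gamma X M \<tau> \<delta> = 0\<^sub>m (cdim X \<tau>) (cdim X \<delta>)"
        using Gamma_same_deg_zero[OF t(1)] nolow t by (auto simp: ncells_def)
      thus "Gamma X M \<tau> \<delta> *\<^sub>v u \<delta> = 0\<^sub>v (cdim X \<tau>)" using chainsD[OF u] d by simp
    qed
    also have "\<dots> = u \<tau>" using chainsD[OF u tn] by (simp add: Gamma_refl)
    finally have "psi X M m u \<tau> = u \<tau>" .
    thus ?thesis using pu t by (simp add: chain_zero_def)
  qed
  show ?thesis
  proof (rule ccontr)
    assume ne: "u \<noteq> chain_zero X m"
    let ?S = "{\<delta> \<in> ncells X m. u \<delta> \<noteq> 0\<^sub>v (cdim X \<delta>)}"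
    have "?S \<noteq> {}"
    proof
      assume "?S = {}"
      hence "u = chain_zero X m" using u by (intro chain_eqI[OF u chain_zero_chains]) (auto simp: chain_zero_def)
      thus False using ne by simp
    qed
    then obtain \<delta>0 where "\<delta>0 \<in> ?S" by blast
    from wfE_min[OF wf_up this] obtain \<delta> where dS: "\<delta> \<in> ?S" and mn: "\<And>y. (y, \<delta>) \<in> r\<^sup>+ \<Longrightarrow> y \<notin> ?S"
      by blast
    have dn: "\<delta> \<in> ncells X m" and du: "u \<delta> \<noteq> 0\<^sub>v (cdim X \<delta>)" using dS by auto
    have dc: "\<delta> \<in> cells X" "deg X \<delta> = m" using dn by (auto simp: ncells_def)
    have "\<delta> \<notin> crit X M" using critz dc du by blast
    then obtain \<rho> where dr: "(\<delta>, \<rho>) \<in> M" using dc nolow[OF dn] crit_iff by blast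
    have rc: "\<rho> \<in> cells X" "deg X \<delta> = deg X \<rho> + 1" using M_deg[OF dr] by auto
    hence rn: "\<rho> \<in> ncells X (m - 1)" using dc by (auto simp: ncells_def)
    have iso: "cdim X \<delta> = cdim X \<rho>" "invertible_mat (bd X \<rho> \<delta>)" using M_iso[OF dr] by auto
    have "bdry X m u \<rho> = vsum (cdim X \<rho>) (\<lambda>\<delta>'. bd X \<rho> \<delta>' *\<^sub>v u \<delta>') (ncells X m)"
      using rn by (simp add: bdry_def)
    also have "\<dots> = bd X \<rho> \<delta> *\<^sub>v u \<delta>"
    proof (rule vsum_single_term)
      show "finite (ncells X m)" using fin by (rule ncells_fin)
      show "\<delta> \<in> ncells X m" by (rule dn)
      show "bd X \<rho> \<delta> *\<^sub>v u \<delta> \<in> carrier_vec (cdim X \<rho>)"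
        using mult_mat_vec_carrier[OF carr[OF dc(1) rc(1)] chainsD[OF u dn]] .
      fix \<delta>' assume d': "\<delta>' \<in> ncells X m - {\<delta>}"
      hence d'c: "\<delta>' \<in> cells X" by (auto simp: ncells_def)
      show "bd X \<rho> \<delta>' *\<^sub>v u \<delta>' = 0\<^sub>v (cdim X \<rho>)"
      proof (cases "\<delta>' \<in> ?S")
        case False
        hence "u \<delta>' = 0\<^sub>v (cdim X \<delta>')" using d' by auto
        thus ?thesis using carr[OF d'c rc(1)] by simp
      next
        case True
        have "bd X \<rho> \<delta>' = 0\<^sub>m (cdim X \<rho>) (cdim X \<delta>')"
        proof (rule ccontr)
          assume nz: "bd X \<rho> \<delta>' \<noteq> 0\<^sub>m (cdim X \<rho>) (cdim X \<delta>')"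
          hence "(\<delta>', \<rho>) \<in> edges X" using d'c rc unfolding edges_def by auto
          moreover have "(\<delta>', \<rho>) \<notin> M" using M_uniq2[OF dr] d' by blast
          ultimately have "(\<delta>', \<rho>) \<in> r" unfolding redges_def by blast
          moreover have "(\<rho>, \<delta>) \<in> r" using dr unfolding redges_def by blast
          ultimately have "(\<delta>', \<delta>) \<in> r\<^sup>+" by auto
          thus False using mn True by blast
        qed
        thus ?thesis using chainsD[OF u] d' by simp
      qed
    qed
    finally have "bd X \<rho> \<delta> *\<^sub>v u \<delta> = 0\<^sub>v (cdim X \<rho>)" using bu rn by (simp add: chain_zero_def)
    hence "u \<delta> = 0\<^sub>v (cdim X \<rho>)"
      using invertible_mult_vec_zero[OF iso(2)] carr[OF dc(1) rc(1)] chainsD[OF u dn] iso by simp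
    thus False using du iso by simp
  qed
qed

end

lemma seqA:
  "bcx X \<Longrightarrow> seq_morse X Ms \<Longrightarrow> seq_free X Ms n \<Longrightarrow> z \<in> chains X n \<Longrightarrow>
   psi_seq X Ms n z = chain_zero (morse_seq X Ms) n \<Longrightarrow> bdry X n z = chain_zero X (n - 1)"
proof (induction Ms arbitrary: X z)
  case Nil
  then show ?case using bcx.bdry_zero by fastforce
next
  case (Cons M Ms)
  have m: "mmx X M" using Cons.prems mmxI by auto
  interpret mmx X M by (rule m)
  have bm: "bcx (morse_cx X M)" using mmx_morse[OF m] .
  have "bdry (morse_cx X M) n (psi X M n z) = chain_zero (morse_cx X M) (n - 1)"
    using Cons.IH[OF bm, of "psi X M n z"] Cons.prems by simp
  show ?case
  proof (cases n)
    case 0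
    thus ?thesis using bdry_0[OF Cons.prems(4)[unfolded 0]] by simp
  next
    case (Suc k)
    have fr: "free_at (Suc k)" using Cons.prems(3) Suc by (simp add: free_at_def)
    let ?u = "bdry X n z"
    have uc: "?u \<in> chains X k" using bdry_chains[of X n z] Suc by simp
    have "psi X M k ?u = chain_zero (morse_cx X M) k"
      using psi_bdry[OF Cons.prems(4)] \<open>bdry (morse_cx X M) n (psi X M n z) = _\<close> Suc by simp
    moreover have "bdry X k ?u = chain_zero X (k - 1)"
      using bdry_bdry[OF Cons.prems(4)] Suc by simp
    ultimately have "?u = chain_zero X k" using lemma_T[OF fr uc] by blast
    thus ?thesis using Suc by simp
  qed
qed

lemma seqB:
  "bcx X \<Longrightarrow> seq_morse X Ms \<Longrightarrow> \<not> seq_free X Ms n \<Longrightarrow>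
   \<exists>z \<in> chains X n. psi_seq X Ms n z = chain_zero (morse_seq X Ms) n \<and> bdry X n z \<noteq> chain_zero X (n - 1)"
proof (induction Ms arbitrary: X)
  case Nil
  then show ?case by simp
next
  case (Cons M Ms)
  have m: "mmx X M" using Cons.prems mmxI by auto
  interpret mmx X M by (rule m)
  have bm: "bcx (morse_cx X M)" using mmx_morse[OF m] .
  show ?case
  proof (cases "free_at n")
    case False
    then obtain \<alpha> \<beta> where ab: "(\<alpha>, \<beta>) \<in> M" "deg X \<alpha> = n" "deg X \<beta> + 1 = n"
      unfolding free_at_def by auto
    have ac: "\<alpha> \<in> cells X" "\<beta> \<in> cells X" using M_deg[OF ab(1)] by auto
    have iso: "cdim X \<alpha> = cdim X \<beta>" "invertible_mat (bd X \<beta> \<alpha>)" using M_iso[OF ab(1)] by auto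
    have Bc: "bd X \<beta> \<alpha> \<in> carrier_mat (cdim X \<beta>) (cdim X \<alpha>)" using carr ac by simp
    have pos: "cdim X \<alpha> > 0"
    proof (rule ccontr)
      assume "\<not> cdim X \<alpha> > 0"
      hence "cdim X \<alpha> = 0" by simp
      hence "bd X \<beta> \<alpha> = 0\<^sub>m (cdim X \<beta>) (cdim X \<alpha>)" using Bc by (intro eq_matI) auto
      thus False using edgesD[OF M_edges[OF ab(1)]] by simp
    qed
    define e where "e = (unit_vec (cdim X \<alpha>) 0 :: real vec)"
    have ec: "e \<in> carrier_vec (cdim X \<alpha>)" "e \<noteq> 0\<^sub>v (cdim X \<alpha>)" using pos by (auto simp: e_def)
    define z where "z = (\<lambda>\<gamma>. if \<gamma> = \<alpha> then e else chain_zero X n \<gamma>)"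
    have an: "\<alpha> \<in> ncells X n" using ac ab by (simp add: ncells_def)
    have bn: "\<beta> \<in> ncells X (n - 1)" using ac ab by (auto simp: ncells_def)
    have zc: "z \<in> chains X n"
      unfolding z_def by (rule chainsI) (use ec an in \<open>auto simp: chain_zero_def\<close>)
    have pz: "psi X M n z = chain_zero (morse_cx X M) n"
    proof (rule ext)
      fix b show "psi X M n z b = chain_zero (morse_cx X M) n b"
      proof (cases "b \<in> crit X M \<and> deg X b = n")
        case True
        have "vsum (cdim X b) (\<lambda>a. Gamma X M b a *\<^sub>v z a) (ncells X n) = 0\<^sub>v (cdim X b)"
        proof (rule vsum_zero)
          fix a assume a: "a \<in> ncells X n"
          show "Gamma X M b a *\<^sub>v z a = 0\<^sub>v (cdim X b)"
          proof (cases "a = \<alpha>")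
            case True
            have "Gamma X M b \<alpha> = 0\<^sub>m (cdim X b) (cdim X \<alpha>)"
              using Gamma_same_deg_zero[of b \<alpha>] \<open>b \<in> crit X M \<and> deg X b = n\<close> ab
                crit_not_matched[OF _ ab(1)] not_lower_upper[OF ab(1)] by auto
            thus ?thesis using True ec by (simp add: z_def)
          next
            case False
            thus ?thesis using a by (simp add: z_def chain_zero_def)
          qed
        qed
        thus ?thesis using True by (simp add: psi_def chain_zero_def)
      next
        case False
        thus ?thesis by (auto simp: psi_def chain_zero_def)
      qed
    qed
    have "psi_seq X (M # Ms) n z = chain_zero (morse_seq X (M # Ms)) n"
      using pz psi_seq_zero by simp
    moreover have "bdry X n z \<noteq> chain_zero X (n - 1)"
    proof
      assume h: "bdry X n z = chain_zero X (n - 1)"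
      have "bdry X n z \<beta> = vsum (cdim X \<beta>) (\<lambda>a. bd X \<beta> a *\<^sub>v z a) (ncells X n)"
        using bn by (simp add: bdry_def)
      also have "\<dots> = bd X \<beta> \<alpha> *\<^sub>v z \<alpha>"
      proof (rule vsum_single_term)
        show "finite (ncells X n)" using fin by (rule ncells_fin)
        show "\<alpha> \<in> ncells X n" by (rule an)
        show "bd X \<beta> \<alpha> *\<^sub>v z \<alpha> \<in> carrier_vec (cdim X \<beta>)" using mult_mat_vec_carrier[OF Bc ec(1)] by (simp add: z_def)
        fix a assume a: "a \<in> ncells X n - {\<alpha>}"
        hence a': "a \<in> cells X" "a \<noteq> \<alpha>" "a \<in> ncells X n" by (auto simp: ncells_def)
        have "z a = 0\<^sub>v (cdim X a)" using a' by (simp add: z_def chain_zero_def)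
        thus "bd X \<beta> a *\<^sub>v z a = 0\<^sub>v (cdim X \<beta>)" using carr[OF a'(1) ac(2)] by simp
      qed
      also have "\<dots> = bd X \<beta> \<alpha> *\<^sub>v e" by (simp add: z_def)
      finally have "bd X \<beta> \<alpha> *\<^sub>v e = 0\<^sub>v (cdim X \<beta>)" using h bn by (simp add: chain_zero_def)
      hence "e = 0\<^sub>v (cdim X \<alpha>)"
        using invertible_mult_vec_zero[OF iso(2)] Bc ec iso by simp
      thus False using ec by simp
    qed
    ultimately show ?thesis using zc by blast
  next
    case True
    hence "\<not> seq_free (morse_cx X M) Ms n" using Cons.prems(3) by (simp add: free_at_def)
    then obtain w where w: "w \<in> chains (morse_cx X M) n"
      "psi_seq (morse_cx X M) Ms n w = chain_zero (morse_seq (morse_cx X M) Ms) n"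
      "bdry (morse_cx X M) n w \<noteq> chain_zero (morse_cx X M) (n - 1)"
      using Cons.IH[OF bm] Cons.prems by auto
    let ?z = "iota X M n w"
    have zc: "?z \<in> chains X n" using iota_chains[OF w(1)] .
    have pz: "psi X M n ?z = w" using psi_iota[OF w(1)] .
    have "bdry X n ?z \<noteq> chain_zero X (n - 1)"
    proof
      assume h: "bdry X n ?z = chain_zero X (n - 1)"
      have "psi X M (n - 1) (bdry X n ?z) = bdry (morse_cx X M) n w"
        using psi_bdry[OF zc] pz by simp
      moreover have "psi X M (n - 1) (bdry X n ?z) = chain_zero (morse_cx X M) (n - 1)"
        using h psi_zero by simp
      ultimately show False using w(3) by simp
    qed
    thus ?thesis using zc pz w(2) by auto
  qed
qed


section \<open>Spans of chains and a Riesz representation lemma\<close>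

inductive_set cspan :: "'c bcx \<Rightarrow> nat \<Rightarrow> ('c \<Rightarrow> real vec) set \<Rightarrow> ('c \<Rightarrow> real vec) set"
  for X n S where
  cs_zero: "chain_zero X n \<in> cspan X n S"
| cs_base: "v \<in> S \<Longrightarrow> v \<in> cspan X n S"
| cs_add: "x \<in> cspan X n S \<Longrightarrow> y \<in> cspan X n S \<Longrightarrow> cadd x y \<in> cspan X n S"
| cs_smult: "x \<in> cspan X n S \<Longrightarrow> csc c x \<in> cspan X n S"

lemma chain_dim: "x \<in> chains X n \<Longrightarrow> \<alpha> \<in> ncells X n \<Longrightarrow> dim_vec (x \<alpha>) = cdim X \<alpha>"
  using chainsD[of x X n \<alpha>] by simp

lemma cadd_dim: "dim_vec (cadd x y \<alpha>) = dim_vec (y \<alpha>)"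
  by (simp add: cadd_def)

lemma csc_dim: "dim_vec (csc c x \<alpha>) = dim_vec (x \<alpha>)"
  by (simp add: csc_def)

lemma zero_dim: "\<alpha> \<in> ncells X n \<Longrightarrow> dim_vec (chain_zero X n \<alpha>) = cdim X \<alpha>"
  by (simp add: chain_zero_def)

lemma cadd_idx: "i < dim_vec (y \<alpha>) \<Longrightarrow> cadd x y \<alpha> $ i = x \<alpha> $ i + y \<alpha> $ i"
  by (simp add: cadd_def)

lemma csc_idx: "i < dim_vec (x \<alpha>) \<Longrightarrow> csc c x \<alpha> $ i = c * x \<alpha> $ i"
  by (simp add: csc_def)

lemma zero_idx: "\<alpha> \<in> ncells X n \<Longrightarrow> i < cdim X \<alpha> \<Longrightarrow> chain_zero X n \<alpha> $ i = 0"
  by (simp add: chain_zero_def)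

lemma chain_eq_idx:
  assumes x: "x \<in> chains X n" and y: "y \<in> chains X n"
    and e: "\<And>\<alpha> i. \<alpha> \<in> ncells X n \<Longrightarrow> i < cdim X \<alpha> \<Longrightarrow> x \<alpha> $ i = y \<alpha> $ i"
  shows "x = y"
proof (rule chain_eqI[OF x y])
  fix \<alpha> assume a: "\<alpha> \<in> ncells X n"
  show "x \<alpha> = y \<alpha>" using e[OF a] chain_dim[OF x a] chain_dim[OF y a] by (intro eq_vecI) auto
qed

lemmas idx_simps = cadd_idx csc_idx zero_idx chain_dim cadd_dim csc_dim zero_dim

lemma cspan_chains': "z \<in> cspan X n S \<Longrightarrow> S \<subseteq> chains X n \<Longrightarrow> z \<in> chains X n"
  by (induction rule: cspan.induct) auto

lemma cspan_chains: "S \<subseteq> chains X n \<Longrightarrow> z \<in> cspan X n S \<Longrightarrow> z \<in> chains X n"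
  using cspan_chains' by blast

lemma cspan_mono': "z \<in> cspan X n S \<Longrightarrow> S \<subseteq> T \<Longrightarrow> z \<in> cspan X n T"
  by (induction rule: cspan.induct) (auto intro: cspan.intros)

lemma cspan_mono: "S \<subseteq> T \<Longrightarrow> z \<in> cspan X n S \<Longrightarrow> z \<in> cspan X n T"
  using cspan_mono' by blast

lemma cspan_absorb': "z \<in> cspan X n (insert v S) \<Longrightarrow> v \<in> cspan X n S \<Longrightarrow> z \<in> cspan X n S"
  by (induction rule: cspan.induct) (auto intro: cspan.intros)

lemma cspan_absorb: "v \<in> cspan X n S \<Longrightarrow> z \<in> cspan X n (insert v S) \<Longrightarrow> z \<in> cspan X n S"
  using cspan_absorb' by blast

lemma cspan_empty: "z \<in> cspan X n {} \<Longrightarrow> z = chain_zero X n"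
proof (induction rule: cspan.induct)
  case cs_zero then show ?case by simp
next
  case (cs_base v) then show ?case by simp
next
  case (cs_add x y)
  have "cadd (chain_zero X n) (chain_zero X n) = chain_zero X n"
    by (rule chain_eq_idx[of _ X n]) (auto simp: idx_simps)
  then show ?case using cs_add by simp
next
  case (cs_smult x c)
  have "csc c (chain_zero X n) = chain_zero X n"
    by (rule chain_eq_idx[of _ X n]) (auto simp: idx_simps)
  then show ?case using cs_smult by simp
qed

lemma cspan_decomp:
  assumes S: "S \<subseteq> chains X n" and v: "v \<in> chains X n"
  shows "z \<in> cspan X n (insert v S) \<Longrightarrow> \<exists>u\<in>cspan X n S. \<exists>a. z = cadd u (csc a v)"
proof (induction rule: cspan.induct)
  case cs_zero
  have "chain_zero X n = cadd (chain_zero X n) (csc 0 v)"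
    by (rule chain_eq_idx[of _ X n]) (use v in \<open>auto simp: idx_simps\<close>)
  then show ?case by (blast intro: cspan.intros)
next
  case (cs_base w)
  show ?case
  proof (cases "w = v")
    case True
    have "v = cadd (chain_zero X n) (csc 1 v)"
      by (rule chain_eq_idx[of _ X n]) (use v in \<open>auto simp: idx_simps\<close>)
    then show ?thesis using True by (blast intro: cspan.intros)
  next
    case False
    hence wS: "w \<in> S" using cs_base by simp
    have "w = cadd w (csc 0 v)"
      by (rule chain_eq_idx[of _ X n]) (use v S wS in \<open>auto simp: idx_simps\<close>)
    then show ?thesis using wS by (blast intro: cspan.intros)
  qed
next
  case (cs_add x y)
  then obtain u1 a1 u2 a2 where u: "u1 \<in> cspan X n S" "x = cadd u1 (csc a1 v)" "u2 \<in> cspan X n S" "y = cadd u2 (csc a2 v)"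
    by blast
  have uc: "u1 \<in> chains X n" "u2 \<in> chains X n" using u cspan_chains S by blast+
  have "cadd x y = cadd (cadd u1 u2) (csc (a1 + a2) v)"
    unfolding u(2,4) by (rule chain_eq_idx[of _ X n]) (use uc v in \<open>auto simp: idx_simps algebra_simps\<close>)
  then show ?case using u by (blast intro: cspan.intros)
next
  case (cs_smult x c)
  then obtain u a where u: "u \<in> cspan X n S" "x = cadd u (csc a v)" by blast
  have uc: "u \<in> chains X n" using u cspan_chains S by blast
  have "csc c x = cadd (csc c u) (csc (c * a) v)"
    unfolding u(2) by (rule chain_eq_idx[of _ X n]) (use uc v in \<open>auto simp: idx_simps algebra_simps\<close>)
  then show ?case using u by (blast intro: cspan.intros)
qed

definition linf :: "'c bcx \<Rightarrow> nat \<Rightarrow> (('c \<Rightarrow> real vec) \<Rightarrow> real) \<Rightarrow> bool" where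
  "linf X n f \<longleftrightarrow> (\<forall>a\<in>chains X n. \<forall>b\<in>chains X n. f (cadd a b) = f a + f b) \<and>
                  (\<forall>a\<in>chains X n. \<forall>c. f (csc c a) = c * f a)"

lemma linf_zero: "linf X n f \<Longrightarrow> f (chain_zero X n) = 0"
proof -
  assume l: "linf X n f"
  have "csc 0 (chain_zero X n) = chain_zero X n"
    by (rule chain_eq_idx[of _ X n]) (auto simp: idx_simps)
  hence "f (chain_zero X n) = 0 * f (chain_zero X n)"
    using l unfolding linf_def by (metis chain_zero_chains)
  thus ?thesis by simp
qed

lemma linf_cip: "linf X n (\<lambda>z. cip X n z v)" if "v \<in> chains X n"
  using that unfolding linf_def by (simp add: cip_add_left cip_smult_left)

lemma riesz:
  assumes fc: "finite (cells X)"
  shows "finite S \<Longrightarrow> S \<subseteq> chains X n \<Longrightarrow> linf X n f \<Longrightarrow>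
     \<exists>x\<in>cspan X n S. \<forall>z\<in>cspan X n S. cip X n z x = f z"
proof (induction S arbitrary: f rule: finite_induct)
  case empty
  show ?case
  proof (intro bexI[of _ "chain_zero X n"] ballI)
    fix z assume "z \<in> cspan X n {}"
    hence "z = chain_zero X n" by (rule cspan_empty)
    thus "cip X n z (chain_zero X n) = f z" using linf_zero[OF empty.prems(2)] by simp
  qed (rule cs_zero)
next
  case (insert v S)
  have S: "S \<subseteq> chains X n" and v: "v \<in> chains X n" using insert.prems by auto
  have spS: "\<And>z. z \<in> cspan X n S \<Longrightarrow> z \<in> chains X n" using cspan_chains[OF S] by blast
  have mono: "\<And>z. z \<in> cspan X n S \<Longrightarrow> z \<in> cspan X n (insert v S)"
    using cspan_mono[of S "insert v S"] by blast
  obtain x1 where x1: "x1 \<in> cspan X n S" "\<And>z. z \<in> cspan X n S \<Longrightarrow> cip X n z x1 = f z"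
    using insert.IH[OF S insert.prems(2)] by blast
  obtain x2 where x2: "x2 \<in> cspan X n S" "\<And>z. z \<in> cspan X n S \<Longrightarrow> cip X n z x2 = cip X n z v"
    using insert.IH[OF S linf_cip[OF v]] by blast
  have x1c: "x1 \<in> chains X n" and x2c: "x2 \<in> chains X n" using x1 x2 spS by auto
  define v' where "v' = cadd v (csc (-1) x2)"
  have v'c: "v' \<in> chains X n" using v x2c v'_def by simp
  have v'sp: "v' \<in> cspan X n (insert v S)" unfolding v'_def
    by (intro cs_add cs_smult cs_base mono x2) simp
  have orth: "cip X n z v' = 0" if z: "z \<in> cspan X n S" for z
  proof -
    have zc: "z \<in> chains X n" using spS z by blast
    have "cip X n z v' = cip X n z v + (-1) * cip X n z x2"
      unfolding v'_def using zc v x2c by (simp add: cip_add_right cip_smult_right)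
    thus ?thesis using x2(2)[OF z] by simp
  qed
  have l: "\<forall>a\<in>chains X n. \<forall>b\<in>chains X n. f (cadd a b) = f a + f b" "\<forall>a\<in>chains X n. \<forall>c. f (csc c a) = c * f a"
    using insert.prems(2) unfolding linf_def by auto
  show ?case
  proof (cases "cip X n v' v' = 0")
    case True
    hence "v' = chain_zero X n" using cip_self_zero[OF fc v'c] by blast
    hence "v = x2"
    proof -
      assume h: "v' = chain_zero X n"
      show "v = x2"
      proof (rule chain_eq_idx[OF v x2c])
        fix \<alpha> i assume a: "\<alpha> \<in> ncells X n" "i < cdim X \<alpha>"
        have "v' \<alpha> $ i = 0" using h a by (simp add: zero_idx)
        thus "v \<alpha> $ i = x2 \<alpha> $ i" unfolding v'_def using a v x2c by (simp add: idx_simps chain_dim[OF x2c] chain_dim[OF v])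
      qed
    qed
    hence vS: "v \<in> cspan X n S" using x2 by simp
    show ?thesis
    proof (intro bexI[of _ x1] ballI)
      fix z assume "z \<in> cspan X n (insert v S)"
      hence "z \<in> cspan X n S" using cspan_absorb[OF vS] by blast
      thus "cip X n z x1 = f z" by (rule x1(2))
    qed (rule mono[OF x1(1)])
  next
    case False
    define c where "c = f v' / cip X n v' v'"
    define x where "x = cadd x1 (csc c v')"
    show ?thesis
    proof (intro bexI[of _ x] ballI)
      show "x \<in> cspan X n (insert v S)" unfolding x_def
        by (intro cs_add cs_smult mono x1(1) v'sp)
    next
      fix z assume z: "z \<in> cspan X n (insert v S)"
      obtain u a where u: "u \<in> cspan X n S" "z = cadd u (csc a v)"
        using cspan_decomp[OF S v z] by blast
      have uc: "u \<in> chains X n" using u spS by blast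
      define u' where "u' = cadd u (csc a x2)"
      have u'sp: "u' \<in> cspan X n S" unfolding u'_def by (intro cs_add cs_smult u(1) x2(1))
      have u'c: "u' \<in> chains X n" using u'sp spS by blast
      have zeq: "z = cadd u' (csc a v')"
        unfolding u(2) u'_def v'_def
        by (rule chain_eq_idx[of _ X n]) (use uc v x2c in \<open>auto simp: idx_simps algebra_simps\<close>)
      have "cip X n z x = cip X n u' x1 + c * cip X n u' v' + a * (cip X n v' x1 + c * cip X n v' v')"
        unfolding zeq x_def using u'c v'c x1c
        by (simp add: cip_add_left cip_add_right cip_smult_left cip_smult_right algebra_simps)
      also have "cip X n v' x1 = 0" using cip_comm[OF v'c x1c] orth[OF x1(1)] by simp
      also have "cip X n u' v' = 0" using orth[OF u'sp] .
      also have "cip X n u' x1 = f u'" using x1(2)[OF u'sp] .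
      also have "c * cip X n v' v' = f v'" using False c_def by simp
      finally have "cip X n z x = f u' + a * f v'" by simp
      also have "\<dots> = f z" unfolding zeq using l u'c v'c by simp
      finally show "cip X n z x = f z" .
    qed
  qed
qed


section \<open>The kernel of Psi is spanned by finitely many chains\<close>

definition proj :: "'c bcx \<Rightarrow> ('c \<times> 'c) set list \<Rightarrow> nat \<Rightarrow> ('c \<Rightarrow> real vec) \<Rightarrow> 'c \<Rightarrow> real vec" where
  "proj X Ms n z = cadd z (csc (-1) (iota_seq X Ms n (psi_seq X Ms n z)))"

definition single :: "'c bcx \<Rightarrow> nat \<Rightarrow> 'c \<Rightarrow> real vec \<Rightarrow> 'c \<Rightarrow> real vec" where
  "single X n a v = (\<lambda>\<beta>. if \<beta> = a then v else chain_zero X n \<beta>)"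

definition units :: "'c bcx \<Rightarrow> nat \<Rightarrow> ('c \<Rightarrow> real vec) set" where
  "units X n = (\<lambda>(a, i). single X n a (unit_vec (cdim X a) i)) ` (SIGMA a:ncells X n. {..<cdim X a})"

lemma single_chains: "a \<in> ncells X n \<Longrightarrow> v \<in> carrier_vec (cdim X a) \<Longrightarrow> single X n a v \<in> chains X n"
  unfolding single_def by (rule chainsI) (auto simp: chain_zero_def)

lemma units_chains: "units X n \<subseteq> chains X n"
  unfolding units_def using single_chains by fastforce

lemma units_finite: "finite (cells X) \<Longrightarrow> finite (units X n)"
  unfolding units_def using ncells_fin by (intro finite_imageI finite_SigmaI) auto

lemma single_idx: "single X n a v \<beta> $ i = (if \<beta> = a then v $ i else chain_zero X n \<beta> $ i)"
  by (simp add: single_def)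

lemma single_dim: "dim_vec (single X n a v \<beta>) = (if \<beta> = a then dim_vec v else dim_vec (chain_zero X n \<beta>))"
  by (simp add: single_def)

lemma single_span:
  assumes a: "a \<in> ncells X n" and v: "v \<in> carrier_vec (cdim X a)"
  shows "single X n a v \<in> cspan X n (units X n)"
proof -
  define vt where "vt = (\<lambda>k. vec (cdim X a) (\<lambda>i. if i < k then v $ i else 0) :: real vec)"
  have vtc: "vt k \<in> carrier_vec (cdim X a)" for k by (simp add: vt_def)
  have "single X n a (vt k) \<in> cspan X n (units X n)" for k
  proof (induction k)
    case 0
    have "single X n a (vt 0) = chain_zero X n"
      by (rule chain_eq_idx[of _ X n]) (use a vtc in \<open>auto simp: single_chains idx_simps single_idx single_dim vt_def\<close>)
    then show ?case by (simp add: cs_zero)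
  next
    case (Suc k)
    show ?case
    proof (cases "k < cdim X a")
      case True
      have uc: "single X n a (unit_vec (cdim X a) k) \<in> units X n"
        unfolding units_def using a True by force
      have "single X n a (vt (Suc k)) = cadd (single X n a (vt k)) (csc (v $ k) (single X n a (unit_vec (cdim X a) k)))"
        by (rule chain_eq_idx[of _ X n]) (use a vtc True in \<open>auto simp: single_chains idx_simps single_idx single_dim vt_def chain_zero_def less_Suc_eq\<close>)
      then show ?thesis using Suc uc by (auto intro: cspan.intros)
    next
      case False
      have "vt (Suc k) = vt k" using False unfolding vt_def by (intro eq_vecI) auto
      then show ?thesis using Suc by simp
    qed
  qed
  moreover have "vt (cdim X a) = v" using v unfolding vt_def by (intro eq_vecI) auto
  ultimately show ?thesis by metis
qed

lemma chains_span:
  assumes fc: "finite (cells X)" and z: "z \<in> chains X n"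
  shows "z \<in> cspan X n (units X n)"
proof -
  define tr where "tr = (\<lambda>A \<beta>. if \<beta> \<in> A then z \<beta> else chain_zero X n \<beta>)"
  have trc: "A \<subseteq> ncells X n \<Longrightarrow> tr A \<in> chains X n" for A
    unfolding tr_def by (rule chainsI) (use z in \<open>auto simp: chain_zero_def chainsD chainsD0\<close>)
  have "finite A \<Longrightarrow> A \<subseteq> ncells X n \<Longrightarrow> tr A \<in> cspan X n (units X n)" for A
  proof (induction A rule: finite_induct)
    case empty
    have "tr {} = chain_zero X n" unfolding tr_def by auto
    then show ?case by (simp add: cs_zero)
  next
    case (insert a A)
    have a: "a \<in> ncells X n" and A: "A \<subseteq> ncells X n" using insert.prems by auto
    have "tr (insert a A) = cadd (tr A) (single X n a (z a))"
    proof (rule ext)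
      fix \<beta>
      show "tr (insert a A) \<beta> = cadd (tr A) (single X n a (z a)) \<beta>"
      proof (cases "\<beta> = a")
        case True
        thus ?thesis using insert.hyps(2) chainsD[OF z a] a by (simp add: tr_def cadd_def single_def chain_zero_def)
      next
        case False
        show ?thesis
        proof (cases "\<beta> \<in> ncells X n")
          case True
          thus ?thesis using False chainsD[OF z True] by (simp add: tr_def cadd_def single_def chain_zero_def)
        next
          case nb: False
          hence "\<beta> \<notin> A" using A by blast
          thus ?thesis using False nb by (simp add: tr_def cadd_def single_def chain_zero_def)
        qed
      qed
    qed
    moreover have "single X n a (z a) \<in> cspan X n (units X n)" using single_span[OF a chainsD[OF z a]] .
    ultimately show ?case using insert.IH[OF A] by (simp add: cs_add)
  qed
  hence "tr (ncells X n) \<in> cspan X n (units X n)" using ncells_fin[OF fc] by blast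
  moreover have "tr (ncells X n) = z"
    by (rule chain_eqI[OF trc z]) (auto simp: tr_def)
  ultimately show ?thesis by simp
qed

lemma id_add:
  assumes "a \<in> chains X n" "b \<in> chains X n" "p \<in> chains X n" "q \<in> chains X n"
  shows "cadd (cadd a b) (csc (-1) (cadd p q)) = cadd (cadd a (csc (-1) p)) (cadd b (csc (-1) q))"
  by (rule chain_eq_idx[of _ X n]) (use assms in \<open>auto simp: idx_simps\<close>)

lemma id_smult:
  assumes "a \<in> chains X n" "p \<in> chains X n"
  shows "cadd (csc c a) (csc (-1) (csc c p)) = csc c (cadd a (csc (-1) p))"
  by (rule chain_eq_idx[of _ X n]) (use assms in \<open>auto simp: idx_simps algebra_simps\<close>)

context
  fixes X :: "'c bcx" and Ms :: "('c \<times> 'c) set list" and n :: nat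
  assumes bx: "bcx X" and sm: "seq_morse X Ms"
begin

lemma proj_chains: "z \<in> chains X n \<Longrightarrow> proj X Ms n z \<in> chains X n"
  unfolding proj_def by simp

lemma proj_ker: assumes z: "z \<in> chains X n"
  shows "psi_seq X Ms n (proj X Ms n z) = chain_zero (morse_seq X Ms) n"
proof -
  let ?w = "psi_seq X Ms n z"
  have wc: "?w \<in> chains (morse_seq X Ms) n" using z by simp
  have "psi_seq X Ms n (proj X Ms n z) = cadd ?w (csc (-1) (psi_seq X Ms n (iota_seq X Ms n ?w)))"
    unfolding proj_def using z wc by (simp add: psi_seq_add psi_seq_smult)
  also have "psi_seq X Ms n (iota_seq X Ms n ?w) = ?w" using psi_seq_iota_seq[OF bx sm wc] .
  also have "cadd ?w (csc (-1) ?w) = chain_zero (morse_seq X Ms) n"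
    by (rule chain_eq_idx[of _ "morse_seq X Ms" n]) (use wc in \<open>auto simp: idx_simps\<close>)
  finally show ?thesis .
qed

lemma proj_id: assumes z: "z \<in> chains X n" and pz: "psi_seq X Ms n z = chain_zero (morse_seq X Ms) n"
  shows "proj X Ms n z = z"
proof -
  have "proj X Ms n z = cadd z (csc (-1) (chain_zero X n))"
    unfolding proj_def pz iota_seq_zero ..
  also have "\<dots> = z" by (rule chain_eq_idx[of _ X n]) (use z in \<open>auto simp: idx_simps\<close>)
  finally show ?thesis .
qed

lemma proj_add: assumes a: "a \<in> chains X n" and b: "b \<in> chains X n"
  shows "proj X Ms n (cadd a b) = cadd (proj X Ms n a) (proj X Ms n b)"
proof -
  let ?p = "iota_seq X Ms n (psi_seq X Ms n a)" and ?q = "iota_seq X Ms n (psi_seq X Ms n b)"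
  have pc: "?p \<in> chains X n" "?q \<in> chains X n" using a b by simp_all
  have "proj X Ms n (cadd a b) = cadd (cadd a b) (csc (-1) (cadd ?p ?q))"
    unfolding proj_def using a b by (simp add: psi_seq_add iota_seq_add)
  also have "\<dots> = cadd (cadd a (csc (-1) ?p)) (cadd b (csc (-1) ?q))"
    by (rule id_add[OF a b pc])
  finally show ?thesis unfolding proj_def .
qed

lemma proj_smult: assumes a: "a \<in> chains X n"
  shows "proj X Ms n (csc c a) = csc c (proj X Ms n a)"
proof -
  let ?p = "iota_seq X Ms n (psi_seq X Ms n a)"
  have pc: "?p \<in> chains X n" using a by simp
  have "proj X Ms n (csc c a) = cadd (csc c a) (csc (-1) (csc c ?p))"
    unfolding proj_def using a by (simp add: psi_seq_smult iota_seq_smult)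
  also have "\<dots> = csc c (cadd a (csc (-1) ?p))"
    by (rule id_smult[OF a pc])
  finally show ?thesis unfolding proj_def .
qed

lemma proj_span': "z \<in> cspan X n U \<Longrightarrow> U \<subseteq> chains X n \<Longrightarrow> proj X Ms n z \<in> cspan X n (proj X Ms n ` U)"
proof (induction rule: cspan.induct)
  case cs_zero
  have "proj X Ms n (chain_zero X n) = chain_zero X n" using proj_id[OF chain_zero_chains psi_seq_zero] .
  then show ?case by (simp add: cspan.cs_zero)
next
  case (cs_base v)
  then show ?case by (simp add: cspan.cs_base)
next
  case (cs_add x y)
  have "x \<in> chains X n" "y \<in> chains X n" using cs_add cspan_chains by blast+
  then show ?case using cs_add proj_add by (simp add: cspan.cs_add)
next
  case (cs_smult x c)
  have "x \<in> chains X n" using cs_smult cspan_chains by blast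
  then show ?case using cs_smult proj_smult by (simp add: cspan.cs_smult)
qed

lemma ker_closed': "z \<in> cspan X n S \<Longrightarrow> S \<subseteq> kerPsi X Ms n \<Longrightarrow> z \<in> kerPsi X Ms n"
proof (induction rule: cspan.induct)
  case cs_zero
  then show ?case by (simp add: kerPsi_def psi_seq_zero)
next
  case (cs_base v)
  then show ?case by blast
next
  case (cs_add x y)
  hence xy: "x \<in> chains X n" "y \<in> chains X n" "psi_seq X Ms n x = chain_zero (morse_seq X Ms) n"
    "psi_seq X Ms n y = chain_zero (morse_seq X Ms) n" by (auto simp: kerPsi_def)
  have "cadd (chain_zero (morse_seq X Ms) n) (chain_zero (morse_seq X Ms) n) = chain_zero (morse_seq X Ms) n"
    by (rule chain_eq_idx[of _ "morse_seq X Ms" n]) (auto simp: idx_simps)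
  then show ?case using xy by (simp add: kerPsi_def psi_seq_add)
next
  case (cs_smult x c)
  hence xy: "x \<in> chains X n" "psi_seq X Ms n x = chain_zero (morse_seq X Ms) n" by (auto simp: kerPsi_def)
  have "csc c (chain_zero (morse_seq X Ms) n) = chain_zero (morse_seq X Ms) n"
    by (rule chain_eq_idx[of _ "morse_seq X Ms" n]) (auto simp: idx_simps)
  then show ?case using xy by (simp add: kerPsi_def psi_seq_smult)
qed

lemma ker_span:
  assumes fc: "finite (cells X)"
  shows "kerPsi X Ms n = cspan X n (proj X Ms n ` units X n)"
proof
  show "kerPsi X Ms n \<subseteq> cspan X n (proj X Ms n ` units X n)"
  proof
    fix z assume "z \<in> kerPsi X Ms n"
    hence z: "z \<in> chains X n" "psi_seq X Ms n z = chain_zero (morse_seq X Ms) n" by (auto simp: kerPsi_def)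
    have "proj X Ms n z \<in> cspan X n (proj X Ms n ` units X n)"
      using proj_span'[OF chains_span[OF fc z(1)] units_chains] .
    thus "z \<in> cspan X n (proj X Ms n ` units X n)" using proj_id[OF z] by simp
  qed
next
  have "proj X Ms n ` units X n \<subseteq> kerPsi X Ms n"
    using units_chains proj_chains proj_ker by (fastforce simp: kerPsi_def)
  thus "cspan X n (proj X Ms n ` units X n) \<subseteq> kerPsi X Ms n"
    using ker_closed' by blast
qed

end

theorem mainTheorem8:
  fixes X :: "'c bcx" and Ms :: "('c \<times> 'c) set list" and n :: nat
    and R :: "('c \<Rightarrow> real vec) set"
  assumes "based_cx X"
    and "seq_morse X Ms"
    and "Rplus X Ms n R"
  shows "seq_free X Ms n \<longleftrightarrow> morsification_free R"
proof -
  have bx: "bcx X" using assms(1) by (simp add: bcx_def)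
  have fc: "finite (cells X)" using bcx.fin[OF bx] .
  have ob: "orthonormal_basis X n (adj_im X Ms n) R" using assms(3) by (simp add: Rplus_def)
  show ?thesis
  proof
    assume sf: "seq_free X Ms n"
    show "morsification_free R" unfolding morsification_free_def
    proof (rule ccontr)
      assume "R \<noteq> {}"
      then obtain v where vR: "v \<in> R" by blast
      have va: "v \<in> adj_im X Ms n" and v1: "cip X n v v = 1"
        using ob vR unfolding orthonormal_basis_def by auto
      from va obtain y where vK: "v \<in> kerPsi X Ms n" and y: "y \<in> kerPsi X Ms (n - 1)"
        and yz: "\<forall>z\<in>kerPsi X Ms n. cip X (n - 1) (bdry X n z) y = cip X n z v"
        unfolding adj_im_def by blast
      have vc: "v \<in> chains X n" "psi_seq X Ms n v = chain_zero (morse_seq X Ms) n"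
        using vK by (auto simp: kerPsi_def)
      have bv: "bdry X n v = chain_zero X (n - 1)" using seqA[OF bx assms(2) sf vc] .
      have yc: "y \<in> chains X (n - 1)" using y by (simp add: kerPsi_def)
      have "cip X n v v = cip X (n - 1) (bdry X n v) y" using yz vK by simp
      also have "\<dots> = 0" using bv yc by simp
      finally show False using v1 by simp
    qed
  next
    assume mf: "morsification_free R"
    hence R0: "R = {}" by (simp add: morsification_free_def)
    show "seq_free X Ms n"
    proof (rule ccontr)
      assume nf: "\<not> seq_free X Ms n"
      obtain z where zc: "z \<in> chains X n" and pz: "psi_seq X Ms n z = chain_zero (morse_seq X Ms) n"
        and bz: "bdry X n z \<noteq> chain_zero X (n - 1)"
        using seqB[OF bx assms(2) nf] by blast
      let ?y = "bdry X n z"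
      have yc: "?y \<in> chains X (n - 1)" by (rule bdry_chains)
      have by': "bcx (morse_seq X Ms)" using bcx_morse_seq[OF bx assms(2)] .
      have "psi_seq X Ms (n - 1) ?y = bdry (morse_seq X Ms) n (psi_seq X Ms n z)"
        using psi_seq_bdry[OF bx assms(2) zc] .
      also have "\<dots> = chain_zero (morse_seq X Ms) (n - 1)" using pz bcx.bdry_zero[OF by'] by simp
      finally have yK: "?y \<in> kerPsi X Ms (n - 1)" using yc by (simp add: kerPsi_def)
      define f where "f = (\<lambda>z'. cip X (n - 1) (bdry X n z') ?y)"
      have lf: "linf X n f"
        unfolding linf_def f_def
      proof (intro conjI ballI allI)
        fix a b assume a: "a \<in> chains X n" and b: "b \<in> chains X n"
        have ba: "bdry X n a \<in> chains X (n - 1)" "bdry X n b \<in> chains X (n - 1)" by (rule bdry_chains)+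
        show "cip X (n - 1) (bdry X n (cadd a b)) ?y = cip X (n - 1) (bdry X n a) ?y + cip X (n - 1) (bdry X n b) ?y"
          using bcx.bdry_add[OF bx a b] cip_add_left[OF ba yc] by simp
      next
        fix a c assume a: "a \<in> chains X n"
        have ba: "bdry X n a \<in> chains X (n - 1)" by (rule bdry_chains)
        show "cip X (n - 1) (bdry X n (csc c a)) ?y = c * cip X (n - 1) (bdry X n a) ?y"
          using bcx.bdry_smult[OF bx a] cip_smult_left[OF ba yc] by simp
      qed
      let ?S = "proj X Ms n ` units X n"
      have finS: "finite ?S" using units_finite[OF fc] by simp
      have SC: "?S \<subseteq> chains X n" using units_chains proj_chains[OF bx assms(2)] by blast
      obtain x where xsp: "x \<in> cspan X n ?S" and xr: "\<forall>z'\<in>cspan X n ?S. cip X n z' x = f z'"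
        using riesz[OF fc finS SC lf] by blast
      have KS: "kerPsi X Ms n = cspan X n ?S" using ker_span[OF bx assms(2) fc] .
      have xK: "x \<in> kerPsi X Ms n" using xsp KS by simp
      have "x \<in> adj_im X Ms n"
        unfolding adj_im_def using xK yK xr KS f_def by auto
      then obtain c where "x = lincomb X n c R" using ob unfolding orthonormal_basis_def by blast
      hence x0: "x = chain_zero X n" using R0 by (auto simp: lincomb_def chain_zero_def)
      have zK: "z \<in> kerPsi X Ms n" using zc pz by (simp add: kerPsi_def)
      have "f z = cip X n z x" using xr zK KS by simp
      also have "\<dots> = 0" using x0 zc by simp
      finally have "cip X (n - 1) ?y ?y = 0" by (simp add: f_def)
      hence "?y = chain_zero X (n - 1)" using cip_self_zero[OF fc yc] by blast
      thus False using bz by simp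
    qed
  qed
qed


end
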